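(* Let $R$ be an $\omega$-algebraic lattice, and let $D,C$ be the inverse limits of $C_0=\{\bot\}$, $D_n=[C_n\to R]$, $C_{n+1}=D_n\times C_n$, so that $D\cong[C\to R]$ and $C\cong D\times C$. For each $A\in\{R,D,C\}$, the poset $(\mathcal F_A,\subseteq)$ of filters over $(\Lambda_A,\le_A)$ is isomorphic to $A$.
   Context: Domains. An $\omega$-algebraic lattice is a complete lattice in which every element is the join of the compact elements below it, and which has countably many compact elements. $\mathcal K(R)$ denotes the compact elements of $R$, $\bot$ is the bottom and $\sqcup$ is the join. Type languages: - $\Lambda_R$: $\rho::=\psi_a\mid\omega\mid\rho\wedge\rho$, with one constant $\psi_a$ for each $a\in\mathcal K(R)$. - $\Lambda_D$: $\delta::=\rho\mid\kappa\to\rho\mid\omega\mid\delta\wedge\delta$, with $\rho\in\Lambda_R$. - $\Lambda_C$: $\kappa::=\delta\times\kappa\mid\omega\mid\kappa\wedge\kappa$. An intersection type theory on such a language is a reflexive, transitive relation $\le$ satisfying $\sigma\wedge\tau\le\sigma$, $\sigma\wedge\tau\le\tau$, $\sigma\le\omega$, and, if $\rho\le\sigma$ and $\rho\le\tau$, then $\rho\le\sigma\wedge\tau$. We write $\sigma\sim\tau$ when $\sigma\le\tau\le\sigma$. The relations are defined as follows: - $\le_R$ is the least intersection type theory on $\Lambda_R$ with $\psi_\bot\sim_R\omega$ and $\psi_{a\sqcup b}\sim_R\psi_a\wedge\psi_b$. - $\le_D$ and $\le_C$ are the least intersection type theories on $\Lambda_D$ and $\Lambda_C$ closed under the following: - if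 $\rho_1\le_R\rho_2$ then $\rho_1\le_D\rho_2$; - $\omega\le_D\omega\to\omega$; - $\psi_a\le_D\omega\to\psi_a$ and $\omega\to\psi_a\le_D\psi_a$; - $\omega\le_C\omega\times\omega$; - $(\kappa\to\rho_1)\wedge(\kappa\to\rho_2)\le_D\kappa\to(\rho_1\wedge\rho_2)$; - $(\delta_1\times\kappa_1)\wedge(\delta_2\times\kappa_2)\le_C(\delta_1\wedge\delta_2)\times(\kappa_1\wedge\kappa_2)$; - if $\kappa_2\le_C\kappa_1$ and $\rho_1\le_R\rho_2$ then $\kappa_1\to\rho_1\le_D\kappa_2\to\rho_2$; - if $\delta_1\le_D\delta_2$ and $\kappa_1\le_C\kappa_2$ then $\delta_1\times\kappa_1\le_C\delta_2\times\kappa_2$. A filter over $(\Lambda_A,\le_A)$ is a set $f\subseteq\Lambda_A$ with $\omega\in f$, upward closed under $\le_A$, and closed under $\wedge$. $\mathcal F_A$ denotes the set of such filters. *)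

theory Defs
  imports Main "HOL-Library.Countable_Set"
begin

definition directed_in :: "('b \<Rightarrow> 'b \<Rightarrow> bool) \<Rightarrow> 'b set \<Rightarrow> bool" where
  "directed_in le T \<longleftrightarrow> T \<noteq> {} \<and> (\<forall>x\<in>T. \<forall>y\<in>T. \<exists>z\<in>T. le x z \<and> le y z)"

definition is_lub_in :: "'b set \<Rightarrow> ('b \<Rightarrow> 'b \<Rightarrow> bool) \<Rightarrow> 'b set \<Rightarrow> 'b \<Rightarrow> bool" where
  "is_lub_in S le T s \<longleftrightarrow> s \<in> S \<and> (\<forall>t\<in>T. le t s) \<and> (\<forall>u\<in>S. (\<forall>t\<in>T. le t u) \<longrightarrow> le s u)"

definition compact_in :: "'b set \<Rightarrow> ('b \<Rightarrow> 'b \<Rightarrow> bool) \<Rightarrow> 'b \<Rightarrow> bool" where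
  "compact_in S le c \<longleftrightarrow> c \<in> S \<and>
     (\<forall>T s. T \<subseteq> S \<longrightarrow> directed_in le T \<longrightarrow> is_lub_in S le T s \<longrightarrow> le c s \<longrightarrow> (\<exists>t\<in>T. le c t))"

abbreviation compactR :: "'a::complete_lattice \<Rightarrow> bool" where
  "compactR c \<equiv> compact_in UNIV (\<le>) c"

definition order_iso :: "'b set \<Rightarrow> ('b \<Rightarrow> 'b \<Rightarrow> bool) \<Rightarrow> 'c set \<Rightarrow> ('c \<Rightarrow> 'c \<Rightarrow> bool) \<Rightarrow> bool" where
  "order_iso A leA B leB \<longleftrightarrow>
     (\<exists>\<phi>. bij_betw \<phi> A B \<and> (\<forall>x\<in>A. \<forall>y\<in>A. leA x y \<longleftrightarrow> leB (\<phi> x) (\<phi> y)))"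

text \<open>Universal carrier for the levels C_n, D_n. A pair (d,c) of C_{n+1} = D_n \<times> C_n is UPair d c;
  the unique element of C_0 is UUnit; a Scott-continuous f : C_n \<rightarrow> R is represented by
  UFun g where g i = f (k_i) for an enumeration (k_i) of the compact elements of C_n
  (a continuous map on an algebraic lattice is determined by its values on compacts).\<close>
datatype 'a U = UUnit | UPair "'a U" "'a U" | UFun "nat \<Rightarrow> 'a"

fun unF :: "'a::complete_lattice U \<Rightarrow> nat \<Rightarrow> 'a" where
  "unF (UFun g) = g"
| "unF _ = (\<lambda>_. bot)"

type_synonym 'a level = "'a U set \<times> ('a U \<Rightarrow> 'a U \<Rightarrow> bool)"

definition KC :: "'a level \<Rightarrow> 'a U set" where
  "KC L = {c. compact_in (fst L) (snd L) c}"

definition enum :: "'a level \<Rightarrow> nat \<Rightarrow> 'a U" where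
  "enum L i = from_nat_into (KC L) i"

text \<open>The function space [C \<rightarrow> R] over a level C (monotone maps on compacts of C).\<close>
definition D_of :: "('a::complete_lattice) level \<Rightarrow> 'a U set" where
  "D_of L = {UFun g | g. \<forall>i j. snd L (enum L i) (enum L j) \<longrightarrow> g i \<le> g j}"

definition leD_of :: "('a::complete_lattice) level \<Rightarrow> 'a U \<Rightarrow> 'a U \<Rightarrow> bool" where
  "leD_of L f f' \<longleftrightarrow> (\<forall>i. unF f i \<le> unF f' i)"

definition appD :: "('a::complete_lattice) level \<Rightarrow> 'a U \<Rightarrow> 'a U \<Rightarrow> 'a" where
  "appD L f x = (SUP i\<in>{i. snd L (enum L i) x}. unF f i)"

text \<open>lev n is the poset C_n: C_0 = {bot}, C_{n+1} = D_n \<times> C_n with D_n = [C_n \<rightarrow> R].\<close>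
primrec lev :: "nat \<Rightarrow> ('a::complete_lattice) level" where
  "lev 0 = ({UUnit}, (\<lambda>x y. True))"
| "lev (Suc n) = ({UPair d c | d c. d \<in> D_of (lev n) \<and> c \<in> fst (lev n)},
     (\<lambda>x y. case (x, y) of (UPair d c, UPair d' c') \<Rightarrow> leD_of (lev n) d d' \<and> snd (lev n) c c'
                         | _ \<Rightarrow> False))"

definition Cset :: "nat \<Rightarrow> ('a::complete_lattice) U set" where "Cset n = fst (lev n)"
definition leC_lev :: "nat \<Rightarrow> ('a::complete_lattice) U \<Rightarrow> 'a U \<Rightarrow> bool" where "leC_lev n = snd (lev n)"
definition Dset :: "nat \<Rightarrow> ('a::complete_lattice) U set" where "Dset n = D_of (lev n)"
definition leD_lev :: "nat \<Rightarrow> ('a::complete_lattice) U \<Rightarrow> 'a U \<Rightarrow> bool" where "leD_lev n = leD_of (lev n)"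

text \<open>emb n = (eC_n, pC_n, eD_n, pD_n): embedding-projection pairs
  eC_n : C_n \<rightarrow> C_{n+1}, pC_n : C_{n+1} \<rightarrow> C_n, eD_n : D_n \<rightarrow> D_{n+1}, pD_n : D_{n+1} \<rightarrow> D_n, with
  eC_0 x = (bot, bot), pC_0 y = bot, eD_n f = f \<circ> pC_n, pD_n g = g \<circ> eC_n,
  eC_{n+1} (d,c) = (eD_n d, eC_n c), pC_{n+1} (d,c) = (pD_n d, pC_n c).\<close>
primrec emb :: "nat \<Rightarrow> (('a::complete_lattice) U \<Rightarrow> 'a U) \<times> ('a U \<Rightarrow> 'a U) \<times> ('a U \<Rightarrow> 'a U) \<times> ('a U \<Rightarrow> 'a U)" where
  "emb 0 = (let eC = (\<lambda>_. UPair (UFun (\<lambda>_. bot)) UUnit); pC = (\<lambda>_. UUnit) in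
     (eC, pC,
      (\<lambda>f. UFun (\<lambda>i. appD (lev 0) f (pC (enum (lev 1) i)))),
      (\<lambda>g. UFun (\<lambda>i. appD (lev 1) g (eC (enum (lev 0) i))))))"
| "emb (Suc n) = (case emb n of (eC, pC, eD, pD) \<Rightarrow>
     let eC' = (\<lambda>x. case x of UPair d c \<Rightarrow> UPair (eD d) (eC c) | _ \<Rightarrow> UUnit);
         pC' = (\<lambda>x. case x of UPair d c \<Rightarrow> UPair (pD d) (pC c) | _ \<Rightarrow> UUnit) in
     (eC', pC',
      (\<lambda>f. UFun (\<lambda>i. appD (lev (Suc n)) f (pC' (enum (lev (Suc (Suc n))) i)))),
      (\<lambda>g. UFun (\<lambda>i. appD (lev (Suc (Suc n))) g (eC' (enum (lev (Suc n)) i))))))"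

definition pC :: "nat \<Rightarrow> ('a::complete_lattice) U \<Rightarrow> 'a U" where "pC n = fst (snd (emb n))"
definition pD :: "nat \<Rightarrow> ('a::complete_lattice) U \<Rightarrow> 'a U" where "pD n = snd (snd (snd (emb n)))"

definition Dinf :: "(nat \<Rightarrow> ('a::complete_lattice) U) set" where
  "Dinf = {x. \<forall>n. x n \<in> Dset n \<and> pD n (x (Suc n)) = x n}"
definition leDinf :: "(nat \<Rightarrow> ('a::complete_lattice) U) \<Rightarrow> (nat \<Rightarrow> 'a U) \<Rightarrow> bool" where
  "leDinf x y \<longleftrightarrow> (\<forall>n. leD_lev n (x n) (y n))"
definition Cinf :: "(nat \<Rightarrow> ('a::complete_lattice) U) set" where
  "Cinf = {x. \<forall>n. x n \<in> Cset n \<and> pC n (x (Suc n)) = x n}"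
definition leCinf :: "(nat \<Rightarrow> ('a::complete_lattice) U) \<Rightarrow> (nat \<Rightarrow> 'a U) \<Rightarrow> bool" where
  "leCinf x y \<longleftrightarrow> (\<forall>n. leC_lev n (x n) (y n))"

text \<open>One syntax for all three languages; Lambda_R, Lambda_D, Lambda_C are carved out by isR/isD/isC.\<close>
datatype 'a ty = Psi 'a | Om | Conj "'a ty" "'a ty" | Arr "'a ty" "'a ty" | Times "'a ty" "'a ty"

fun isR :: "('a::complete_lattice) ty \<Rightarrow> bool" where
  "isR (Psi a) = compactR a"
| "isR Om = True"
| "isR (Conj s t) = (isR s \<and> isR t)"
| "isR (Arr _ _) = False"
| "isR (Times _ _) = False"

fun isD :: "('a::complete_lattice) ty \<Rightarrow> bool" and isC :: "('a::complete_lattice) ty \<Rightarrow> bool" where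
  "isD (Psi a) = compactR a"
| "isD Om = True"
| "isD (Conj s t) = (isD s \<and> isD t)"
| "isD (Arr k r) = (isC k \<and> isR r)"
| "isD (Times _ _) = False"
| "isC (Psi _) = False"
| "isC Om = True"
| "isC (Conj s t) = (isC s \<and> isC t)"
| "isC (Arr _ _) = False"
| "isC (Times d k) = (isD d \<and> isC k)"

inductive leR :: "('a::complete_lattice) ty \<Rightarrow> 'a ty \<Rightarrow> bool" where
  R_refl: "isR s \<Longrightarrow> leR s s"
| R_trans: "leR s t \<Longrightarrow> leR t u \<Longrightarrow> leR s u"
| R_conjL: "isR s \<Longrightarrow> isR t \<Longrightarrow> leR (Conj s t) s"
| R_conjR: "isR s \<Longrightarrow> isR t \<Longrightarrow> leR (Conj s t) t"
| R_top: "isR s \<Longrightarrow> leR s Om"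
| R_glb: "leR r s \<Longrightarrow> leR r t \<Longrightarrow> leR r (Conj s t)"
| R_bot1: "leR (Psi bot) Om"
| R_bot2: "leR Om (Psi bot)"
| R_join1: "compactR a \<Longrightarrow> compactR b \<Longrightarrow> leR (Psi (sup a b)) (Conj (Psi a) (Psi b))"
| R_join2: "compactR a \<Longrightarrow> compactR b \<Longrightarrow> leR (Conj (Psi a) (Psi b)) (Psi (sup a b))"

inductive leD :: "('a::complete_lattice) ty \<Rightarrow> 'a ty \<Rightarrow> bool"
      and leC :: "('a::complete_lattice) ty \<Rightarrow> 'a ty \<Rightarrow> bool" where
  D_refl: "isD s \<Longrightarrow> leD s s"
| D_trans: "leD s t \<Longrightarrow> leD t u \<Longrightarrow> leD s u"
| D_conjL: "isD s \<Longrightarrow> isD t \<Longrightarrow> leD (Conj s t) s"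
| D_conjR: "isD s \<Longrightarrow> isD t \<Longrightarrow> leD (Conj s t) t"
| D_top: "isD s \<Longrightarrow> leD s Om"
| D_glb: "leD r s \<Longrightarrow> leD r t \<Longrightarrow> leD r (Conj s t)"
| C_refl: "isC s \<Longrightarrow> leC s s"
| C_trans: "leC s t \<Longrightarrow> leC t u \<Longrightarrow> leC s u"
| C_conjL: "isC s \<Longrightarrow> isC t \<Longrightarrow> leC (Conj s t) s"
| C_conjR: "isC s \<Longrightarrow> isC t \<Longrightarrow> leC (Conj s t) t"
| C_top: "isC s \<Longrightarrow> leC s Om"
| C_glb: "leC r s \<Longrightarrow> leC r t \<Longrightarrow> leC r (Conj s t)"
| D_fromR: "leR r1 r2 \<Longrightarrow> leD r1 r2"
| D_omArr: "leD Om (Arr Om Om)"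
| D_psiArr1: "compactR a \<Longrightarrow> leD (Psi a) (Arr Om (Psi a))"
| D_psiArr2: "compactR a \<Longrightarrow> leD (Arr Om (Psi a)) (Psi a)"
| C_omTimes: "leC Om (Times Om Om)"
| D_arrConj: "isC k \<Longrightarrow> isR r1 \<Longrightarrow> isR r2 \<Longrightarrow>
     leD (Conj (Arr k r1) (Arr k r2)) (Arr k (Conj r1 r2))"
| C_timesConj: "isD d1 \<Longrightarrow> isD d2 \<Longrightarrow> isC k1 \<Longrightarrow> isC k2 \<Longrightarrow>
     leC (Conj (Times d1 k1) (Times d2 k2)) (Times (Conj d1 d2) (Conj k1 k2))"
| D_arrMono: "leC k2 k1 \<Longrightarrow> leR r1 r2 \<Longrightarrow> leD (Arr k1 r1) (Arr k2 r2)"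
| C_timesMono: "leD d1 d2 \<Longrightarrow> leC k1 k2 \<Longrightarrow> leC (Times d1 k1) (Times d2 k2)"

definition filters :: "'a ty set \<Rightarrow> ('a ty \<Rightarrow> 'a ty \<Rightarrow> bool) \<Rightarrow> 'a ty set set" where
  "filters L le = {f. f \<subseteq> L \<and> Om \<in> f \<and> (\<forall>s\<in>f. \<forall>t\<in>L. le s t \<longrightarrow> t \<in> f)
                     \<and> (\<forall>s\<in>f. \<forall>t\<in>f. Conj s t \<in> f)}"

end

theory Submission
  imports Defs
begin


section \<open>Generic order theory on carriers\<close>

definition po :: "'b set \<Rightarrow> ('b \<Rightarrow> 'b \<Rightarrow> bool) \<Rightarrow> bool" where
  "po S le \<longleftrightarrow> (\<forall>x\<in>S. le x x) \<and> (\<forall>x\<in>S. \<forall>y\<in>S. le x y \<longrightarrow> le y x \<longrightarrow> x = y)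
     \<and> (\<forall>x\<in>S. \<forall>y\<in>S. \<forall>z\<in>S. le x y \<longrightarrow> le y z \<longrightarrow> le x z)"

definition lubL :: "'b set \<Rightarrow> ('b \<Rightarrow> 'b \<Rightarrow> bool) \<Rightarrow> 'b set \<Rightarrow> 'b" where
  "lubL S le A = (THE s. is_lub_in S le A s)"

definition alg :: "'b set \<Rightarrow> ('b \<Rightarrow> 'b \<Rightarrow> bool) \<Rightarrow> bool" where
  "alg S le \<longleftrightarrow> po S le \<and> (\<forall>A\<subseteq>S. \<exists>s. is_lub_in S le A s)
     \<and> (\<forall>x\<in>S. is_lub_in S le {c. compact_in S le c \<and> le c x} x)
     \<and> countable {c. compact_in S le c}"

lemma po_refl: "po S le \<Longrightarrow> x \<in> S \<Longrightarrow> le x x" unfolding po_def by blast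
lemma po_antisym: "po S le \<Longrightarrow> x \<in> S \<Longrightarrow> y \<in> S \<Longrightarrow> le x y \<Longrightarrow> le y x \<Longrightarrow> x = y"
  unfolding po_def by blast
lemma po_trans: "po S le \<Longrightarrow> x \<in> S \<Longrightarrow> y \<in> S \<Longrightarrow> z \<in> S \<Longrightarrow> le x y \<Longrightarrow> le y z \<Longrightarrow> le x z"
  unfolding po_def by blast

lemma alg_po: "alg S le \<Longrightarrow> po S le" unfolding alg_def by blast
lemma alg_ex_lub: "alg S le \<Longrightarrow> A \<subseteq> S \<Longrightarrow> \<exists>s. is_lub_in S le A s" unfolding alg_def by blast
lemma alg_algebraic: "alg S le \<Longrightarrow> x \<in> S \<Longrightarrow> is_lub_in S le {c. compact_in S le c \<and> le c x} x"
  unfolding alg_def by blast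
lemma alg_countable: "alg S le \<Longrightarrow> countable {c. compact_in S le c}" unfolding alg_def by blast

lemma lub_unique: "po S le \<Longrightarrow> is_lub_in S le A s \<Longrightarrow> is_lub_in S le A s' \<Longrightarrow> s = s'"
  unfolding is_lub_in_def using po_antisym[of S le s s'] by blast

lemma lubL_eq:
  assumes po: "po S le" and s: "is_lub_in S le A s"
  shows "lubL S le A = s"
proof -
  have u: "\<And>x. is_lub_in S le A x \<Longrightarrow> x = s"
  proof -
    fix x assume x: "is_lub_in S le A x"
    show "x = s" by (rule lub_unique[OF po x s])
  qed
  show ?thesis unfolding lubL_def by (rule the_equality[of "is_lub_in S le A", OF s u])
qed

lemma lubL_is_lub: "alg S le \<Longrightarrow> A \<subseteq> S \<Longrightarrow> is_lub_in S le A (lubL S le A)"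
proof -
  assume a: "alg S le" "A \<subseteq> S"
  then obtain s where s: "is_lub_in S le A s" using alg_ex_lub by blast
  then show ?thesis using lubL_eq[OF alg_po[OF a(1)] s] by simp
qed

lemma lub_in: "is_lub_in S le A s \<Longrightarrow> s \<in> S" unfolding is_lub_in_def by blast
lemma lub_upper: "is_lub_in S le A s \<Longrightarrow> t \<in> A \<Longrightarrow> le t s" unfolding is_lub_in_def by blast
lemma lub_least: "is_lub_in S le A s \<Longrightarrow> u \<in> S \<Longrightarrow> (\<And>t. t \<in> A \<Longrightarrow> le t u) \<Longrightarrow> le s u"
  unfolding is_lub_in_def by blast
lemma is_lubI: "s \<in> S \<Longrightarrow> (\<And>t. t \<in> A \<Longrightarrow> le t s) \<Longrightarrow> (\<And>u. u \<in> S \<Longrightarrow> (\<forall>t\<in>A. le t u) \<Longrightarrow> le s u)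
   \<Longrightarrow> is_lub_in S le A s"
  unfolding is_lub_in_def by blast

lemma compact_in_S: "compact_in S le c \<Longrightarrow> c \<in> S" unfolding compact_in_def by blast
lemma compactD: "compact_in S le c \<Longrightarrow> T \<subseteq> S \<Longrightarrow> directed_in le T \<Longrightarrow> is_lub_in S le T s \<Longrightarrow> le c s
   \<Longrightarrow> \<exists>t\<in>T. le c t"
  unfolding compact_in_def by blast
lemma compactI: "c \<in> S \<Longrightarrow> (\<And>T s. T \<subseteq> S \<Longrightarrow> directed_in le T \<Longrightarrow> is_lub_in S le T s \<Longrightarrow> le c s
   \<Longrightarrow> \<exists>t\<in>T. le c t) \<Longrightarrow> compact_in S le c"
  unfolding compact_in_def by blast

lemma directed_finite_ub:
  assumes po: "po S le" and T: "T \<subseteq> S" "directed_in le T" and X: "finite X" "X \<subseteq> T"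
  shows "\<exists>t\<in>T. \<forall>x\<in>X. le x t"
  using X
proof (induction X rule: finite_induct)
  case empty then show ?case using T(2) unfolding directed_in_def by auto
next
  case (insert x X)
  have xT: "x \<in> T" and XT: "X \<subseteq> T" using insert.prems by auto
  obtain t where t: "t \<in> T" "\<forall>y\<in>X. le y t" using insert.IH[OF XT] by blast
  have dir: "\<forall>x\<in>T. \<forall>y\<in>T. \<exists>z\<in>T. le x z \<and> le y z" using T(2) unfolding directed_in_def by simp
  obtain z where z: "z \<in> T" "le x z" "le t z" using dir xT t(1) by blast
  have "\<forall>y\<in>insert x X. le y z"
  proof
    fix y assume y: "y \<in> insert x X"
    show "le y z"
    proof (cases "y = x")
      case True then show ?thesis using z by simp
    next
      case False
      then have yX: "y \<in> X" using y by simp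
      have "y \<in> S" "t \<in> S" "z \<in> S" using yX XT t(1) z(1) T(1) by auto
      then show ?thesis using po_trans[OF po, of y t z] t(2) yX z(3) by simp
    qed
  qed
  then show ?case using z(1) by blast
qed

lemma compact_finite_lub:
  assumes po: "po S le" and F: "finite F" "\<forall>c\<in>F. compact_in S le c" and s: "is_lub_in S le F s"
  shows "compact_in S le s"
proof (rule compactI)
  show "s \<in> S" by (rule lub_in[OF s])
next
  fix T u assume T: "T \<subseteq> S" "directed_in le T" "is_lub_in S le T u" "le s u"
  have ex: "\<forall>c\<in>F. \<exists>t. t \<in> T \<and> le c t"
  proof
    fix c assume c: "c \<in> F"
    have cc: "compact_in S le c" using F(2) c by simp
    have cS: "c \<in> S" by (rule compact_in_S[OF cc])
    have "le c u" using po_trans[OF po cS lub_in[OF s] lub_in[OF T(3)] lub_upper[OF s c] T(4)] .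
    then have "\<exists>t\<in>T. le c t" using compactD[OF cc T(1) T(2) T(3)] by simp
    then show "\<exists>t. t \<in> T \<and> le c t" by blast
  qed
  obtain g where g: "\<forall>c\<in>F. g c \<in> T \<and> le c (g c)" using bchoice[OF ex] by (elim exE) simp
  have fin: "finite (g ` F)" using F(1) by simp
  have sub: "g ` F \<subseteq> T" using g by auto
  obtain t where t: "t \<in> T" "\<forall>x\<in>g ` F. le x t"
    using directed_finite_ub[OF po T(1,2) fin sub] by (elim bexE) simp
  have tS: "t \<in> S" using t(1) T(1) by auto
  have "le s t"
  proof (rule lub_least[OF s tS])
    fix c assume c: "c \<in> F"
    have cS: "c \<in> S" using compact_in_S[of S le c] F(2) c by simp
    have gS: "g c \<in> S" using g c T(1) by auto
    have 1: "le c (g c)" using g c by simp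
    have 2: "le (g c) t" using t(2) c by simp
    show "le c t" by (rule po_trans[OF po cS gS tS 1 2])
  qed
  then show "\<exists>t\<in>T. le s t" using t(1) by auto
qed

lemma compact_bot:
  assumes "is_lub_in S le {} b" shows "compact_in S le b"
proof (rule compactI)
  show "b \<in> S" using assms lub_in by metis
  fix T s assume "T \<subseteq> S" "directed_in le T"
  then obtain t where "t \<in> T" unfolding directed_in_def by blast
  then show "\<exists>t\<in>T. le b t" using assms \<open>T \<subseteq> S\<close> unfolding is_lub_in_def by blast
qed

lemma lub_mono_subset:
  assumes "is_lub_in S le X x" "X \<subseteq> Y" "Y \<subseteq> S" "\<forall>y\<in>Y. le y x"
  shows "is_lub_in S le Y x"
  using assms unfolding is_lub_in_def by blast

lemma po_R: "po (UNIV::'a::complete_lattice set) (\<le>)"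
  unfolding po_def by auto

lemma lub_R: "is_lub_in UNIV (\<le>) T (Sup T :: 'a::complete_lattice)"
  unfolding is_lub_in_def by (auto intro: Sup_upper Sup_least)

lemma lub_R_eq: "is_lub_in UNIV (\<le>) T (s :: 'a::complete_lattice) \<longleftrightarrow> s = Sup T"
proof
  assume "is_lub_in UNIV (\<le>) T s"
  then show "s = Sup T" using lub_unique[OF po_R _ lub_R] by blast
next
  assume "s = Sup T" then show "is_lub_in UNIV (\<le>) T s" using lub_R by simp
qed

lemma compactR_D: "compactR (a::'a::complete_lattice) \<Longrightarrow> directed_in (\<le>) T \<Longrightarrow> a \<le> Sup T \<Longrightarrow> \<exists>t\<in>T. a \<le> t"
  using compactD[of UNIV "(\<le>)" a T "Sup T"] lub_R by blast

lemma compactR_bot: "compactR (bot::'a::complete_lattice)"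
  by (rule compact_bot) (simp add: lub_R_eq)

lemma compactR_sup: "compactR (a::'a::complete_lattice) \<Longrightarrow> compactR b \<Longrightarrow> compactR (sup a b)"
  using compact_finite_lub[OF po_R, of "{a,b}" "sup a b"] by (simp add: lub_R_eq)


lemma order_isoI:
  assumes AB: "\<And>f. f \<in> A \<Longrightarrow> Fm f \<in> B" and BA: "\<And>x. x \<in> B \<Longrightarrow> Gm x \<in> A"
    and PP: "\<And>f. f \<in> A \<Longrightarrow> Gm (Fm f) = f" and QQ: "\<And>x. x \<in> B \<Longrightarrow> Fm (Gm x) = x"
    and mono1: "\<And>f g. f \<in> A \<Longrightarrow> g \<in> A \<Longrightarrow> f \<subseteq> g \<Longrightarrow> leB (Fm f) (Fm g)"
    and mono2: "\<And>x y. x \<in> B \<Longrightarrow> y \<in> B \<Longrightarrow> leB x y \<Longrightarrow> Gm x \<subseteq> Gm y"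
  shows "order_iso A (\<subseteq>) B leB"
  unfolding order_iso_def
proof (intro exI conjI ballI)
  show "bij_betw Fm A B"
    by (rule bij_betw_byWitness[where f'=Gm]) (auto simp: PP QQ AB BA)
next
  fix f g assume f: "f \<in> A" and g: "g \<in> A"
  show "f \<subseteq> g \<longleftrightarrow> leB (Fm f) (Fm g)"
  proof
    assume "f \<subseteq> g" then show "leB (Fm f) (Fm g)" using mono1 f g by simp
  next
    assume "leB (Fm f) (Fm g)"
    then have "Gm (Fm f) \<subseteq> Gm (Fm g)" using mono2 AB f g by simp
    then show "f \<subseteq> g" using PP f g by simp
  qed
qed

section \<open>R types\<close>

fun valR :: "('a::complete_lattice) ty \<Rightarrow> 'a" where
  "valR (Psi a) = a"
| "valR Om = bot"
| "valR (Conj s t) = sup (valR s) (valR t)"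
| "valR (Arr _ _) = bot"
| "valR (Times _ _) = bot"

lemma valR_compact: "isR t \<Longrightarrow> compactR (valR t)"
  by (induction t) (auto simp: compactR_bot compactR_sup)

lemma leR_isR: "leR s t \<Longrightarrow> isR s \<and> isR t"
  by (induction rule: leR.induct) (auto simp: compactR_bot compactR_sup)

lemma leR_sound: "leR s t \<Longrightarrow> valR t \<le> valR s"
proof (induction rule: leR.induct)
  case (R_trans s t u) then show ?case using order_trans[of "valR u" "valR t" "valR s"] by simp
qed (auto intro: le_supI1 le_supI2)

lemma leR_psi_mono:
  assumes a: "compactR (a::'a::complete_lattice)" and b: "compactR b" and ba: "b \<le> a"
  shows "leR (Psi a) (Psi b)"
proof -
  have e: "sup a b = a" using ba by (simp add: sup_absorb1)
  have 1: "leR (Psi a) (Conj (Psi a) (Psi b))" using R_join1[OF a b] e by simp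
  have 2: "leR (Conj (Psi a) (Psi b)) (Psi b)" using R_conjR[of "Psi a" "Psi b"] a b by simp
  show ?thesis by (rule R_trans[OF 1 2])
qed

lemma leR_norm: "isR t \<Longrightarrow> leR t (Psi (valR t)) \<and> leR (Psi (valR t)) t"
proof (induction t)
  case (Psi a) then show ?case using R_refl[of "Psi a"] by simp
next
  case Om then show ?case using R_bot1 R_bot2 by simp
next
  case (Conj s t)
  have s: "isR s" and t: "isR t" using Conj.prems by auto
  have cs: "compactR (valR s)" and ct: "compactR (valR t)" using valR_compact s t by auto
  have IHs: "leR s (Psi (valR s))" "leR (Psi (valR s)) s" using Conj.IH(1) s by auto
  have IHt: "leR t (Psi (valR t))" "leR (Psi (valR t)) t" using Conj.IH(2) t by auto
  have a1: "leR (Conj s t) (Conj (Psi (valR s)) (Psi (valR t)))"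
    by (rule R_glb[OF R_trans[OF R_conjL[OF s t] IHs(1)] R_trans[OF R_conjR[OF s t] IHt(1)]])
  have a2: "leR (Conj (Psi (valR s)) (Psi (valR t))) (Psi (sup (valR s) (valR t)))"
    by (rule R_join2[OF cs ct])
  have b1: "leR (Psi (sup (valR s) (valR t))) (Conj (Psi (valR s)) (Psi (valR t)))"
    by (rule R_join1[OF cs ct])
  have ps: "isR (Psi (valR s))" "isR (Psi (valR t))" using cs ct by auto
  have b2: "leR (Conj (Psi (valR s)) (Psi (valR t))) (Conj s t)"
    by (rule R_glb[OF R_trans[OF R_conjL[OF ps] IHs(2)] R_trans[OF R_conjR[OF ps] IHt(2)]])
  show ?case using R_trans[OF a1 a2] R_trans[OF b1 b2] by simp
qed auto

lemma leR_complete: "isR s \<Longrightarrow> isR t \<Longrightarrow> valR t \<le> valR s \<Longrightarrow> leR s t"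
  using leR_norm[of s] leR_norm[of t] leR_psi_mono[OF valR_compact valR_compact] R_trans
  by meson

definition PhiR :: "('a::complete_lattice) ty set \<Rightarrow> 'a" where
  "PhiR f = Sup (valR ` f)"
definition PsiR :: "('a::complete_lattice) \<Rightarrow> 'a ty set" where
  "PsiR x = {t. isR t \<and> valR t \<le> x}"

lemma filter_props:
  assumes "f \<in> filters L le"
  shows "f \<subseteq> L" "Om \<in> f" "\<And>s t. s \<in> f \<Longrightarrow> t \<in> L \<Longrightarrow> le s t \<Longrightarrow> t \<in> f"
    "\<And>s t. s \<in> f \<Longrightarrow> t \<in> f \<Longrightarrow> Conj s t \<in> f"
  using assms unfolding filters_def by blast+

lemma PsiR_filter: "PsiR x \<in> filters {t. isR t} leR"
  unfolding filters_def PsiR_def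
  using leR_sound order_trans by (auto intro: order_trans)

lemma directed_valR:
  assumes f: "f \<in> filters {t. isR t} leR"
  shows "directed_in (\<le>) (valR ` f)"
  unfolding directed_in_def
proof (intro conjI ballI)
  show "valR ` f \<noteq> {}" using filter_props(2)[OF f] by auto
  fix x y assume "x \<in> valR ` f" "y \<in> valR ` f"
  then obtain s t where st: "s \<in> f" "t \<in> f" "x = valR s" "y = valR t" by auto
  then have "Conj s t \<in> f" using filter_props(4)[OF f] by simp
  then have "valR (Conj s t) \<in> valR ` f" by (rule imageI)
  then show "\<exists>z\<in>valR ` f. x \<le> z \<and> y \<le> z" using st by (intro bexI[of _ "valR (Conj s t)"]) auto
qed

lemma PsiR_PhiR:
  assumes f: "f \<in> filters {t. isR t} leR"
  shows "PsiR (PhiR f) = f"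
proof
  show "f \<subseteq> PsiR (PhiR f)"
    using filter_props(1)[OF f] unfolding PsiR_def PhiR_def by (auto intro: Sup_upper)
next
  show "PsiR (PhiR f) \<subseteq> f"
  proof
    fix t assume "t \<in> PsiR (PhiR f)"
    then have t: "isR t" "valR t \<le> Sup (valR ` f)" unfolding PsiR_def PhiR_def by auto
    obtain v where v: "v \<in> valR ` f" "valR t \<le> v"
      using compactR_D[OF valR_compact[OF t(1)] directed_valR[OF f] t(2)] by blast
    then obtain s where s: "s \<in> f" "v = valR s" by auto
    have "isR s" using s filter_props(1)[OF f] by auto
    then have "leR s t" using leR_complete t v s by simp
    then show "t \<in> f" using filter_props(3)[OF f s(1)] t by simp
  qed
qed

lemma PhiR_PsiR:
  assumes alg: "\<forall>x::'a::complete_lattice. x = Sup {c. compactR c \<and> c \<le> x}"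
  shows "PhiR (PsiR (x::'a)) = x"
proof (rule antisym)
  show "PhiR (PsiR x) \<le> x" unfolding PhiR_def PsiR_def by (auto intro: Sup_least)
  have "{c. compactR c \<and> c \<le> x} \<subseteq> valR ` PsiR x"
  proof
    fix c assume "c \<in> {c. compactR c \<and> c \<le> x}"
    then show "c \<in> valR ` PsiR x" unfolding PsiR_def by (intro image_eqI[of _ _ "Psi c"]) auto
  qed
  then have "Sup {c. compactR c \<and> c \<le> x} \<le> PhiR (PsiR x)" unfolding PhiR_def by (rule Sup_subset_mono)
  then show "x \<le> PhiR (PsiR x)" using alg by metis
qed

lemma iso_R:
  assumes alg: "\<forall>x::'a::complete_lattice. x = Sup {c. compactR c \<and> c \<le> x}"
  shows "order_iso (filters {t::'a ty. isR t} leR) (\<subseteq>) (UNIV :: 'a set) (\<le>)"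
proof (rule order_isoI[where Fm=PhiR and Gm=PsiR])
  show "\<And>f. f \<in> filters {t. isR t} leR \<Longrightarrow> PsiR (PhiR f) = f" by (rule PsiR_PhiR)
  show "\<And>x. x \<in> UNIV \<Longrightarrow> PhiR (PsiR x) = (x::'a)" using PhiR_PsiR[OF alg] by simp
  show "\<And>x. x \<in> UNIV \<Longrightarrow> PsiR x \<in> filters {t. isR t} leR" by (rule PsiR_filter)
  show "\<And>f g. f \<subseteq> g \<Longrightarrow> PhiR f \<le> PhiR g" unfolding PhiR_def by (simp add: Sup_subset_mono image_mono)
  show "\<And>x y. x \<le> y \<Longrightarrow> PsiR x \<subseteq> PsiR y" unfolding PsiR_def by auto
qed auto


section \<open>Function space levels\<close>

definition Ralg :: "('a::complete_lattice) itself \<Rightarrow> bool" where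
  "Ralg _ \<longleftrightarrow> (\<forall>x::'a. x = Sup {c. compactR c \<and> c \<le> x}) \<and> countable {c::'a. compactR c}"

lemma Ralg_alg: "Ralg TYPE('a::complete_lattice) \<Longrightarrow> (x::'a) = Sup {c. compactR c \<and> c \<le> x}"
  unfolding Ralg_def by blast
lemma Ralg_countable: "Ralg TYPE('a::complete_lattice) \<Longrightarrow> countable {c::'a. compactR c}"
  unfolding Ralg_def by blast

abbreviation algL :: "'b set \<times> ('b \<Rightarrow> 'b \<Rightarrow> bool) \<Rightarrow> bool" where
  "algL L \<equiv> alg (fst L) (snd L)"

lemma KC_iff: "c \<in> KC L \<longleftrightarrow> compact_in (fst L) (snd L) c" unfolding KC_def by simp

lemma KC_sub: "c \<in> KC L \<Longrightarrow> c \<in> fst L" unfolding KC_def compact_in_def by simp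

lemma KC_nonempty: assumes "algL L" shows "KC L \<noteq> {}"
proof -
  obtain b where "is_lub_in (fst L) (snd L) {} b" using alg_ex_lub[OF assms] by blast
  then have "b \<in> KC L" unfolding KC_def using compact_bot[of "fst L" "snd L" b] by simp
  then show ?thesis by blast
qed

lemma KC_countable: "algL L \<Longrightarrow> countable (KC L)"
  unfolding KC_def using alg_countable[of "fst L" "snd L"] by simp

lemma enum_KC: "algL L \<Longrightarrow> enum L i \<in> KC L"
  unfolding enum_def by (rule from_nat_into[OF KC_nonempty])

lemma enum_in: "algL L \<Longrightarrow> enum L i \<in> fst L"
  by (rule KC_sub[OF enum_KC])

lemma enum_surj: "algL L \<Longrightarrow> c \<in> KC L \<Longrightarrow> \<exists>i. enum L i = c"
  unfolding enum_def using from_nat_into_surj[OF KC_countable, of L c] by simp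

definition monoE :: "('a::complete_lattice) level \<Rightarrow> (nat \<Rightarrow> 'a) \<Rightarrow> bool" where
  "monoE L g \<longleftrightarrow> (\<forall>i j. snd L (enum L i) (enum L j) \<longrightarrow> g i \<le> g j)"

lemma UFun_in_D_of: "UFun g \<in> D_of L \<longleftrightarrow> monoE L g"
  unfolding D_of_def monoE_def by auto

lemma D_of_E: "f \<in> D_of L \<Longrightarrow> f = UFun (unF f) \<and> monoE L (unF f)"
  unfolding D_of_def monoE_def by auto

lemma D_of_mono: "f \<in> D_of L \<Longrightarrow> snd L (enum L i) (enum L j) \<Longrightarrow> unF f i \<le> unF f j"
  using D_of_E[of f L] unfolding monoE_def by simp

lemma D_of_eqI: "f \<in> D_of L \<Longrightarrow> g \<in> D_of L \<Longrightarrow> (\<And>i. unF f i = unF g i) \<Longrightarrow> f = g"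
proof -
  assume f: "f \<in> D_of L" and g: "g \<in> D_of L" and e: "\<And>i. unF f i = unF g i"
  have "unF f = unF g" using e by (rule ext)
  then show "f = g" using D_of_E[OF f] D_of_E[OF g] by simp
qed

definition supD :: "('a::complete_lattice) U set \<Rightarrow> 'a U" where
  "supD A = UFun (\<lambda>i. SUP f\<in>A. unF f i)"

lemma unF_supD[simp]: "unF (supD A) i = (SUP f\<in>A. unF f i)"
  unfolding supD_def by simp

lemma supD_in: assumes "A \<subseteq> D_of L" shows "supD A \<in> D_of L"
  unfolding supD_def UFun_in_D_of monoE_def
proof (intro allI impI)
  fix i j assume ij: "snd L (enum L i) (enum L j)"
  show "(SUP f\<in>A. unF f i) \<le> (SUP f\<in>A. unF f j)"
  proof (rule SUP_mono)
    fix f assume "f \<in> A"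
    then have "f \<in> D_of L" using assms by auto
    then have "unF f i \<le> unF f j" using D_of_mono[OF _ ij] by simp
    then show "\<exists>m\<in>A. unF f i \<le> unF m j" using \<open>f \<in> A\<close> by auto
  qed
qed

lemma po_D: "po (D_of L) (leD_of L)"
  unfolding po_def leD_of_def
proof (intro conjI ballI impI)
  fix x y assume xy: "x \<in> D_of L" "y \<in> D_of L" "\<forall>i. unF x i \<le> unF y i" "\<forall>i. unF y i \<le> unF x i"
  show "x = y" by (rule D_of_eqI[OF xy(1,2)]) (use xy(3,4) antisym in blast)
qed (auto intro: order_trans)

lemma lub_D: assumes "A \<subseteq> D_of L" shows "is_lub_in (D_of L) (leD_of L) A (supD A)"
proof (rule is_lubI)
  show "supD A \<in> D_of L" by (rule supD_in[OF assms])
  fix t assume "t \<in> A" then show "leD_of L t (supD A)" unfolding leD_of_def by (auto intro: SUP_upper)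
next
  fix u assume "u \<in> D_of L" "\<forall>t\<in>A. leD_of L t u"
  then show "leD_of L (supD A) u" unfolding leD_of_def by (auto intro: SUP_least)
qed

lemma lub_D_eq: assumes "A \<subseteq> D_of L" "is_lub_in (D_of L) (leD_of L) A s" shows "s = supD A"
  using lub_unique[OF po_D assms(2) lub_D[OF assms(1)]] .

lemma appD_compact:
  assumes L: "algL L" and f: "f \<in> D_of L" and i0: "enum L i0 = x"
  shows "appD L f x = unF f i0"
  unfolding appD_def
proof (rule antisym)
  show "(SUP i\<in>{i. snd L (enum L i) x}. unF f i) \<le> unF f i0"
    using D_of_mono[OF f] i0 by (auto intro: SUP_least)
  have "snd L (enum L i0) x" using i0 po_refl[OF alg_po[OF L] enum_in[OF L, of i0]] by simp
  then show "unF f i0 \<le> (SUP i\<in>{i. snd L (enum L i) x}. unF f i)" by (auto intro: SUP_upper)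
qed

lemma appD_mono_x:
  assumes L: "algL L" and xy: "x \<in> fst L" "y \<in> fst L" "snd L x y"
  shows "appD L f x \<le> appD L f y"
  unfolding appD_def
proof (rule SUP_subset_mono)
  show "{i. snd L (enum L i) x} \<subseteq> {i. snd L (enum L i) y}"
    using po_trans[OF alg_po[OF L] enum_in[OF L] xy(1,2) _ xy(3)] by blast
qed simp

lemma appD_mono_f:
  assumes "leD_of L f g" shows "appD L f x \<le> appD L g x"
  unfolding appD_def using assms unfolding leD_of_def by (intro SUP_mono) auto

lemma appD_supD: "appD L (supD A) x = (SUP f\<in>A. appD L f x)"
  unfolding appD_def unF_supD by (rule SUP_commute)

definition stepF :: "('a::complete_lattice) level \<Rightarrow> 'a U \<Rightarrow> 'a \<Rightarrow> 'a U" where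
  "stepF L k a = UFun (\<lambda>i. if snd L k (enum L i) then a else bot)"

lemma unF_stepF[simp]: "unF (stepF L k a) i = (if snd L k (enum L i) then a else bot)"
  unfolding stepF_def by simp

lemma stepF_in: assumes L: "algL L" and k: "k \<in> fst L" shows "stepF L k a \<in> D_of L"
  unfolding stepF_def UFun_in_D_of monoE_def
  using po_trans[OF alg_po[OF L] k enum_in[OF L] enum_in[OF L]] by auto

lemma stepF_le:
  assumes L: "algL L" and f: "f \<in> D_of L" and i0: "enum L i0 = k"
  shows "leD_of L (stepF L k a) f \<longleftrightarrow> a \<le> unF f i0"
proof
  assume "leD_of L (stepF L k a) f"
  then have "unF (stepF L k a) i0 \<le> unF f i0" unfolding leD_of_def by blast
  moreover have "snd L k (enum L i0)" using i0 po_refl[OF alg_po[OF L] enum_in[OF L, of i0]] by simp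
  ultimately show "a \<le> unF f i0" by simp
next
  assume a: "a \<le> unF f i0"
  show "leD_of L (stepF L k a) f" unfolding leD_of_def
  proof
    fix i show "unF (stepF L k a) i \<le> unF f i"
      using a D_of_mono[OF f, of i0 i] i0 by (auto intro: order_trans)
  qed
qed

lemma directed_image_unF:
  assumes "directed_in (leD_of L) T" shows "directed_in (\<le>) ((\<lambda>t. unF t i) ` T)"
  unfolding directed_in_def
proof (intro conjI ballI)
  show "(\<lambda>t. unF t i) ` T \<noteq> {}" using assms unfolding directed_in_def by simp
  fix x y assume "x \<in> (\<lambda>t. unF t i) ` T" "y \<in> (\<lambda>t. unF t i) ` T"
  then obtain tx ty where t: "tx \<in> T" "ty \<in> T" "x = unF tx i" "y = unF ty i" by auto
  then obtain z where z: "z \<in> T" "leD_of L tx z" "leD_of L ty z"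
    using assms unfolding directed_in_def by meson
  have "unF z i \<in> (\<lambda>t. unF t i) ` T" using z(1) by (rule imageI)
  moreover have "x \<le> unF z i" "y \<le> unF z i" using z t unfolding leD_of_def by auto
  ultimately show "\<exists>z\<in>(\<lambda>t. unF t i) ` T. x \<le> z \<and> y \<le> z" by blast
qed

lemma stepF_compact:
  assumes L: "algL L" and k: "k \<in> KC L" and a: "compactR a"
  shows "compact_in (D_of L) (leD_of L) (stepF L k a)"
proof (rule compactI)
  show "stepF L k a \<in> D_of L" by (rule stepF_in[OF L KC_sub[OF k]])
  fix T s assume T: "T \<subseteq> D_of L" "directed_in (leD_of L) T" "is_lub_in (D_of L) (leD_of L) T s"
    "leD_of L (stepF L k a) s"
  have s: "s = supD T" by (rule lub_D_eq[OF T(1,3)])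
  obtain i0 where i0: "enum L i0 = k" using enum_surj[OF L k] by blast
  have "a \<le> unF s i0" using stepF_le[OF L lub_in[OF T(3)] i0] T(4) by simp
  then have "a \<le> Sup ((\<lambda>t. unF t i0) ` T)" using s by simp
  then obtain t where t: "t \<in> T" "a \<le> unF t i0"
    using compactR_D[OF a directed_image_unF[OF T(2)]] by blast
  have "leD_of L (stepF L k a) t" using stepF_le[OF L _ i0] t T(1) by blast
  then show "\<exists>t\<in>T. leD_of L (stepF L k a) t" using t(1) by blast
qed


definition StepsBelow :: "('a::complete_lattice) level \<Rightarrow> 'a U \<Rightarrow> 'a U set" where
  "StepsBelow L f = {stepF L k a | k a. k \<in> KC L \<and> compactR a \<and> leD_of L (stepF L k a) f}"

lemma StepsBelow_sub: "algL L \<Longrightarrow> StepsBelow L f \<subseteq> D_of L"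
  unfolding StepsBelow_def using stepF_in KC_sub by blast

lemma steps_lub:
  assumes R: "Ralg TYPE('a::complete_lattice)" and L: "algL (L::'a level)" and f: "f \<in> D_of L"
  shows "is_lub_in (D_of L) (leD_of L) (StepsBelow L f) f"
proof (rule is_lubI)
  show "f \<in> D_of L" by (rule f)
  fix t assume "t \<in> StepsBelow L f" then show "leD_of L t f" unfolding StepsBelow_def by blast
next
  fix u assume u: "u \<in> D_of L" and ub: "\<forall>t\<in>StepsBelow L f. leD_of L t u"
  show "leD_of L f u" unfolding leD_of_def
  proof
    fix i
    have "Sup {c. compactR c \<and> c \<le> unF f i} \<le> unF u i"
    proof (rule Sup_least)
      fix c assume c: "c \<in> {c. compactR c \<and> c \<le> unF f i}"
      have "leD_of L (stepF L (enum L i) c) f" using stepF_le[OF L f refl] c by simp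
      then have "stepF L (enum L i) c \<in> StepsBelow L f"
        unfolding StepsBelow_def using enum_KC[OF L] c by blast
      then have "leD_of L (stepF L (enum L i) c) u" using ub by blast
      then show "c \<le> unF u i" using stepF_le[OF L u refl] by simp
    qed
    then show "unF f i \<le> unF u i" using Ralg_alg[OF R, of "unF f i"] by simp
  qed
qed

lemma supD_single: "t \<in> D_of L \<Longrightarrow> supD {t} = t"
  by (rule D_of_eqI[OF supD_in]) auto

lemma supD_subset_le: "F \<subseteq> G \<Longrightarrow> leD_of L (supD F) (supD G)"
  unfolding leD_of_def by (auto intro: SUP_subset_mono)

lemma D_alg:
  assumes R: "Ralg TYPE('a::complete_lattice)" and L: "algL (L::'a level)"
  shows "alg (D_of L) (leD_of L)"
proof -
  have po: "po (D_of L) (leD_of L)" by (rule po_D)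
  define Steps where "Steps = (\<lambda>(k,a). stepF L k a) ` (KC L \<times> {a::'a. compactR a})"
  have cSteps: "countable Steps" unfolding Steps_def
    using KC_countable[OF L] Ralg_countable[OF R] by simp
  have cFJ: "countable (supD ` {F. finite F \<and> F \<subseteq> Steps})"
    using countable_Collect_finite_subset[OF cSteps] by simp
  have SB: "StepsBelow L f \<subseteq> Steps" for f
    unfolding StepsBelow_def Steps_def by auto
  have alg_part: "is_lub_in (D_of L) (leD_of L) {c. compact_in (D_of L) (leD_of L) c \<and> leD_of L c f} f"
    if f: "f \<in> D_of L" for f
  proof (rule lub_mono_subset[OF steps_lub[OF R L f]])
    show "StepsBelow L f \<subseteq> {c. compact_in (D_of L) (leD_of L) c \<and> leD_of L c f}"
      unfolding StepsBelow_def using stepF_compact[OF L] by blast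
    show "{c. compact_in (D_of L) (leD_of L) c \<and> leD_of L c f} \<subseteq> D_of L"
      using compact_in_S[of "D_of L" "leD_of L"] by blast
  qed simp
  have cpt: "f \<in> supD ` {F. finite F \<and> F \<subseteq> Steps}" if fc: "compact_in (D_of L) (leD_of L) f" for f
  proof -
    have f: "f \<in> D_of L" by (rule compact_in_S[OF fc])
    define X where "X = StepsBelow L f"
    have XD: "X \<subseteq> D_of L" unfolding X_def by (rule StepsBelow_sub[OF L])
    define Z where "Z = supD ` {F. finite F \<and> F \<subseteq> X}"
    have ZD: "Z \<subseteq> D_of L" unfolding Z_def using supD_in XD by blast
    have dir: "directed_in (leD_of L) Z" unfolding directed_in_def
    proof (intro conjI ballI)
      show "Z \<noteq> {}" unfolding Z_def by blast
      fix x y assume "x \<in> Z" "y \<in> Z"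
      then obtain F1 F2 where F: "finite F1" "F1 \<subseteq> X" "finite F2" "F2 \<subseteq> X" "x = supD F1" "y = supD F2"
        unfolding Z_def by blast
      have "supD (F1 \<union> F2) \<in> Z" unfolding Z_def using F by blast
      moreover have "leD_of L x (supD (F1 \<union> F2))" "leD_of L y (supD (F1 \<union> F2))"
        using F supD_subset_le[of F1 "F1 \<union> F2" L] supD_subset_le[of F2 "F1 \<union> F2" L] by auto
      ultimately show "\<exists>z\<in>Z. leD_of L x z \<and> leD_of L y z" by blast
    qed
    have below: "leD_of L z f" if z: "z \<in> Z" for z
    proof -
      obtain F where F: "finite F" "F \<subseteq> X" "z = supD F" using z unfolding Z_def by blast
      have FD: "F \<subseteq> D_of L" using F XD by blast
      show ?thesis unfolding F(3)
      proof (rule lub_least[OF lub_D[OF FD] f])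
        fix t assume "t \<in> F" then show "leD_of L t f" using F(2) unfolding X_def StepsBelow_def by blast
      qed
    qed
    have lubZ: "is_lub_in (D_of L) (leD_of L) Z f"
    proof (rule is_lubI[OF f])
      fix t assume "t \<in> Z" then show "leD_of L t f" by (rule below)
    next
      fix u assume u: "u \<in> D_of L" "\<forall>t\<in>Z. leD_of L t u"
      have "\<forall>t\<in>X. leD_of L t u"
      proof
        fix t assume t: "t \<in> X"
        have "supD {t} \<in> Z" unfolding Z_def using t by blast
        then show "leD_of L t u" using u supD_single[of t L] t XD by auto
      qed
      then show "leD_of L f u" using lub_least[OF steps_lub[OF R L f] u(1)] unfolding X_def by blast
    qed
    obtain z where z: "z \<in> Z" "leD_of L f z"
      using compactD[OF fc ZD dir lubZ po_refl[OF po f]] by blast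
    have "f = z" using po_antisym[OF po f _ z(2) below[OF z(1)]] ZD z(1) by blast
    then show ?thesis using z(1) SB unfolding Z_def X_def by blast
  qed
  have "countable {c. compact_in (D_of L) (leD_of L) c}"
    by (rule countable_subset[OF _ cFJ]) (use cpt in blast)
  then show ?thesis unfolding alg_def using po lub_D alg_part by blast
qed


section \<open>Product levels\<close>

fun fstU :: "'a U \<Rightarrow> 'a U" where "fstU (UPair d c) = d" | "fstU _ = UUnit"
fun sndU :: "'a U \<Rightarrow> 'a U" where "sndU (UPair d c) = c" | "sndU _ = UUnit"

definition prodS :: "'a U set \<Rightarrow> 'a U set \<Rightarrow> 'a U set" where
  "prodS S1 S2 = {UPair d c | d c. d \<in> S1 \<and> c \<in> S2}"
definition prodLe :: "('a U \<Rightarrow> 'a U \<Rightarrow> bool) \<Rightarrow> ('a U \<Rightarrow> 'a U \<Rightarrow> bool) \<Rightarrow> 'a U \<Rightarrow> 'a U \<Rightarrow> bool" where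
  "prodLe le1 le2 x y = (case (x, y) of (UPair d c, UPair d' c') \<Rightarrow> le1 d d' \<and> le2 c c' | _ \<Rightarrow> False)"

lemma lev_Suc: "lev (Suc n) = (prodS (D_of (lev n)) (fst (lev n)), prodLe (leD_of (lev n)) (snd (lev n)))"
  unfolding prodS_def prodLe_def by simp

declare lev.simps(2)[simp del]

lemma prodLe_UPair[simp]: "prodLe le1 le2 (UPair d c) (UPair d' c') = (le1 d d' \<and> le2 c c')"
  unfolding prodLe_def by simp

lemma UPair_in_prodS[simp]: "UPair d c \<in> prodS S1 S2 \<longleftrightarrow> d \<in> S1 \<and> c \<in> S2"
  unfolding prodS_def by simp

lemma prodS_E: "x \<in> prodS S1 S2 \<Longrightarrow> x = UPair (fstU x) (sndU x) \<and> fstU x \<in> S1 \<and> sndU x \<in> S2"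
  unfolding prodS_def by auto

lemma prodLe_E: "x \<in> prodS S1 S2 \<Longrightarrow> y \<in> prodS S1 S2 \<Longrightarrow>
   prodLe le1 le2 x y \<longleftrightarrow> le1 (fstU x) (fstU y) \<and> le2 (sndU x) (sndU y)"
  unfolding prodS_def by auto

lemma po_prod: assumes p1: "po S1 le1" and p2: "po S2 le2" shows "po (prodS S1 S2) (prodLe le1 le2)"
  unfolding po_def
proof (intro conjI ballI impI)
  fix x assume "x \<in> prodS S1 S2"
  then show "prodLe le1 le2 x x" using prodS_E[of x] po_refl[OF p1] po_refl[OF p2] prodLe_E by metis
next
  fix x y assume xy: "x \<in> prodS S1 S2" "y \<in> prodS S1 S2" "prodLe le1 le2 x y" "prodLe le1 le2 y x"
  have "fstU x = fstU y" using po_antisym[OF p1] xy prodLe_E[OF xy(1,2)] prodLe_E[OF xy(2,1)] prodS_E by metis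
  moreover have "sndU x = sndU y" using po_antisym[OF p2] xy prodLe_E[OF xy(1,2)] prodLe_E[OF xy(2,1)] prodS_E by metis
  ultimately show "x = y" using prodS_E[OF xy(1)] prodS_E[OF xy(2)] by metis
next
  fix x y z assume xyz: "x \<in> prodS S1 S2" "y \<in> prodS S1 S2" "z \<in> prodS S1 S2"
    "prodLe le1 le2 x y" "prodLe le1 le2 y z"
  have "le1 (fstU x) (fstU z)"
    using po_trans[OF p1] xyz prodLe_E[OF xyz(1,2)] prodLe_E[OF xyz(2,3)] prodS_E by metis
  moreover have "le2 (sndU x) (sndU z)"
    using po_trans[OF p2] xyz prodLe_E[OF xyz(1,2)] prodLe_E[OF xyz(2,3)] prodS_E by metis
  ultimately show "prodLe le1 le2 x z" using prodLe_E[OF xyz(1,3)] by simp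
qed

lemma lub_prod:
  assumes A: "A \<subseteq> prodS S1 S2" and a: "is_lub_in S1 le1 (fstU ` A) a" and b: "is_lub_in S2 le2 (sndU ` A) b"
  shows "is_lub_in (prodS S1 S2) (prodLe le1 le2) A (UPair a b)"
proof (rule is_lubI)
  show "UPair a b \<in> prodS S1 S2" using lub_in[OF a] lub_in[OF b] by simp
next
  fix t assume t: "t \<in> A"
  have tS: "t \<in> prodS S1 S2" using t A by blast
  have "le1 (fstU t) a" using lub_upper[OF a] t by simp
  moreover have "le2 (sndU t) b" using lub_upper[OF b] t by simp
  ultimately show "prodLe le1 le2 t (UPair a b)" using prodS_E[OF tS] prodLe_UPair by metis
next
  fix u assume u: "u \<in> prodS S1 S2" "\<forall>t\<in>A. prodLe le1 le2 t u"
  have uu: "u = UPair (fstU u) (sndU u)" "fstU u \<in> S1" "sndU u \<in> S2" using prodS_E[OF u(1)] by auto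
  have "le1 a (fstU u)"
  proof (rule lub_least[OF a uu(2)])
    fix t assume "t \<in> fstU ` A"
    then obtain x where x: "x \<in> A" "t = fstU x" by blast
    then show "le1 t (fstU u)" using u(2) prodLe_E[OF _ u(1)] A by blast
  qed
  moreover have "le2 b (sndU u)"
  proof (rule lub_least[OF b uu(3)])
    fix t assume "t \<in> sndU ` A"
    then obtain x where x: "x \<in> A" "t = sndU x" by blast
    then show "le2 t (sndU u)" using u(2) prodLe_E[OF _ u(1)] A by blast
  qed
  ultimately show "prodLe le1 le2 (UPair a b) u" using uu(1) prodLe_UPair by metis
qed

lemma lub_prod_D:
  assumes A: "A \<subseteq> prodS S1 S2" and s: "is_lub_in (prodS S1 S2) (prodLe le1 le2) A s"
  shows "is_lub_in S1 le1 (fstU ` A) (fstU s) \<and> is_lub_in S2 le2 (sndU ` A) (sndU s)"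
proof -
  have sS: "s \<in> prodS S1 S2" by (rule lub_in[OF s])
  have ss: "s = UPair (fstU s) (sndU s)" "fstU s \<in> S1" "sndU s \<in> S2" using prodS_E[OF sS] by auto
  have up: "le1 (fstU t) (fstU s) \<and> le2 (sndU t) (sndU s)" if "t \<in> A" for t
    using lub_upper[OF s that] prodLe_E[OF _ sS] A that by blast
  have l1: "is_lub_in S1 le1 (fstU ` A) (fstU s)"
  proof (rule is_lubI[OF ss(2)])
    fix t assume "t \<in> fstU ` A" then show "le1 t (fstU s)" using up by blast
  next
    fix u assume u: "u \<in> S1" "\<forall>t\<in>fstU ` A. le1 t u"
    have "UPair u (sndU s) \<in> prodS S1 S2" using u ss by simp
    moreover have "\<forall>t\<in>A. prodLe le1 le2 t (UPair u (sndU s))"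
    proof
      fix t assume t: "t \<in> A"
      then have "t = UPair (fstU t) (sndU t)" using prodS_E A by blast
      then show "prodLe le1 le2 t (UPair u (sndU s))" using up[OF t] u t prodLe_UPair by (metis imageI)
    qed
    ultimately have "prodLe le1 le2 s (UPair u (sndU s))" using lub_least[OF s] by blast
    then show "le1 (fstU s) u" using ss(1) prodLe_UPair by metis
  qed
  have l2: "is_lub_in S2 le2 (sndU ` A) (sndU s)"
  proof (rule is_lubI[OF ss(3)])
    fix t assume "t \<in> sndU ` A" then show "le2 t (sndU s)" using up by blast
  next
    fix u assume u: "u \<in> S2" "\<forall>t\<in>sndU ` A. le2 t u"
    have "UPair (fstU s) u \<in> prodS S1 S2" using u ss by simp
    moreover have "\<forall>t\<in>A. prodLe le1 le2 t (UPair (fstU s) u)"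
    proof
      fix t assume t: "t \<in> A"
      then have "t = UPair (fstU t) (sndU t)" using prodS_E A by blast
      then show "prodLe le1 le2 t (UPair (fstU s) u)" using up[OF t] u t prodLe_UPair by (metis imageI)
    qed
    ultimately have "prodLe le1 le2 s (UPair (fstU s) u)" using lub_least[OF s] by blast
    then show "le2 (sndU s) u" using ss(1) prodLe_UPair by metis
  qed
  show ?thesis using l1 l2 by blast
qed


lemma lub_single: "po S le \<Longrightarrow> c \<in> S \<Longrightarrow> is_lub_in S le {c} c"
  unfolding is_lub_in_def using po_refl by fastforce

lemma compact_prod_iff:
  assumes a1: "alg S1 le1" and a2: "alg S2 le2" and d: "d \<in> S1" and c: "c \<in> S2"
  shows "compact_in (prodS S1 S2) (prodLe le1 le2) (UPair d c) \<longleftrightarrow> compact_in S1 le1 d \<and> compact_in S2 le2 c"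
proof
  assume cp: "compact_in (prodS S1 S2) (prodLe le1 le2) (UPair d c)"
  have p1: "po S1 le1" and p2: "po S2 le2" using alg_po a1 a2 by auto
  show "compact_in S1 le1 d \<and> compact_in S2 le2 c"
  proof
    show "compact_in S1 le1 d"
    proof (rule compactI[OF d])
      fix T s assume T: "T \<subseteq> S1" "directed_in le1 T" "is_lub_in S1 le1 T s" "le1 d s"
      define T' where "T' = (\<lambda>t. UPair t c) ` T"
      have T'S: "T' \<subseteq> prodS S1 S2" unfolding T'_def using T(1) c by auto
      have Tne: "T \<noteq> {}" using T(2) unfolding directed_in_def by simp
      have dir: "directed_in (prodLe le1 le2) T'" unfolding directed_in_def
      proof (intro conjI ballI)
        show "T' \<noteq> {}" unfolding T'_def using Tne by simp
        fix x y assume "x \<in> T'" "y \<in> T'"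
        then obtain tx ty where t: "tx \<in> T" "ty \<in> T" "x = UPair tx c" "y = UPair ty c" unfolding T'_def by blast
        then obtain z where z: "z \<in> T" "le1 tx z" "le1 ty z" using T(2) unfolding directed_in_def by meson
        have "UPair z c \<in> T'" unfolding T'_def using z(1) by blast
        moreover have "le2 c c" using po_refl[OF p2 c] .
        ultimately show "\<exists>z\<in>T'. prodLe le1 le2 x z \<and> prodLe le1 le2 y z" using z t
          by (intro bexI[of _ "UPair z c"]) auto
      qed
      have f1: "fstU ` T' = T" unfolding T'_def by (auto simp: image_image)
      have f2: "sndU ` T' = {c}" unfolding T'_def using Tne by (auto simp: image_image)
      have lub: "is_lub_in (prodS S1 S2) (prodLe le1 le2) T' (UPair s c)"
        by (rule lub_prod[OF T'S]) (use T(3) lub_single[OF p2 c] f1 f2 in auto)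
      have "prodLe le1 le2 (UPair d c) (UPair s c)" using T(4) po_refl[OF p2 c] by simp
      then obtain t' where t': "t' \<in> T'" "prodLe le1 le2 (UPair d c) t'"
        using compactD[OF cp T'S dir lub] by blast
      then obtain t where "t \<in> T" "t' = UPair t c" unfolding T'_def by blast
      then show "\<exists>t\<in>T. le1 d t" using t' by auto
    qed
    show "compact_in S2 le2 c"
    proof (rule compactI[OF c])
      fix T s assume T: "T \<subseteq> S2" "directed_in le2 T" "is_lub_in S2 le2 T s" "le2 c s"
      define T' where "T' = (\<lambda>t. UPair d t) ` T"
      have T'S: "T' \<subseteq> prodS S1 S2" unfolding T'_def using T(1) d by auto
      have Tne: "T \<noteq> {}" using T(2) unfolding directed_in_def by simp
      have dir: "directed_in (prodLe le1 le2) T'" unfolding directed_in_def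
      proof (intro conjI ballI)
        show "T' \<noteq> {}" unfolding T'_def using Tne by simp
        fix x y assume "x \<in> T'" "y \<in> T'"
        then obtain tx ty where t: "tx \<in> T" "ty \<in> T" "x = UPair d tx" "y = UPair d ty" unfolding T'_def by blast
        then obtain z where z: "z \<in> T" "le2 tx z" "le2 ty z" using T(2) unfolding directed_in_def by meson
        have "UPair d z \<in> T'" unfolding T'_def using z(1) by blast
        moreover have "le1 d d" using po_refl[OF p1 d] .
        ultimately show "\<exists>z\<in>T'. prodLe le1 le2 x z \<and> prodLe le1 le2 y z" using z t
          by (intro bexI[of _ "UPair d z"]) auto
      qed
      have f1: "fstU ` T' = {d}" unfolding T'_def using Tne by (auto simp: image_image)
      have f2: "sndU ` T' = T" unfolding T'_def by (auto simp: image_image)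
      have lub: "is_lub_in (prodS S1 S2) (prodLe le1 le2) T' (UPair d s)"
        by (rule lub_prod[OF T'S]) (use T(3) lub_single[OF p1 d] f1 f2 in auto)
      have "prodLe le1 le2 (UPair d c) (UPair d s)" using T(4) po_refl[OF p1 d] by simp
      then obtain t' where t': "t' \<in> T'" "prodLe le1 le2 (UPair d c) t'"
        using compactD[OF cp T'S dir lub] by blast
      then obtain t where "t \<in> T" "t' = UPair d t" unfolding T'_def by blast
      then show "\<exists>t\<in>T. le2 c t" using t' by auto
    qed
  qed
next
  assume cc: "compact_in S1 le1 d \<and> compact_in S2 le2 c"
  have p1: "po S1 le1" and p2: "po S2 le2" using alg_po a1 a2 by auto
  show "compact_in (prodS S1 S2) (prodLe le1 le2) (UPair d c)"
  proof (rule compactI)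
    show "UPair d c \<in> prodS S1 S2" using d c by simp
    fix T s assume T: "T \<subseteq> prodS S1 S2" "directed_in (prodLe le1 le2) T"
      "is_lub_in (prodS S1 S2) (prodLe le1 le2) T s" "prodLe le1 le2 (UPair d c) s"
    have sS: "s \<in> prodS S1 S2" by (rule lub_in[OF T(3)])
    have ss: "s = UPair (fstU s) (sndU s)" using prodS_E[OF sS] by simp
    have ds: "le1 d (fstU s)" and cs: "le2 c (sndU s)" using T(4) ss prodLe_UPair by metis+
    have ls: "is_lub_in S1 le1 (fstU ` T) (fstU s)" "is_lub_in S2 le2 (sndU ` T) (sndU s)"
      using lub_prod_D[OF T(1,3)] by auto
    have Tne: "T \<noteq> {}" using T(2) unfolding directed_in_def by simp
    have dirT: "\<forall>x\<in>T. \<forall>y\<in>T. \<exists>z\<in>T. prodLe le1 le2 x z \<and> prodLe le1 le2 y z"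
      using T(2) unfolding directed_in_def by simp
    have le_proj: "le1 (fstU x) (fstU y) \<and> le2 (sndU x) (sndU y)" if "x \<in> T" "y \<in> T" "prodLe le1 le2 x y" for x y
      using prodLe_E[of x S1 S2 y le1 le2] that T(1) by blast
    have d1: "directed_in le1 (fstU ` T)" unfolding directed_in_def
    proof (intro conjI ballI)
      show "fstU ` T \<noteq> {}" using Tne by simp
      fix x y assume "x \<in> fstU ` T" "y \<in> fstU ` T"
      then obtain tx ty where t: "tx \<in> T" "ty \<in> T" "x = fstU tx" "y = fstU ty" by blast
      then obtain z where z: "z \<in> T" "prodLe le1 le2 tx z" "prodLe le1 le2 ty z" using dirT by meson
      show "\<exists>z\<in>fstU ` T. le1 x z \<and> le1 y z" using le_proj[OF t(1) z(1,2)] le_proj[OF t(2) z(1,3)] t z(1) by blast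
    qed
    have d2: "directed_in le2 (sndU ` T)" unfolding directed_in_def
    proof (intro conjI ballI)
      show "sndU ` T \<noteq> {}" using Tne by simp
      fix x y assume "x \<in> sndU ` T" "y \<in> sndU ` T"
      then obtain tx ty where t: "tx \<in> T" "ty \<in> T" "x = sndU tx" "y = sndU ty" by blast
      then obtain z where z: "z \<in> T" "prodLe le1 le2 tx z" "prodLe le1 le2 ty z" using dirT by meson
      show "\<exists>z\<in>sndU ` T. le2 x z \<and> le2 y z" using le_proj[OF t(1) z(1,2)] le_proj[OF t(2) z(1,3)] t z(1) by blast
    qed
    have sub1: "fstU ` T \<subseteq> S1" and sub2: "sndU ` T \<subseteq> S2" using T(1) prodS_E by blast+
    obtain x1 where x1: "x1 \<in> fstU ` T" "le1 d x1" using compactD[OF conjunct1[OF cc] sub1 d1 ls(1) ds] by blast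
    obtain x2 where x2: "x2 \<in> sndU ` T" "le2 c x2" using compactD[OF conjunct2[OF cc] sub2 d2 ls(2) cs] by blast
    obtain t1 t2 where t12: "t1 \<in> T" "t2 \<in> T" "x1 = fstU t1" "x2 = sndU t2" using x1 x2 by blast
    obtain z where z: "z \<in> T" "prodLe le1 le2 t1 z" "prodLe le1 le2 t2 z" using dirT t12 by meson
    have zz: "z = UPair (fstU z) (sndU z)" "fstU z \<in> S1" "sndU z \<in> S2" using prodS_E z(1) T(1) by blast+
    have "fstU t1 \<in> S1" "sndU t2 \<in> S2" using t12 T(1) prodS_E by blast+
    then have "le1 d (fstU z)" "le2 c (sndU z)"
      using po_trans[OF p1 d _ zz(2)] po_trans[OF p2 c _ zz(3)] x1 x2 t12
        le_proj[OF t12(1) z(1,2)] le_proj[OF t12(2) z(1,3)] by auto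
    then have "prodLe le1 le2 (UPair d c) z" using zz(1) prodLe_UPair by metis
    then show "\<exists>t\<in>T. prodLe le1 le2 (UPair d c) t" using z(1) by blast
  qed
qed

lemma alg_prod:
  assumes a1: "alg S1 le1" and a2: "alg S2 le2"
  shows "alg (prodS S1 S2) (prodLe le1 le2)"
proof -
  have p1: "po S1 le1" and p2: "po S2 le2" using alg_po a1 a2 by auto
  have po: "po (prodS S1 S2) (prodLe le1 le2)" by (rule po_prod[OF p1 p2])
  have cpl: "\<exists>s. is_lub_in (prodS S1 S2) (prodLe le1 le2) A s" if A: "A \<subseteq> prodS S1 S2" for A
  proof -
    have "fstU ` A \<subseteq> S1" "sndU ` A \<subseteq> S2" using A prodS_E by blast+
    then obtain a b where "is_lub_in S1 le1 (fstU ` A) a" "is_lub_in S2 le2 (sndU ` A) b"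
      using alg_ex_lub[OF a1] alg_ex_lub[OF a2] by meson
    then show ?thesis using lub_prod[OF A] by blast
  qed
  obtain b1 where b1: "is_lub_in S1 le1 {} b1" using alg_ex_lub[OF a1] by blast
  obtain b2 where b2: "is_lub_in S2 le2 {} b2" using alg_ex_lub[OF a2] by blast
  have b1c: "compact_in S1 le1 b1" and b2c: "compact_in S2 le2 b2" using compact_bot[OF b1] compact_bot[OF b2] by auto
  have b1S: "b1 \<in> S1" and b2S: "b2 \<in> S2" using lub_in[OF b1] lub_in[OF b2] by auto
  have algx: "is_lub_in (prodS S1 S2) (prodLe le1 le2)
      {y. compact_in (prodS S1 S2) (prodLe le1 le2) y \<and> prodLe le1 le2 y x} x"
    if x: "x \<in> prodS S1 S2" for x
  proof (rule is_lubI[OF x])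
    fix t assume "t \<in> {y. compact_in (prodS S1 S2) (prodLe le1 le2) y \<and> prodLe le1 le2 y x}"
    then show "prodLe le1 le2 t x" by simp
  next
    fix u assume u: "u \<in> prodS S1 S2"
      "\<forall>t\<in>{y. compact_in (prodS S1 S2) (prodLe le1 le2) y \<and> prodLe le1 le2 y x}. prodLe le1 le2 t u"
    have xx: "x = UPair (fstU x) (sndU x)" "fstU x \<in> S1" "sndU x \<in> S2" using prodS_E[OF x] by auto
    have uu: "u = UPair (fstU u) (sndU u)" "fstU u \<in> S1" "sndU u \<in> S2" using prodS_E[OF u(1)] by auto
    have "le1 (fstU x) (fstU u)"
    proof (rule lub_least[OF alg_algebraic[OF a1 xx(2)] uu(2)])
      fix d' assume d': "d' \<in> {c. compact_in S1 le1 c \<and> le1 c (fstU x)}"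
      have d'S: "d' \<in> S1" using d' compact_in_S by fastforce
      have "compact_in (prodS S1 S2) (prodLe le1 le2) (UPair d' b2)"
        using compact_prod_iff[OF a1 a2 d'S b2S] d' b2c by simp
      moreover have "prodLe le1 le2 (UPair d' b2) x"
        using d' lub_least[OF b2 xx(3)] xx(1) prodLe_UPair by (metis empty_iff mem_Collect_eq)
      ultimately have "prodLe le1 le2 (UPair d' b2) u" using u(2) by blast
      then show "le1 d' (fstU u)" using uu(1) prodLe_UPair by metis
    qed
    moreover have "le2 (sndU x) (sndU u)"
    proof (rule lub_least[OF alg_algebraic[OF a2 xx(3)] uu(3)])
      fix d' assume d': "d' \<in> {c. compact_in S2 le2 c \<and> le2 c (sndU x)}"
      have d'S: "d' \<in> S2" using d' compact_in_S by fastforce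
      have "compact_in (prodS S1 S2) (prodLe le1 le2) (UPair b1 d')"
        using compact_prod_iff[OF a1 a2 b1S d'S] d' b1c by simp
      moreover have "prodLe le1 le2 (UPair b1 d') x"
        using d' lub_least[OF b1 xx(2)] xx(1) prodLe_UPair by (metis empty_iff mem_Collect_eq)
      ultimately have "prodLe le1 le2 (UPair b1 d') u" using u(2) by blast
      then show "le2 d' (sndU u)" using uu(1) prodLe_UPair by metis
    qed
    ultimately show "prodLe le1 le2 x u" using xx(1) uu(1) prodLe_UPair by metis
  qed
  have "{y. compact_in (prodS S1 S2) (prodLe le1 le2) y} \<subseteq>
      (\<lambda>(d, c). UPair d c) ` ({d. compact_in S1 le1 d} \<times> {c. compact_in S2 le2 c})"
  proof
    fix y assume y: "y \<in> {y. compact_in (prodS S1 S2) (prodLe le1 le2) y}"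
    have yS: "y \<in> prodS S1 S2" using y compact_in_S by fastforce
    have yy: "y = UPair (fstU y) (sndU y)" "fstU y \<in> S1" "sndU y \<in> S2" using prodS_E[OF yS] by auto
    have "compact_in S1 le1 (fstU y) \<and> compact_in S2 le2 (sndU y)"
      using compact_prod_iff[OF a1 a2 yy(2,3)] y yy(1) by simp
    then show "y \<in> (\<lambda>(d, c). UPair d c) ` ({d. compact_in S1 le1 d} \<times> {c. compact_in S2 le2 c})"
      using yy(1) by (intro image_eqI[of _ _ "(fstU y, sndU y)"]) auto
  qed
  moreover have "countable ((\<lambda>(d, c). UPair d c) ` ({d. compact_in S1 le1 d} \<times> {c. compact_in S2 le2 c}))"
    using alg_countable[OF a1] alg_countable[OF a2] by simp
  ultimately have "countable {y. compact_in (prodS S1 S2) (prodLe le1 le2) y}" by (rule countable_subset)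
  then show ?thesis unfolding alg_def using po cpl algx by blast
qed

lemma alg_lev0: "algL (lev 0)"
proof -
  have po: "po {UUnit} (\<lambda>x y. True)" unfolding po_def by simp
  have lub: "is_lub_in {UUnit} (\<lambda>x y. True) A UUnit" for A unfolding is_lub_in_def by simp
  have cpt: "compact_in {UUnit} (\<lambda>x y. True) UUnit" unfolding compact_in_def directed_in_def by auto
  have "{c. compact_in {UUnit} (\<lambda>x y. True) c} \<subseteq> {UUnit}" using compact_in_S by fastforce
  then have "countable {c. compact_in {UUnit} (\<lambda>x y. True) c}" using countable_subset by blast
  moreover have "is_lub_in {UUnit} (\<lambda>x y. True) {c. compact_in {UUnit} (\<lambda>x y. True) c \<and> True} x"
    if "x \<in> {UUnit}" for x using that lub by simp
  ultimately show ?thesis unfolding alg_def using po lub by auto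
qed

lemma alg_lev: assumes R: "Ralg TYPE('a::complete_lattice)" shows "algL (lev n :: 'a level)"
proof (induction n)
  case 0 then show ?case by (rule alg_lev0)
next
  case (Suc n)
  have "alg (D_of (lev n)) (leD_of (lev n :: 'a level))" by (rule D_alg[OF R Suc.IH])
  then show ?case unfolding lev_Suc using alg_prod Suc.IH by simp
qed


section \<open>Embedding-projection pairs\<close>

definition ep :: "'b set \<Rightarrow> ('b \<Rightarrow> 'b \<Rightarrow> bool) \<Rightarrow> 'b set \<Rightarrow> ('b \<Rightarrow> 'b \<Rightarrow> bool) \<Rightarrow> ('b \<Rightarrow> 'b) \<Rightarrow> ('b \<Rightarrow> 'b) \<Rightarrow> bool" where
  "ep S0 le0 S1 le1 e p \<longleftrightarrow> (\<forall>x\<in>S0. e x \<in> S1) \<and> (\<forall>y\<in>S1. p y \<in> S0)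
     \<and> (\<forall>x\<in>S0. \<forall>y\<in>S0. le0 x y \<longrightarrow> le1 (e x) (e y)) \<and> (\<forall>x\<in>S1. \<forall>y\<in>S1. le1 x y \<longrightarrow> le0 (p x) (p y))
     \<and> (\<forall>x\<in>S0. p (e x) = x) \<and> (\<forall>y\<in>S1. le1 (e (p y)) y)
     \<and> (\<forall>A s. A \<subseteq> S1 \<longrightarrow> is_lub_in S1 le1 A s \<longrightarrow> is_lub_in S0 le0 (p ` A) (p s))"

lemma ep_e_in: "ep S0 le0 S1 le1 e p \<Longrightarrow> x \<in> S0 \<Longrightarrow> e x \<in> S1" by (simp add: ep_def)
lemma ep_p_in: "ep S0 le0 S1 le1 e p \<Longrightarrow> y \<in> S1 \<Longrightarrow> p y \<in> S0" by (simp add: ep_def)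
lemma ep_e_mono: "ep S0 le0 S1 le1 e p \<Longrightarrow> x \<in> S0 \<Longrightarrow> y \<in> S0 \<Longrightarrow> le0 x y \<Longrightarrow> le1 (e x) (e y)"
  by (simp add: ep_def)
lemma ep_p_mono: "ep S0 le0 S1 le1 e p \<Longrightarrow> x \<in> S1 \<Longrightarrow> y \<in> S1 \<Longrightarrow> le1 x y \<Longrightarrow> le0 (p x) (p y)"
  by (simp add: ep_def)
lemma ep_pe: "ep S0 le0 S1 le1 e p \<Longrightarrow> x \<in> S0 \<Longrightarrow> p (e x) = x" by (simp add: ep_def)
lemma ep_ep: "ep S0 le0 S1 le1 e p \<Longrightarrow> y \<in> S1 \<Longrightarrow> le1 (e (p y)) y" by (simp add: ep_def)
lemma ep_lub: "ep S0 le0 S1 le1 e p \<Longrightarrow> A \<subseteq> S1 \<Longrightarrow> is_lub_in S1 le1 A s \<Longrightarrow> is_lub_in S0 le0 (p ` A) (p s)"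
  by (simp add: ep_def)

lemma ep_adj:
  assumes ep: "ep S0 le0 S1 le1 e p" and p1: "po S1 le1" and x: "x \<in> S0" and y: "y \<in> S1"
  shows "le1 (e x) y \<longleftrightarrow> le0 x (p y)"
proof
  assume "le1 (e x) y"
  then have "le0 (p (e x)) (p y)" using ep_p_mono[OF ep ep_e_in[OF ep x] y] by simp
  then show "le0 x (p y)" using ep_pe[OF ep x] by simp
next
  assume "le0 x (p y)"
  then have "le1 (e x) (e (p y))" using ep_e_mono[OF ep x ep_p_in[OF ep y]] by simp
  then show "le1 (e x) y" using po_trans[OF p1 ep_e_in[OF ep x] ep_e_in[OF ep ep_p_in[OF ep y]] y] ep_ep[OF ep y] by simp
qed

lemma ep_compact:
  assumes ep: "ep S0 le0 S1 le1 e p" and p0: "po S0 le0" and p1: "po S1 le1" and c: "compact_in S0 le0 c"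
  shows "compact_in S1 le1 (e c)"
proof (rule compactI)
  have cS: "c \<in> S0" by (rule compact_in_S[OF c])
  show ecS: "e c \<in> S1" by (rule ep_e_in[OF ep cS])
  fix T s assume T: "T \<subseteq> S1" "directed_in le1 T" "is_lub_in S1 le1 T s" "le1 (e c) s"
  have sS: "s \<in> S1" by (rule lub_in[OF T(3)])
  have pT: "p ` T \<subseteq> S0" using ep_p_in[OF ep] T(1) by blast
  have dir: "directed_in le0 (p ` T)" unfolding directed_in_def
  proof (intro conjI ballI)
    show "p ` T \<noteq> {}" using T(2) unfolding directed_in_def by simp
    fix x y assume "x \<in> p ` T" "y \<in> p ` T"
    then obtain tx ty where t: "tx \<in> T" "ty \<in> T" "x = p tx" "y = p ty" by blast
    then obtain z where z: "z \<in> T" "le1 tx z" "le1 ty z" using T(2) unfolding directed_in_def by meson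
    have "le0 x (p z)" "le0 y (p z)" using ep_p_mono[OF ep] t z T(1) by blast+
    then show "\<exists>z\<in>p ` T. le0 x z \<and> le0 y z" using z(1) by blast
  qed
  have "le0 c (p s)" using ep_adj[OF ep p1 cS sS] T(4) by simp
  then obtain x where x: "x \<in> p ` T" "le0 c x" using compactD[OF c pT dir ep_lub[OF ep T(1,3)]] by blast
  then obtain t where t: "t \<in> T" "x = p t" by blast
  have "le1 (e c) t" using ep_adj[OF ep p1 cS] t x T(1) by blast
  then show "\<exists>t\<in>T. le1 (e c) t" using t(1) by blast
qed

definition eFun :: "('a::complete_lattice) level \<Rightarrow> 'a level \<Rightarrow> ('a U \<Rightarrow> 'a U) \<Rightarrow> 'a U \<Rightarrow> 'a U" where
  "eFun L0 L1 pc f = UFun (\<lambda>i. appD L0 f (pc (enum L1 i)))"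
definition pFun :: "('a::complete_lattice) level \<Rightarrow> 'a level \<Rightarrow> ('a U \<Rightarrow> 'a U) \<Rightarrow> 'a U \<Rightarrow> 'a U" where
  "pFun L0 L1 ec g = UFun (\<lambda>i. appD L1 g (ec (enum L0 i)))"

lemma unF_eFun[simp]: "unF (eFun L0 L1 pc f) i = appD L0 f (pc (enum L1 i))" unfolding eFun_def by simp
lemma unF_pFun[simp]: "unF (pFun L0 L1 ec g) i = appD L1 g (ec (enum L0 i))" unfolding pFun_def by simp

lemma appD_eFun:
  assumes L0: "algL L0" and L1: "algL L1" and ep: "ep (fst L0) (snd L0) (fst L1) (snd L1) ec pc"
    and f: "f \<in> D_of L0" and x: "x \<in> fst L1"
  shows "appD L1 (eFun L0 L1 pc f) x = appD L0 f (pc x)"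
proof (rule antisym)
  have pcx: "pc x \<in> fst L0" by (rule ep_p_in[OF ep x])
  show "appD L1 (eFun L0 L1 pc f) x \<le> appD L0 f (pc x)"
    unfolding appD_def[of L1]
  proof (rule SUP_least)
    fix i assume i: "i \<in> {i. snd L1 (enum L1 i) x}"
    have "snd L0 (pc (enum L1 i)) (pc x)" using ep_p_mono[OF ep enum_in[OF L1] x] i by simp
    then show "unF (eFun L0 L1 pc f) i \<le> appD L0 f (pc x)"
      using appD_mono_x[OF L0 ep_p_in[OF ep enum_in[OF L1]] pcx] by simp
  qed
  have "appD L0 f (pc x) = (SUP j\<in>{j. snd L0 (enum L0 j) (pc x)}. unF f j)" by (simp add: appD_def)
  also have "\<dots> \<le> appD L1 (eFun L0 L1 pc f) x"
  proof (rule SUP_least)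
    fix j assume j: "j \<in> {j. snd L0 (enum L0 j) (pc x)}"
    define k where "k = enum L0 j"
    have kK: "k \<in> KC L0" unfolding k_def by (rule enum_KC[OF L0])
    have kS: "k \<in> fst L0" by (rule KC_sub[OF kK])
    have "ec k \<in> KC L1" using ep_compact[OF ep alg_po[OF L0] alg_po[OF L1]] kK unfolding KC_def by simp
    then obtain i where i: "enum L1 i = ec k" using enum_surj[OF L1] by blast
    have "snd L1 (ec k) x" using ep_adj[OF ep alg_po[OF L1] kS x] j unfolding k_def by simp
    then have iin: "i \<in> {i. snd L1 (enum L1 i) x}" using i by simp
    have "unF (eFun L0 L1 pc f) i = appD L0 f k" using i ep_pe[OF ep kS] by simp
    also have "\<dots> = unF f j" using appD_compact[OF L0 f] k_def by simp
    finally have "unF f j = unF (eFun L0 L1 pc f) i" by simp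
    also have "\<dots> \<le> (SUP i\<in>{i. snd L1 (enum L1 i) x}. unF (eFun L0 L1 pc f) i)"
      using iin by (rule SUP_upper)
    finally show "unF f j \<le> appD L1 (eFun L0 L1 pc f) x" by (simp add: appD_def)
  qed
  finally show "appD L0 f (pc x) \<le> appD L1 (eFun L0 L1 pc f) x" .
qed


lemma appD_pFun_le:
  assumes L0: "algL L0" and L1: "algL L1" and ep: "ep (fst L0) (snd L0) (fst L1) (snd L1) ec pc"
    and g: "g \<in> D_of L1" and y: "y \<in> fst L0"
  shows "appD L0 (pFun L0 L1 ec g) y \<le> appD L1 g (ec y)"
proof -
  have "appD L0 (pFun L0 L1 ec g) y = (SUP j\<in>{j. snd L0 (enum L0 j) y}. appD L1 g (ec (enum L0 j)))"
    by (simp add: appD_def)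
  also have "\<dots> \<le> appD L1 g (ec y)"
  proof (rule SUP_least)
    fix j assume "j \<in> {j. snd L0 (enum L0 j) y}"
    then have "snd L1 (ec (enum L0 j)) (ec y)" using ep_e_mono[OF ep enum_in[OF L0] y] by simp
    then show "appD L1 g (ec (enum L0 j)) \<le> appD L1 g (ec y)"
      using appD_mono_x[OF L1 ep_e_in[OF ep enum_in[OF L0]] ep_e_in[OF ep y]] by simp
  qed
  finally show ?thesis .
qed

lemma EP_fun:
  assumes L0: "algL L0" and L1: "algL L1" and ep: "ep (fst L0) (snd L0) (fst L1) (snd L1) ec pc"
  shows "ep (D_of L0) (leD_of L0) (D_of L1) (leD_of L1) (eFun L0 L1 pc) (pFun L0 L1 ec)"
proof -
  have e_in: "eFun L0 L1 pc f \<in> D_of L1" if f: "f \<in> D_of L0" for f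
    unfolding eFun_def UFun_in_D_of monoE_def
  proof (intro allI impI)
    fix i j assume "snd L1 (enum L1 i) (enum L1 j)"
    then have "snd L0 (pc (enum L1 i)) (pc (enum L1 j))" using ep_p_mono[OF ep enum_in[OF L1] enum_in[OF L1]] by simp
    then show "appD L0 f (pc (enum L1 i)) \<le> appD L0 f (pc (enum L1 j))"
      using appD_mono_x[OF L0 ep_p_in[OF ep enum_in[OF L1]] ep_p_in[OF ep enum_in[OF L1]]] by simp
  qed
  have p_in: "pFun L0 L1 ec g \<in> D_of L0" if g: "g \<in> D_of L1" for g
    unfolding pFun_def UFun_in_D_of monoE_def
  proof (intro allI impI)
    fix i j assume "snd L0 (enum L0 i) (enum L0 j)"
    then have "snd L1 (ec (enum L0 i)) (ec (enum L0 j))" using ep_e_mono[OF ep enum_in[OF L0] enum_in[OF L0]] by simp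
    then show "appD L1 g (ec (enum L0 i)) \<le> appD L1 g (ec (enum L0 j))"
      using appD_mono_x[OF L1 ep_e_in[OF ep enum_in[OF L0]] ep_e_in[OF ep enum_in[OF L0]]] by simp
  qed
  have e_mono: "leD_of L1 (eFun L0 L1 pc f) (eFun L0 L1 pc f')" if "leD_of L0 f f'" for f f'
    unfolding leD_of_def using appD_mono_f[OF that] by simp
  have p_mono: "leD_of L0 (pFun L0 L1 ec g) (pFun L0 L1 ec g')" if "leD_of L1 g g'" for g g'
    unfolding leD_of_def using appD_mono_f[OF that] by simp
  have pe: "pFun L0 L1 ec (eFun L0 L1 pc f) = f" if f: "f \<in> D_of L0" for f
  proof (rule D_of_eqI[OF p_in[OF e_in[OF f]] f])
    fix i
    have "unF (pFun L0 L1 ec (eFun L0 L1 pc f)) i = appD L1 (eFun L0 L1 pc f) (ec (enum L0 i))" by simp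
    also have "\<dots> = appD L0 f (pc (ec (enum L0 i)))"
      by (rule appD_eFun[OF L0 L1 ep f ep_e_in[OF ep enum_in[OF L0]]])
    also have "\<dots> = appD L0 f (enum L0 i)" using ep_pe[OF ep enum_in[OF L0]] by simp
    also have "\<dots> = unF f i" by (rule appD_compact[OF L0 f refl])
    finally show "unF (pFun L0 L1 ec (eFun L0 L1 pc f)) i = unF f i" .
  qed
  have epl: "leD_of L1 (eFun L0 L1 pc (pFun L0 L1 ec g)) g" if g: "g \<in> D_of L1" for g
    unfolding leD_of_def
  proof
    fix i
    have k: "enum L1 i \<in> fst L1" by (rule enum_in[OF L1])
    have "unF (eFun L0 L1 pc (pFun L0 L1 ec g)) i = appD L0 (pFun L0 L1 ec g) (pc (enum L1 i))" by simp
    also have "\<dots> \<le> appD L1 g (ec (pc (enum L1 i)))" by (rule appD_pFun_le[OF L0 L1 ep g ep_p_in[OF ep k]])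
    also have "\<dots> \<le> appD L1 g (enum L1 i)"
      by (rule appD_mono_x[OF L1 ep_e_in[OF ep ep_p_in[OF ep k]] k ep_ep[OF ep k]])
    also have "\<dots> = unF g i" by (rule appD_compact[OF L1 g refl])
    finally show "unF (eFun L0 L1 pc (pFun L0 L1 ec g)) i \<le> unF g i" .
  qed
  have plub: "is_lub_in (D_of L0) (leD_of L0) (pFun L0 L1 ec ` A) (pFun L0 L1 ec s)"
    if A: "A \<subseteq> D_of L1" and s: "is_lub_in (D_of L1) (leD_of L1) A s" for A s
  proof -
    have s': "s = supD A" by (rule lub_D_eq[OF A s])
    have sub: "pFun L0 L1 ec ` A \<subseteq> D_of L0" using p_in A by blast
    have "pFun L0 L1 ec s = supD (pFun L0 L1 ec ` A)"
    proof (rule D_of_eqI[OF p_in[OF lub_in[OF s]] supD_in[OF sub]])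
      fix i
      show "unF (pFun L0 L1 ec s) i = unF (supD (pFun L0 L1 ec ` A)) i"
        unfolding s' unF_pFun appD_supD unF_supD by (simp add: image_image)
    qed
    then show ?thesis using lub_D[OF sub] by simp
  qed
  show ?thesis unfolding ep_def
    using e_in p_in e_mono p_mono pe epl plub by blast
qed


definition pairF :: "('a U \<Rightarrow> 'a U) \<Rightarrow> ('a U \<Rightarrow> 'a U) \<Rightarrow> 'a U \<Rightarrow> 'a U" where
  "pairF f g x = (case x of UPair d c \<Rightarrow> UPair (f d) (g c) | _ \<Rightarrow> UUnit)"

lemma pairF_UPair[simp]: "pairF f g (UPair d c) = UPair (f d) (g c)" unfolding pairF_def by simp

lemma EP_prod:
  assumes e1: "ep S0 le0 S1 le1 ed pd" and e2: "ep T0 lt0 T1 lt1 ec pc"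
  shows "ep (prodS S0 T0) (prodLe le0 lt0) (prodS S1 T1) (prodLe le1 lt1) (pairF ed ec) (pairF pd pc)"
proof -
  have e_in: "pairF ed ec x \<in> prodS S1 T1" if x: "x \<in> prodS S0 T0" for x
    using prodS_E[OF x] ep_e_in[OF e1] ep_e_in[OF e2] pairF_UPair UPair_in_prodS by metis
  have p_in: "pairF pd pc x \<in> prodS S0 T0" if x: "x \<in> prodS S1 T1" for x
    using prodS_E[OF x] ep_p_in[OF e1] ep_p_in[OF e2] pairF_UPair UPair_in_prodS by metis
  have e_mono: "prodLe le1 lt1 (pairF ed ec x) (pairF ed ec y)"
    if x: "x \<in> prodS S0 T0" and y: "y \<in> prodS S0 T0" and xy: "prodLe le0 lt0 x y" for x y
  proof -
    have xx: "x = UPair (fstU x) (sndU x)" "fstU x \<in> S0" "sndU x \<in> T0" using prodS_E[OF x] by auto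
    have yy: "y = UPair (fstU y) (sndU y)" "fstU y \<in> S0" "sndU y \<in> T0" using prodS_E[OF y] by auto
    have "le0 (fstU x) (fstU y)" "lt0 (sndU x) (sndU y)" using xy xx(1) yy(1) prodLe_UPair by metis+
    then show ?thesis using ep_e_mono[OF e1 xx(2) yy(2)] ep_e_mono[OF e2 xx(3) yy(3)] xx(1) yy(1)
      pairF_UPair prodLe_UPair by metis
  qed
  have p_mono: "prodLe le0 lt0 (pairF pd pc x) (pairF pd pc y)"
    if x: "x \<in> prodS S1 T1" and y: "y \<in> prodS S1 T1" and xy: "prodLe le1 lt1 x y" for x y
  proof -
    have xx: "x = UPair (fstU x) (sndU x)" "fstU x \<in> S1" "sndU x \<in> T1" using prodS_E[OF x] by auto
    have yy: "y = UPair (fstU y) (sndU y)" "fstU y \<in> S1" "sndU y \<in> T1" using prodS_E[OF y] by auto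
    have "le1 (fstU x) (fstU y)" "lt1 (sndU x) (sndU y)" using xy xx(1) yy(1) prodLe_UPair by metis+
    then show ?thesis using ep_p_mono[OF e1 xx(2) yy(2)] ep_p_mono[OF e2 xx(3) yy(3)] xx(1) yy(1)
      pairF_UPair prodLe_UPair by metis
  qed
  have pe: "pairF pd pc (pairF ed ec x) = x" if x: "x \<in> prodS S0 T0" for x
  proof -
    have xx: "x = UPair (fstU x) (sndU x)" "fstU x \<in> S0" "sndU x \<in> T0" using prodS_E[OF x] by auto
    show ?thesis using ep_pe[OF e1 xx(2)] ep_pe[OF e2 xx(3)] xx(1) pairF_UPair by metis
  qed
  have epl: "prodLe le1 lt1 (pairF ed ec (pairF pd pc y)) y" if y: "y \<in> prodS S1 T1" for y
  proof -
    have yy: "y = UPair (fstU y) (sndU y)" "fstU y \<in> S1" "sndU y \<in> T1" using prodS_E[OF y] by auto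
    show ?thesis using ep_ep[OF e1 yy(2)] ep_ep[OF e2 yy(3)] yy(1) pairF_UPair prodLe_UPair by metis
  qed
  have plub: "is_lub_in (prodS S0 T0) (prodLe le0 lt0) (pairF pd pc ` A) (pairF pd pc s)"
    if A: "A \<subseteq> prodS S1 T1" and s: "is_lub_in (prodS S1 T1) (prodLe le1 lt1) A s" for A s
  proof -
    have sS: "s \<in> prodS S1 T1" by (rule lub_in[OF s])
    have ss: "s = UPair (fstU s) (sndU s)" using prodS_E[OF sS] by simp
    have l: "is_lub_in S1 le1 (fstU ` A) (fstU s)" "is_lub_in T1 lt1 (sndU ` A) (sndU s)"
      using lub_prod_D[OF A s] by auto
    have A1: "fstU ` A \<subseteq> S1" and A2: "sndU ` A \<subseteq> T1" using A prodS_E by blast+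
    have i1: "fstU ` (pairF pd pc ` A) = pd ` fstU ` A"
    proof -
      have "fstU (pairF pd pc x) = pd (fstU x)" if "x \<in> A" for x
        using prodS_E[of x S1 T1] that A pairF_UPair fstU.simps by (metis subsetD)
      then show ?thesis by (force simp: image_image)
    qed
    have i2: "sndU ` (pairF pd pc ` A) = pc ` sndU ` A"
    proof -
      have "sndU (pairF pd pc x) = pc (sndU x)" if "x \<in> A" for x
        using prodS_E[of x S1 T1] that A pairF_UPair sndU.simps by (metis subsetD)
      then show ?thesis by (force simp: image_image)
    qed
    have sub: "pairF pd pc ` A \<subseteq> prodS S0 T0" using p_in A by blast
    have "is_lub_in (prodS S0 T0) (prodLe le0 lt0) (pairF pd pc ` A) (UPair (pd (fstU s)) (pc (sndU s)))"
      by (rule lub_prod[OF sub]) (use ep_lub[OF e1 A1 l(1)] ep_lub[OF e2 A2 l(2)] i1 i2 in simp_all)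
    then show ?thesis using ss pairF_UPair by metis
  qed
  show ?thesis unfolding ep_def
    using e_in p_in e_mono p_mono pe epl plub by blast
qed

definition eCm :: "nat \<Rightarrow> ('a::complete_lattice) U \<Rightarrow> 'a U" where "eCm n = fst (emb n)"
definition eDm :: "nat \<Rightarrow> ('a::complete_lattice) U \<Rightarrow> 'a U" where "eDm n = fst (snd (snd (emb n)))"

lemma emb_0: "eCm 0 = (\<lambda>_. UPair (UFun (\<lambda>_. bot)) UUnit)" "pC 0 = (\<lambda>_. UUnit)"
  unfolding eCm_def pC_def by (simp_all add: Let_def)

lemma emb_fun: "eDm n = (eFun (lev n) (lev (Suc n)) (pC n) :: ('a::complete_lattice) U \<Rightarrow> 'a U)"
  "pD n = (pFun (lev n) (lev (Suc n)) (eCm n) :: ('a::complete_lattice) U \<Rightarrow> 'a U)"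
proof -
  have "eDm n = (eFun (lev n) (lev (Suc n)) (pC n) :: 'a U \<Rightarrow> 'a U) \<and> pD n = (pFun (lev n) (lev (Suc n)) (eCm n) :: 'a U \<Rightarrow> 'a U)"
  proof (cases n)
    case 0 then show ?thesis
      unfolding eDm_def pD_def pC_def eCm_def eFun_def pFun_def by (simp add: Let_def fun_eq_iff)
  next
    case (Suc m)
    obtain a b c d where abcd: "(emb m :: ('a U \<Rightarrow> 'a U) \<times> ('a U \<Rightarrow> 'a U) \<times> ('a U \<Rightarrow> 'a U) \<times> ('a U \<Rightarrow> 'a U)) = (a, b, c, d)" by (cases "emb m :: ('a U \<Rightarrow> 'a U) \<times> ('a U \<Rightarrow> 'a U) \<times> ('a U \<Rightarrow> 'a U) \<times> ('a U \<Rightarrow> 'a U)") auto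
    show ?thesis unfolding Suc eDm_def pD_def pC_def eCm_def eFun_def pFun_def
      by (simp add: abcd Let_def fun_eq_iff)
  qed
  then show "eDm n = (eFun (lev n) (lev (Suc n)) (pC n) :: 'a U \<Rightarrow> 'a U)"
    "pD n = (pFun (lev n) (lev (Suc n)) (eCm n) :: 'a U \<Rightarrow> 'a U)" by auto
qed

lemma emb_Suc: "eCm (Suc n) = (pairF (eDm n) (eCm n) :: ('a::complete_lattice) U \<Rightarrow> 'a U)"
  "pC (Suc n) = (pairF (pD n) (pC n) :: ('a::complete_lattice) U \<Rightarrow> 'a U)"
proof -
  obtain a b c d where abcd: "(emb n :: ('a U \<Rightarrow> 'a U) \<times> ('a U \<Rightarrow> 'a U) \<times> ('a U \<Rightarrow> 'a U) \<times> ('a U \<Rightarrow> 'a U)) = (a, b, c, d)" by (cases "emb n :: ('a U \<Rightarrow> 'a U) \<times> ('a U \<Rightarrow> 'a U) \<times> ('a U \<Rightarrow> 'a U) \<times> ('a U \<Rightarrow> 'a U)") auto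
  show "eCm (Suc n) = (pairF (eDm n) (eCm n) :: 'a U \<Rightarrow> 'a U)" "pC (Suc n) = (pairF (pD n) (pC n) :: 'a U \<Rightarrow> 'a U)"
    unfolding eDm_def pD_def pC_def eCm_def pairF_def by (simp_all add: abcd Let_def fun_eq_iff)
qed

lemma EP_base: "ep (fst (lev 0)) (snd (lev 0)) (fst (lev (Suc 0))) (snd (lev (Suc 0)))
   (eCm 0 :: ('a::complete_lattice) U \<Rightarrow> 'a U) (pC 0)"
proof -
  define D0 where "D0 = D_of (lev 0 :: 'a level)"
  have bD: "UFun (\<lambda>_. bot) \<in> D0" unfolding D0_def UFun_in_D_of monoE_def by simp
  have l1: "lev (Suc 0) = (prodS D0 {UUnit}, prodLe (leD_of (lev 0)) (\<lambda>x y. True))"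
    unfolding D0_def using lev_Suc[of 0] by simp
  have e_in: "eCm 0 x \<in> fst (lev (Suc 0) :: 'a level)" for x
    unfolding l1 emb_0 using bD by simp
  have epl: "snd (lev (Suc 0)) (eCm 0 (pC 0 y)) y" if "y \<in> fst (lev (Suc 0) :: 'a level)" for y
  proof -
    have y: "y \<in> prodS D0 {UUnit}" using that l1 by simp
    have yy: "y = UPair (fstU y) (sndU y)" using prodS_E[OF y] by blast
    have "leD_of (lev 0) (UFun (\<lambda>_. bot)) (fstU y)" unfolding leD_of_def by simp
    then have "prodLe (leD_of (lev 0)) (\<lambda>x y. True) (UPair (UFun (\<lambda>_. bot)) UUnit) (UPair (fstU y) (sndU y))"
      by simp
    then show ?thesis unfolding l1 emb_0 using yy by simp
  qed
  have refl1: "snd (lev (Suc 0)) (eCm 0 x) (eCm 0 y :: 'a U)" for x y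
    unfolding l1 emb_0 leD_of_def by simp
  have lub: "is_lub_in (fst (lev 0)) (snd (lev 0)) (pC 0 ` A) (pC 0 s)" for A :: "'a U set" and s :: "'a U"
    unfolding is_lub_in_def emb_0 by simp
  show ?thesis unfolding ep_def
    using e_in epl refl1 lub by (simp add: emb_0)
qed

lemma EP_lev:
  assumes R: "Ralg TYPE('a::complete_lattice)"
  shows "ep (Cset n) (leC_lev n) (Cset (Suc n)) (leC_lev (Suc n)) (eCm n :: 'a U \<Rightarrow> 'a U) (pC n)
       \<and> ep (Dset n) (leD_lev n) (Dset (Suc n)) (leD_lev (Suc n)) (eDm n :: 'a U \<Rightarrow> 'a U) (pD n)"
proof (induction n)
  case 0
  have c: "ep (Cset 0) (leC_lev 0) (Cset (Suc 0)) (leC_lev (Suc 0)) (eCm 0 :: 'a U \<Rightarrow> 'a U) (pC 0)"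
    using EP_base unfolding Cset_def leC_lev_def by simp
  have "ep (Dset 0) (leD_lev 0) (Dset (Suc 0)) (leD_lev (Suc 0)) (eDm 0 :: 'a U \<Rightarrow> 'a U) (pD 0)"
    unfolding Dset_def leD_lev_def emb_fun
    by (rule EP_fun[OF alg_lev[OF R] alg_lev[OF R]]) (use c in \<open>simp add: Cset_def leC_lev_def\<close>)
  then show ?case using c by simp
next
  case (Suc n)
  have c: "ep (Cset (Suc n)) (leC_lev (Suc n)) (Cset (Suc (Suc n))) (leC_lev (Suc (Suc n))) (eCm (Suc n) :: 'a U \<Rightarrow> 'a U) (pC (Suc n))"
    unfolding Cset_def leC_lev_def emb_Suc lev_Suc[of "Suc n"] lev_Suc[of n] fst_conv snd_conv
    by (rule EP_prod) (use Suc.IH in \<open>simp_all add: Cset_def leC_lev_def Dset_def leD_lev_def lev_Suc\<close>)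
  have "ep (Dset (Suc n)) (leD_lev (Suc n)) (Dset (Suc (Suc n))) (leD_lev (Suc (Suc n))) (eDm (Suc n) :: 'a U \<Rightarrow> 'a U) (pD (Suc n))"
    unfolding Dset_def leD_lev_def emb_fun
    by (rule EP_fun[OF alg_lev[OF R] alg_lev[OF R]]) (use c in \<open>simp add: Cset_def leC_lev_def\<close>)
  then show ?case using c by simp
qed


section \<open>Semantics of types in the levels\<close>

definition botC :: "nat \<Rightarrow> ('a::complete_lattice) U" where
  "botC n = lubL (Cset n) (leC_lev n) {}"
definition joinC :: "nat \<Rightarrow> ('a::complete_lattice) U \<Rightarrow> 'a U \<Rightarrow> 'a U" where
  "joinC n x y = lubL (Cset n) (leC_lev n) {x, y}"

fun semC :: "('a::complete_lattice) ty \<Rightarrow> nat \<Rightarrow> 'a U"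
  and valD :: "('a::complete_lattice) ty \<Rightarrow> nat \<Rightarrow> 'a U \<Rightarrow> 'a"
  and belowC :: "('a::complete_lattice) ty \<Rightarrow> nat \<Rightarrow> 'a U \<Rightarrow> bool"
  and belowD :: "('a::complete_lattice) ty \<Rightarrow> nat \<Rightarrow> 'a U \<Rightarrow> bool" where
  "semC Om n = botC n"
| "semC (Conj a b) n = joinC n (semC a n) (semC b n)"
| "semC (Times d k) n = (case n of 0 \<Rightarrow> UUnit
     | Suc m \<Rightarrow> UPair (UFun (\<lambda>i. valD d m (enum (lev m) i))) (semC k m))"
| "semC (Psi _) n = UUnit"
| "semC (Arr _ _) n = UUnit"
| "valD (Psi a) n c = a"
| "valD Om n c = bot"
| "valD (Conj a b) n c = sup (valD a n c) (valD b n c)"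
| "valD (Arr k r) n c = (if belowC k n c then valR r else bot)"
| "valD (Times _ _) n c = bot"
| "belowC Om n c = True"
| "belowC (Conj a b) n c = (belowC a n c \<and> belowC b n c)"
| "belowC (Times d k) n c = (case n of 0 \<Rightarrow> belowD d 0 (UFun (\<lambda>_. bot)) \<and> belowC k 0 UUnit
     | Suc m \<Rightarrow> belowD d m (fstU c) \<and> belowC k m (sndU c))"
| "belowC (Psi _) n c = False"
| "belowC (Arr _ _) n c = False"
| "belowD (Psi a) n f = (a \<le> appD (lev n) f (botC n))"
| "belowD Om n f = True"
| "belowD (Conj a b) n f = (belowD a n f \<and> belowD b n f)"
| "belowD (Arr k r) n f = (valR r \<le> appD (lev n) f (semC k n))"
| "belowD (Times _ _) n f = False"

definition semD :: "('a::complete_lattice) ty \<Rightarrow> nat \<Rightarrow> 'a U" where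
  "semD d n = UFun (\<lambda>i. valD d n (enum (lev n) i))"

lemma unF_semD[simp]: "unF (semD d n) i = valD d n (enum (lev n) i)" unfolding semD_def by simp

lemma semC_Times_Suc: "semC (Times d k) (Suc m) = UPair (semD d m) (semC k m)"
  unfolding semD_def by simp

fun depth :: "'a ty \<Rightarrow> nat" where
  "depth (Psi _) = 0"
| "depth Om = 0"
| "depth (Conj a b) = max (depth a) (depth b)"
| "depth (Arr k r) = max (depth k) (depth r)"
| "depth (Times d k) = Suc (max (depth d) (depth k))"



lemma algC: "Ralg TYPE('a::complete_lattice) \<Longrightarrow> alg (Cset n) (leC_lev n :: 'a U \<Rightarrow> 'a U \<Rightarrow> bool)"
  using alg_lev unfolding Cset_def leC_lev_def by blast
lemma algD: "Ralg TYPE('a::complete_lattice) \<Longrightarrow> alg (Dset n) (leD_lev n :: 'a U \<Rightarrow> 'a U \<Rightarrow> bool)"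
  unfolding Dset_def leD_lev_def by (rule D_alg[OF _ alg_lev])
lemma algLlev: "Ralg TYPE('a::complete_lattice) \<Longrightarrow> algL (lev n :: 'a level)"
  by (rule alg_lev)
lemma poC: "Ralg TYPE('a::complete_lattice) \<Longrightarrow> po (Cset n) (leC_lev n :: 'a U \<Rightarrow> 'a U \<Rightarrow> bool)"
  using alg_po[OF algC] .
lemma poD: "po (Dset n) (leD_lev n)"
  unfolding Dset_def leD_lev_def by (rule po_D)

lemma Cset_Suc: "Cset (Suc n) = prodS (Dset n) (Cset n)" "leC_lev (Suc n) = prodLe (leD_lev n) (leC_lev n)"
  unfolding Cset_def leC_lev_def Dset_def leD_lev_def lev_Suc by simp_all
lemma Cset_0: "Cset 0 = {UUnit}" "leC_lev 0 = (\<lambda>x y. True)"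
  unfolding Cset_def leC_lev_def by simp_all

lemma epC: "Ralg TYPE('a::complete_lattice) \<Longrightarrow>
  ep (Cset n) (leC_lev n) (Cset (Suc n)) (leC_lev (Suc n)) (eCm n :: 'a U \<Rightarrow> 'a U) (pC n)"
  using EP_lev by blast
lemma epD: "Ralg TYPE('a::complete_lattice) \<Longrightarrow>
  ep (Dset n) (leD_lev n) (Dset (Suc n)) (leD_lev (Suc n)) (eDm n :: 'a U \<Rightarrow> 'a U) (pD n)"
  using EP_lev by blast

lemma botC_lub: assumes R: "Ralg TYPE('a::complete_lattice)" shows "is_lub_in (Cset n) (leC_lev n) {} (botC n :: 'a U)"
  unfolding botC_def by (rule lubL_is_lub[OF algC[OF R]]) simp
lemma botC_in: "Ralg TYPE('a::complete_lattice) \<Longrightarrow> (botC n :: 'a U) \<in> Cset n"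
  using lub_in[OF botC_lub] .
lemma botC_le: "Ralg TYPE('a::complete_lattice) \<Longrightarrow> x \<in> Cset n \<Longrightarrow> leC_lev n (botC n) (x :: 'a U)"
  using lub_least[OF botC_lub] by blast
lemma botC_compact: "Ralg TYPE('a::complete_lattice) \<Longrightarrow> compact_in (Cset n) (leC_lev n) (botC n :: 'a U)"
  using compact_bot[OF botC_lub] .

lemma joinC_lub: assumes R: "Ralg TYPE('a::complete_lattice)" and xy: "x \<in> Cset n" "y \<in> Cset n"
  shows "is_lub_in (Cset n) (leC_lev n) {x, y} (joinC n x y :: 'a U)"
  unfolding joinC_def by (rule lubL_is_lub[OF algC[OF R]]) (simp add: xy)
lemma joinC_in: "Ralg TYPE('a::complete_lattice) \<Longrightarrow> x \<in> Cset n \<Longrightarrow> y \<in> Cset n \<Longrightarrow> (joinC n x y :: 'a U) \<in> Cset n"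
  using lub_in[OF joinC_lub] .
lemma joinC_le_iff: "Ralg TYPE('a::complete_lattice) \<Longrightarrow> x \<in> Cset n \<Longrightarrow> y \<in> Cset n \<Longrightarrow> z \<in> Cset n \<Longrightarrow>
   leC_lev n (joinC n x y :: 'a U) z \<longleftrightarrow> leC_lev n x z \<and> leC_lev n y z"
proof
  assume R: "Ralg TYPE('a)" and xyz: "x \<in> Cset n" "y \<in> Cset n" "z \<in> Cset n"
  {
    assume j: "leC_lev n (joinC n x y) z"
    have "leC_lev n x (joinC n x y)" "leC_lev n y (joinC n x y)" using lub_upper[OF joinC_lub[OF R xyz(1,2)]] by auto
    then show "leC_lev n x z \<and> leC_lev n y z"
      using po_trans[OF poC[OF R] _ joinC_in[OF R xyz(1,2)] xyz(3) _ j] xyz by blast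
  }
  {
    assume "leC_lev n x z \<and> leC_lev n y z"
    then show "leC_lev n (joinC n x y) z" using lub_least[OF joinC_lub[OF R xyz(1,2)] xyz(3)] by blast
  }
qed

lemma supD_empty: "supD {} = UFun (\<lambda>_. bot)" unfolding supD_def by simp

lemma botC_Suc: "Ralg TYPE('a::complete_lattice) \<Longrightarrow> (botC (Suc n) :: 'a U) = UPair (UFun (\<lambda>_. bot)) (botC n)"
proof -
  assume R: "Ralg TYPE('a)"
  have "is_lub_in (prodS (Dset n) (Cset n)) (prodLe (leD_lev n) (leC_lev n)) {} (UPair (supD {}) (botC n :: 'a U))"
    by (rule lub_prod) (use lub_D[of "{}" "lev n"] botC_lub[OF R, of n] in \<open>simp_all add: Dset_def leD_lev_def\<close>)
  then have "lubL (Cset (Suc n)) (leC_lev (Suc n)) {} = UPair (supD {}) (botC n :: 'a U)"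
    unfolding Cset_Suc by (rule lubL_eq[OF po_prod[OF poD poC[OF R]]])
  then show ?thesis unfolding botC_def[of "Suc n"] supD_empty by (simp add: botC_def)
qed

lemma joinC_Suc:
  assumes R: "Ralg TYPE('a::complete_lattice)" and a: "a \<in> Dset n" "a' \<in> Dset n" and b: "b \<in> Cset n" "b' \<in> Cset n"
  shows "joinC (Suc n) (UPair a b) (UPair a' b') = UPair (supD {a, a'}) (joinC n b b' :: 'a U)"
proof -
  have "is_lub_in (prodS (Dset n) (Cset n)) (prodLe (leD_lev n) (leC_lev n)) {UPair a b, UPair a' b'}
      (UPair (supD {a, a'}) (joinC n b b' :: 'a U))"
  proof (rule lub_prod)
    show "{UPair a b, UPair a' b'} \<subseteq> prodS (Dset n) (Cset n)" using a b by simp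
    have "fstU ` {UPair a b, UPair a' b'} = {a, a'}" by simp
    then show "is_lub_in (Dset n) (leD_lev n) (fstU ` {UPair a b, UPair a' b'}) (supD {a, a'})"
      using lub_D[of "{a, a'}" "lev n"] a unfolding Dset_def leD_lev_def by simp
    have "sndU ` {UPair a b, UPair a' b'} = {b, b'}" by simp
    then show "is_lub_in (Cset n) (leC_lev n) (sndU ` {UPair a b, UPair a' b'}) (joinC n b b')"
      using joinC_lub[OF R b] by simp
  qed
  then show ?thesis unfolding joinC_def[of "Suc n"] Cset_Suc by (rule lubL_eq[OF po_prod[OF poD poC[OF R]]])
qed

lemma pC_botC: "Ralg TYPE('a::complete_lattice) \<Longrightarrow> pC n (botC (Suc n) :: 'a U) = botC n"
proof -
  assume R: "Ralg TYPE('a)"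
  have "is_lub_in (Cset n) (leC_lev n) (pC n ` {}) (pC n (botC (Suc n) :: 'a U))"
    by (rule ep_lub[OF epC[OF R] _ botC_lub[OF R]]) simp
  then show ?thesis unfolding botC_def[of n] by (intro lubL_eq[OF poC[OF R], symmetric]) simp
qed

lemma pC_joinC: "Ralg TYPE('a::complete_lattice) \<Longrightarrow> x \<in> Cset (Suc n) \<Longrightarrow> y \<in> Cset (Suc n) \<Longrightarrow>
   pC n (joinC (Suc n) x y :: 'a U) = joinC n (pC n x) (pC n y)"
proof -
  assume R: "Ralg TYPE('a)" and xy: "x \<in> Cset (Suc n)" "y \<in> Cset (Suc n)"
  have "is_lub_in (Cset n) (leC_lev n) (pC n ` {x, y}) (pC n (joinC (Suc n) x y :: 'a U))"
    by (rule ep_lub[OF epC[OF R] _ joinC_lub[OF R xy]]) (use xy in simp)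
  then show ?thesis unfolding joinC_def[of n] by (intro lubL_eq[OF poC[OF R], symmetric]) simp
qed

lemma valD_R: "isR r \<Longrightarrow> valD r n c = valR r"
  by (induction r) auto

lemma isR_isD: "isR r \<Longrightarrow> isD r"
  by (induction r) auto

lemma enumC_in: "Ralg TYPE('a::complete_lattice) \<Longrightarrow> enum (lev n) i \<in> (Cset n :: 'a U set)"
  unfolding Cset_def using enum_in[OF alg_lev] .

lemma enumC_KC: "Ralg TYPE('a::complete_lattice) \<Longrightarrow> compact_in (Cset n) (leC_lev n) (enum (lev n) i :: 'a U)"
  unfolding Cset_def leC_lev_def using enum_KC[OF alg_lev] unfolding KC_def by blast

lemma enumC_surj: "Ralg TYPE('a::complete_lattice) \<Longrightarrow> compact_in (Cset n) (leC_lev n) (c :: 'a U) \<Longrightarrow> \<exists>i. enum (lev n) i = c"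
  unfolding Cset_def leC_lev_def using enum_surj[OF alg_lev] unfolding KC_def by blast

lemma M_lemma:
  assumes R: "Ralg TYPE('a::complete_lattice)"
  shows "(isC (t::'a ty) \<longrightarrow> (\<forall>n. semC t n \<in> Cset n \<and>
            (\<forall>c\<in>Cset n. \<forall>c'\<in>Cset n. leC_lev n c c' \<longrightarrow> belowC t n c \<longrightarrow> belowC t n c')))
       \<and> (isD t \<longrightarrow> (\<forall>n. (\<forall>c\<in>Cset n. \<forall>c'\<in>Cset n. leC_lev n c c' \<longrightarrow> valD t n c \<le> valD t n c')
            \<and> (\<forall>f\<in>Dset n. \<forall>f'\<in>Dset n. leD_lev n f f' \<longrightarrow> belowD t n f \<longrightarrow> belowD t n f')
            \<and> (\<forall>c. compactR (valD t n c))))"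
proof (induction t)
  case (Psi a)
  have "belowD (Psi a) n f'" if "f \<in> Dset n" "f' \<in> Dset n" "leD_lev n f f'" "belowD (Psi a) n f" for n f f'
    using that appD_mono_f[of "lev n" f f' "botC n"] unfolding leD_lev_def by (auto intro: order_trans)
  then show ?case by auto
next
  case Om
  then show ?case using botC_in[OF R] compactR_bot by auto
next
  case (Conj a b)
  show ?case
  proof (intro conjI impI allI)
    fix n assume "isC (Conj a b)"
    then have ab: "isC a" "isC b" by auto
    show "semC (Conj a b) n \<in> Cset n" using joinC_in[OF R] Conj.IH ab by simp
    show "\<forall>c\<in>Cset n. \<forall>c'\<in>Cset n. leC_lev n c c' \<longrightarrow> belowC (Conj a b) n c \<longrightarrow> belowC (Conj a b) n c'"
      using Conj.IH ab by simp
  next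
    fix n assume "isD (Conj a b)"
    then have ab: "isD a" "isD b" by auto
    show "\<forall>c\<in>Cset n. \<forall>c'\<in>Cset n. leC_lev n c c' \<longrightarrow> valD (Conj a b) n c \<le> valD (Conj a b) n c'"
    proof (intro ballI impI)
      fix c c' :: "'a U" assume cc: "c \<in> Cset n" "c' \<in> Cset n" "leC_lev n c c'"
      have "valD a n c \<le> valD a n c'" "valD b n c \<le> valD b n c'" using Conj.IH ab cc by blast+
      then show "valD (Conj a b) n c \<le> valD (Conj a b) n c'" unfolding valD.simps by (rule sup_mono)
    qed
  next
    fix n assume "isD (Conj a b)"
    then have ab: "isD a" "isD b" by auto
    show "\<forall>f\<in>Dset n. \<forall>f'\<in>Dset n. leD_lev n f f' \<longrightarrow> belowD (Conj a b) n f \<longrightarrow> belowD (Conj a b) n f'"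
      using Conj.IH ab by simp
  next
    fix n and c :: "'a U" assume "isD (Conj a b)"
    then have ab: "isD a" "isD b" by auto
    have "compactR (valD a n c)" "compactR (valD b n c)" using Conj.IH ab by blast+
    then show "compactR (valD (Conj a b) n c)" using compactR_sup by simp
  qed
next
  case (Arr k r)
  show ?case
  proof (intro conjI impI allI)
    fix n assume "isC (Arr k r)" then show "semC (Arr k r) n \<in> Cset n" by simp
  next
    fix n assume "isC (Arr k r)"
    then show "\<forall>c\<in>Cset n. \<forall>c'\<in>Cset n. leC_lev n c c' \<longrightarrow> belowC (Arr k r) n c \<longrightarrow> belowC (Arr k r) n c'" by simp
  next
    fix n assume "isD (Arr k r)"
    then have kr: "isC k" "isR r" by auto
    show "\<forall>c\<in>Cset n. \<forall>c'\<in>Cset n. leC_lev n c c' \<longrightarrow> valD (Arr k r) n c \<le> valD (Arr k r) n c'"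
      using Arr.IH kr by auto
  next
    fix n assume "isD (Arr k r)"
    show "\<forall>f\<in>Dset n. \<forall>f'\<in>Dset n. leD_lev n f f' \<longrightarrow> belowD (Arr k r) n f \<longrightarrow> belowD (Arr k r) n f'"
      using appD_mono_f[of "lev n" _ _ "semC k n"] unfolding leD_lev_def by (auto intro: order_trans)
  next
    fix n and c :: "'a U" assume "isD (Arr k r)"
    then have kr: "isC k" "isR r" by auto
    show "compactR (valD (Arr k r) n c)" using valR_compact[OF kr(2)] compactR_bot
      by (cases "belowC k n c") simp_all
  qed
next
  case (Times d k)
  show ?case
  proof (intro conjI impI allI)
    fix n assume "isC (Times d k)"
    then have dk: "isD d" "isC k" by auto
    show "semC (Times d k) n \<in> Cset n"
    proof (cases n)
      case 0 then show ?thesis by (simp add: Cset_0)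
    next
      case (Suc m)
      have "semD d m \<in> Dset m" unfolding semD_def Dset_def UFun_in_D_of monoE_def
        using Times.IH(1) dk(1) enumC_in[OF R] unfolding Cset_def leC_lev_def by blast
      moreover have "semC k m \<in> Cset m" using Times.IH(2) dk(2) by blast
      ultimately show ?thesis unfolding Suc semC_Times_Suc Cset_Suc by simp
    qed
  next
    fix n assume "isC (Times d k)"
    then have dk: "isD d" "isC k" by auto
    show "\<forall>c\<in>Cset n. \<forall>c'\<in>Cset n. leC_lev n c c' \<longrightarrow> belowC (Times d k) n c \<longrightarrow> belowC (Times d k) n c'"
    proof (cases n)
      case 0 then show ?thesis by simp
    next
      case (Suc m)
      show ?thesis
      proof (intro ballI impI)
        fix c c' :: "'a U" assume cc: "c \<in> Cset n" "c' \<in> Cset n" "leC_lev n c c'" "belowC (Times d k) n c"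
        have c1: "c \<in> prodS (Dset m) (Cset m)" "c' \<in> prodS (Dset m) (Cset m)" using cc Suc Cset_Suc by auto
        have "prodLe (leD_lev m) (leC_lev m) c c'" using cc(3) Suc by (simp add: Cset_Suc)
        then have le: "leD_lev m (fstU c) (fstU c')" "leC_lev m (sndU c) (sndU c')"
          using prodLe_E[OF c1] by auto
        have mem: "fstU c \<in> Dset m" "fstU c' \<in> Dset m" "sndU c \<in> Cset m" "sndU c' \<in> Cset m"
          using prodS_E c1 by blast+
        have "belowD d m (fstU c)" "belowC k m (sndU c)" using cc(4) Suc by auto
        then have "belowD d m (fstU c')" "belowC k m (sndU c')"
          using Times.IH dk mem le by blast+
        then show "belowC (Times d k) n c'" using Suc by simp
      qed
    qed
  qed auto
qed

lemma semC_in: "Ralg TYPE('a::complete_lattice) \<Longrightarrow> isC (t::'a ty) \<Longrightarrow> semC t n \<in> Cset n"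
  using M_lemma by blast
lemma belowC_mono: "Ralg TYPE('a::complete_lattice) \<Longrightarrow> isC (t::'a ty) \<Longrightarrow> c \<in> Cset n \<Longrightarrow> c' \<in> Cset n \<Longrightarrow>
   leC_lev n c c' \<Longrightarrow> belowC t n c \<Longrightarrow> belowC t n c'"
  using M_lemma by blast
lemma valD_mono: "Ralg TYPE('a::complete_lattice) \<Longrightarrow> isD (t::'a ty) \<Longrightarrow> c \<in> Cset n \<Longrightarrow> c' \<in> Cset n \<Longrightarrow>
   leC_lev n c c' \<Longrightarrow> valD t n c \<le> valD t n c'"
  using M_lemma by blast
lemma belowD_mono: "Ralg TYPE('a::complete_lattice) \<Longrightarrow> isD (t::'a ty) \<Longrightarrow> f \<in> Dset n \<Longrightarrow> f' \<in> Dset n \<Longrightarrow>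
   leD_lev n f f' \<Longrightarrow> belowD t n f \<Longrightarrow> belowD t n f'"
  using M_lemma by blast
lemma valD_compact: "Ralg TYPE('a::complete_lattice) \<Longrightarrow> isD (t::'a ty) \<Longrightarrow> compactR (valD t n c)"
  using M_lemma by blast
lemma semD_in: "Ralg TYPE('a::complete_lattice) \<Longrightarrow> isD (t::'a ty) \<Longrightarrow> semD t n \<in> Dset n"
  unfolding semD_def Dset_def UFun_in_D_of monoE_def
  using valD_mono enumC_in unfolding Cset_def leC_lev_def by blast

lemma appD_eD:
  assumes R: "Ralg TYPE('a::complete_lattice)" and f: "f \<in> Dset n" and x: "x \<in> Cset (Suc n)"
  shows "appD (lev (Suc n)) (eDm n f) (x :: 'a U) = appD (lev n) f (pC n x)"
  unfolding emb_fun
  by (rule appD_eFun[OF alg_lev[OF R] alg_lev[OF R]])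
     (use epC[OF R, of n] f x in \<open>simp_all add: Cset_def leC_lev_def Dset_def\<close>)

lemma eCm_compact:
  assumes R: "Ralg TYPE('a::complete_lattice)" and c: "compact_in (Cset n) (leC_lev n) (c :: 'a U)"
  shows "compact_in (Cset (Suc n)) (leC_lev (Suc n)) (eCm n c)"
  by (rule ep_compact[OF epC[OF R] poC[OF R] poC[OF R] c])

lemma pD_semD:
  assumes R: "Ralg TYPE('a::complete_lattice)" and t: "isD (t :: 'a ty)"
    and v: "\<forall>c\<in>Cset n. valD t (Suc n) (eCm n c) = valD t n c"
  shows "pD n (semD t (Suc n)) = semD t n"
proof -
  have "pD n (semD t (Suc n)) \<in> D_of (lev n)"
    using ep_p_in[OF epD[OF R] semD_in[OF R t]] unfolding Dset_def .
  moreover have "semD t n \<in> D_of (lev n)" using semD_in[OF R t] unfolding Dset_def .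
  ultimately show ?thesis
  proof (rule D_of_eqI)
    fix i
    have ci: "(enum (lev n) i :: 'a U) \<in> Cset n" by (rule enumC_in[OF R])
    have "compact_in (Cset (Suc n)) (leC_lev (Suc n)) (eCm n (enum (lev n) i :: 'a U))"
      by (rule eCm_compact[OF R enumC_KC[OF R]])
    then obtain j where j: "enum (lev (Suc n)) j = eCm n (enum (lev n) i :: 'a U)" using enumC_surj[OF R] by blast
    have "unF (pD n (semD t (Suc n))) i = appD (lev (Suc n)) (semD t (Suc n)) (eCm n (enum (lev n) i))"
      unfolding emb_fun by simp
    also have "\<dots> = unF (semD t (Suc n)) j"
      by (rule appD_compact[OF alg_lev[OF R] _ j]) (use semD_in[OF R t] in \<open>simp add: Dset_def\<close>)
    also have "\<dots> = valD t n (enum (lev n) i)" using j v ci by simp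
    finally show "unF (pD n (semD t (Suc n))) i = unF (semD t n) i" by simp
  qed
qed

lemma S34_lemma:
  assumes R: "Ralg TYPE('a::complete_lattice)"
  shows "(isC (t::'a ty) \<longrightarrow> (\<forall>n. pC n (semC t (Suc n)) = semC t n \<and>
            (\<forall>c\<in>Cset n. belowC t (Suc n) (eCm n c) = belowC t n c)))
       \<and> (isD t \<longrightarrow> (\<forall>n. (\<forall>c\<in>Cset n. valD t (Suc n) (eCm n c) = valD t n c)
            \<and> pD n (semD t (Suc n)) = semD t n
            \<and> (\<forall>f\<in>Dset n. belowD t (Suc n) (eDm n f) = belowD t n f)))"
proof (induction t)
  case (Psi a)
  show ?case
  proof (intro conjI impI allI)
    fix n assume t: "isD (Psi a :: 'a ty)"
    show v: "\<forall>c\<in>Cset n. valD (Psi a) (Suc n) (eCm n c) = valD (Psi a) n c" by simp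
    show "pD n (semD (Psi a) (Suc n)) = semD (Psi a) n" by (rule pD_semD[OF R t v])
    show "\<forall>f\<in>Dset n. belowD (Psi a) (Suc n) (eDm n f) = belowD (Psi a) n f"
      using appD_eD[OF R _ botC_in[OF R]] pC_botC[OF R] by simp
  qed simp_all
next
  case Om
  show ?case
  proof (intro conjI impI allI)
    fix n
    show "pC n (semC (Om :: 'a ty) (Suc n)) = semC Om n" by (simp add: pC_botC[OF R])
    show "\<forall>c\<in>Cset n. belowC (Om :: 'a ty) (Suc n) (eCm n c) = belowC Om n c" by simp
    show v: "\<forall>c\<in>Cset n. valD (Om :: 'a ty) (Suc n) (eCm n c) = valD Om n c" by simp
    show "pD n (semD (Om :: 'a ty) (Suc n)) = semD Om n" by (rule pD_semD[OF R _ v]) simp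
    show "\<forall>f\<in>Dset n. belowD (Om :: 'a ty) (Suc n) (eDm n f) = belowD Om n f" by simp
  qed
next
  case (Conj a b)
  show ?case
  proof (intro conjI impI allI)
    fix n assume "isC (Conj a b)"
    then have ab: "isC a" "isC b" by auto
    have "pC n (joinC (Suc n) (semC a (Suc n)) (semC b (Suc n))) = joinC n (pC n (semC a (Suc n))) (pC n (semC b (Suc n)))"
      by (rule pC_joinC[OF R semC_in[OF R ab(1)] semC_in[OF R ab(2)]])
    then show "pC n (semC (Conj a b) (Suc n)) = semC (Conj a b) n" using Conj.IH ab by simp
  next
    fix n assume "isC (Conj a b)"
    then have ab: "isC a" "isC b" by auto
    show "\<forall>c\<in>Cset n. belowC (Conj a b) (Suc n) (eCm n c) = belowC (Conj a b) n c" using Conj.IH ab by simp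
  next
    fix n assume "isD (Conj a b)"
    then have ab: "isD a" "isD b" by auto
    show "\<forall>c\<in>Cset n. valD (Conj a b) (Suc n) (eCm n c) = valD (Conj a b) n c" using Conj.IH ab by simp
  next
    fix n assume t: "isD (Conj a b)"
    then have ab: "isD a" "isD b" by auto
    have v: "\<forall>c\<in>Cset n. valD (Conj a b) (Suc n) (eCm n c) = valD (Conj a b) n c" using Conj.IH ab by simp
    show "pD n (semD (Conj a b) (Suc n)) = semD (Conj a b) n" by (rule pD_semD[OF R t v])
  next
    fix n assume "isD (Conj a b)"
    then have ab: "isD a" "isD b" by auto
    show "\<forall>f\<in>Dset n. belowD (Conj a b) (Suc n) (eDm n f) = belowD (Conj a b) n f" using Conj.IH ab by simp
  qed
next
  case (Arr k r)
  show ?case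
  proof (intro conjI impI allI)
    fix n assume "isD (Arr k r)"
    then have kr: "isC k" "isR r" by auto
    show "\<forall>c\<in>Cset n. valD (Arr k r) (Suc n) (eCm n c) = valD (Arr k r) n c" using Arr.IH kr by simp
  next
    fix n assume t: "isD (Arr k r)"
    then have kr: "isC k" "isR r" by auto
    have v: "\<forall>c\<in>Cset n. valD (Arr k r) (Suc n) (eCm n c) = valD (Arr k r) n c" using Arr.IH kr by simp
    show "pD n (semD (Arr k r) (Suc n)) = semD (Arr k r) n" by (rule pD_semD[OF R t v])
  next
    fix n assume "isD (Arr k r)"
    then have kr: "isC k" "isR r" by auto
    have "pC n (semC k (Suc n)) = semC k n" using Arr.IH kr by simp
    then show "\<forall>f\<in>Dset n. belowD (Arr k r) (Suc n) (eDm n f) = belowD (Arr k r) n f"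
      using appD_eD[OF R _ semC_in[OF R kr(1)]] by simp
  qed simp_all
next
  case (Times d k)
  show ?case
  proof (intro conjI impI allI)
    fix n assume "isC (Times d k)"
    then have dk: "isD d" "isC k" by auto
    show "pC n (semC (Times d k) (Suc n)) = semC (Times d k) n"
    proof (cases n)
      case 0 then show ?thesis by (simp add: emb_0)
    next
      case (Suc m)
      have "pD m (semD d (Suc m)) = semD d m" "pC m (semC k (Suc m)) = semC k m" using Times.IH dk by auto
      then show ?thesis unfolding Suc semC_Times_Suc emb_Suc by simp
    qed
  next
    fix n assume "isC (Times d k)"
    then have dk: "isD d" "isC k" by auto
    show "\<forall>c\<in>Cset n. belowC (Times d k) (Suc n) (eCm n c) = belowC (Times d k) n c"
    proof (cases n)
      case 0 then show ?thesis by (simp add: emb_0)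
    next
      case (Suc m)
      show ?thesis
      proof
        fix c :: "'a U" assume c: "c \<in> Cset n"
        then have c1: "c \<in> prodS (Dset m) (Cset m)" using Suc by (simp add: Cset_Suc)
        have cc: "c = UPair (fstU c) (sndU c)" "fstU c \<in> Dset m" "sndU c \<in> Cset m" using prodS_E[OF c1] by auto
        have "eCm (Suc m) c = UPair (eDm m (fstU c)) (eCm m (sndU c))" using cc(1) unfolding emb_Suc
          by (metis pairF_UPair)
        moreover have "belowD d (Suc m) (eDm m (fstU c)) = belowD d m (fstU c)" using Times.IH dk cc by blast
        moreover have "belowC k (Suc m) (eCm m (sndU c)) = belowC k m (sndU c)" using Times.IH dk cc by blast
        ultimately show "belowC (Times d k) (Suc n) (eCm n c) = belowC (Times d k) n c" using Suc by simp
      qed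
    qed
  qed simp_all
qed

lemma pC_semC: "Ralg TYPE('a::complete_lattice) \<Longrightarrow> isC (t::'a ty) \<Longrightarrow> pC n (semC t (Suc n)) = semC t n"
  using S34_lemma by blast
lemma belowC_eCm: "Ralg TYPE('a::complete_lattice) \<Longrightarrow> isC (t::'a ty) \<Longrightarrow> c \<in> Cset n \<Longrightarrow>
    belowC t (Suc n) (eCm n c) = belowC t n c"
  using S34_lemma by blast
lemma pD_semD': "Ralg TYPE('a::complete_lattice) \<Longrightarrow> isD (t::'a ty) \<Longrightarrow> pD n (semD t (Suc n)) = semD t n"
  using S34_lemma by blast
lemma belowD_eDm: "Ralg TYPE('a::complete_lattice) \<Longrightarrow> isD (t::'a ty) \<Longrightarrow> f \<in> Dset n \<Longrightarrow>
    belowD t (Suc n) (eDm n f) = belowD t n f"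
  using S34_lemma by blast

lemma enumC_botC: "Ralg TYPE('a::complete_lattice) \<Longrightarrow> \<exists>i. enum (lev n) i = (botC n :: 'a U)"
  using enumC_surj botC_compact by blast

lemma semD_Psi_step: assumes R: "Ralg TYPE('a::complete_lattice)" shows "semD (Psi a) n = stepF (lev n) (botC n) (a::'a)"
proof -
  have "snd (lev n) (botC n) (enum (lev n) i :: 'a U)" for i
    using botC_le[OF R enumC_in[OF R]] by (simp add: leC_lev_def)
  then show ?thesis unfolding semD_def stepF_def by simp
qed

lemma semD_Om: "semD Om n = supD {}"
  unfolding semD_def supD_def by simp

lemma semD_Conj: "semD (Conj a b) n = supD {semD a n, semD b n}"
  unfolding semD_def supD_def by simp

lemma lub_Dset: "A \<subseteq> Dset n \<Longrightarrow> is_lub_in (Dset n) (leD_lev n) A (supD A)"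
  unfolding Dset_def leD_lev_def by (rule lub_D)

lemma compactD_step:
  assumes R: "Ralg TYPE('a::complete_lattice)" and k: "compact_in (Cset n) (leC_lev n) (k :: 'a U)" and a: "compactR a"
  shows "compact_in (Dset n) (leD_lev n) (stepF (lev n) k a)"
  unfolding Dset_def leD_lev_def
  by (rule stepF_compact[OF alg_lev[OF R] _ a]) (use k in \<open>simp add: KC_def Cset_def leC_lev_def\<close>)

lemma leD_step_iff:
  assumes R: "Ralg TYPE('a::complete_lattice)" and k: "compact_in (Cset n) (leC_lev n) (k :: 'a U)" and f: "f \<in> Dset n"
  shows "leD_lev n (stepF (lev n) k a) f \<longleftrightarrow> a \<le> appD (lev n) f k"
proof -
  obtain i0 where i0: "enum (lev n) i0 = k" using enumC_surj[OF R k] by blast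
  have fD: "f \<in> D_of (lev n)" using f by (simp add: Dset_def)
  show ?thesis using stepF_le[OF alg_lev[OF R] fD i0] appD_compact[OF alg_lev[OF R] fD i0]
    by (simp add: leD_lev_def)
qed

lemma S26_lemma:
  assumes R: "Ralg TYPE('a::complete_lattice)"
  shows "(isC (t::'a ty) \<longrightarrow> (\<forall>n. depth t \<le> n \<longrightarrow> compact_in (Cset n) (leC_lev n) (semC t n) \<and>
            (\<forall>c\<in>Cset n. belowC t n c = leC_lev n (semC t n) c)))
       \<and> (isD t \<longrightarrow> (\<forall>n. depth t \<le> n \<longrightarrow> compact_in (Dset n) (leD_lev n) (semD t n) \<and>
            (\<forall>f\<in>Dset n. belowD t n f = leD_lev n (semD t n) f)))"
proof (induction t)
  case (Psi a)
  show ?case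
  proof (intro conjI impI allI)
    fix n assume t: "isD (Psi a :: 'a ty)" "depth (Psi a) \<le> n"
    then have a: "compactR a" by simp
    show "compact_in (Dset n) (leD_lev n) (semD (Psi a) n)"
      unfolding semD_Psi_step[OF R] by (rule compactD_step[OF R botC_compact[OF R] a])
    show "\<forall>f\<in>Dset n. belowD (Psi a) n f = leD_lev n (semD (Psi a) n) f"
      unfolding semD_Psi_step[OF R] using leD_step_iff[OF R botC_compact[OF R]] by simp
  qed simp_all
next
  case Om
  show ?case
  proof (intro conjI impI allI)
    fix n
    show "compact_in (Cset n) (leC_lev n) (semC (Om :: 'a ty) n)" using botC_compact[OF R] by simp
    show "\<forall>c\<in>Cset n. belowC (Om :: 'a ty) n c = leC_lev n (semC Om n) c" using botC_le[OF R] by simp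
    show "compact_in (Dset n) (leD_lev n) (semD (Om :: 'a ty) n)"
      unfolding semD_Om by (rule compact_bot[OF lub_Dset]) simp
    show "\<forall>f\<in>Dset n. belowD (Om :: 'a ty) n f = leD_lev n (semD Om n) f"
      by (simp add: leD_lev_def leD_of_def)
  qed
next
  case (Conj a b)
  show ?case
  proof (intro conjI impI allI)
    fix n assume t: "isC (Conj a b)" "depth (Conj a b) \<le> n"
    then have ab: "isC a" "isC b" "depth a \<le> n" "depth b \<le> n" by auto
    have IH: "compact_in (Cset n) (leC_lev n) (semC a n)" "compact_in (Cset n) (leC_lev n) (semC b n)"
      "\<forall>c\<in>Cset n. belowC a n c = leC_lev n (semC a n) c" "\<forall>c\<in>Cset n. belowC b n c = leC_lev n (semC b n) c"
      using Conj.IH ab by blast+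
    show "compact_in (Cset n) (leC_lev n) (semC (Conj a b) n)"
      using compact_finite_lub[OF poC[OF R] _ _ joinC_lub[OF R semC_in[OF R ab(1)] semC_in[OF R ab(2)]]] IH(1,2)
      by simp
    show "\<forall>c\<in>Cset n. belowC (Conj a b) n c = leC_lev n (semC (Conj a b) n) c"
      using IH(3,4) joinC_le_iff[OF R semC_in[OF R ab(1)] semC_in[OF R ab(2)]] by simp
  next
    fix n assume t: "isD (Conj a b)" "depth (Conj a b) \<le> n"
    then have ab: "isD a" "isD b" "depth a \<le> n" "depth b \<le> n" by auto
    have IH: "compact_in (Dset n) (leD_lev n) (semD a n)" "compact_in (Dset n) (leD_lev n) (semD b n)"
      "\<forall>f\<in>Dset n. belowD a n f = leD_lev n (semD a n) f" "\<forall>f\<in>Dset n. belowD b n f = leD_lev n (semD b n) f"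
      using Conj.IH ab by blast+
    have sub: "{semD a n, semD b n} \<subseteq> Dset n" using semD_in[OF R] ab by simp
    show "compact_in (Dset n) (leD_lev n) (semD (Conj a b) n)"
      unfolding semD_Conj using compact_finite_lub[OF poD _ _ lub_Dset[OF sub]] IH(1,2) by simp
    show "\<forall>f\<in>Dset n. belowD (Conj a b) n f = leD_lev n (semD (Conj a b) n) f"
      using IH(3,4) by (auto simp: leD_lev_def leD_of_def)
  qed
next
  case (Arr k r)
  show ?case
  proof (intro conjI impI allI)
    fix n assume t: "isD (Arr k r)" "depth (Arr k r) \<le> n"
    then have kr: "isC k" "isR r" "depth k \<le> n" by auto
    have IH: "compact_in (Cset n) (leC_lev n) (semC k n)" "\<forall>c\<in>Cset n. belowC k n c = leC_lev n (semC k n) c"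
      using Arr.IH kr by blast+
    have st: "semD (Arr k r) n = stepF (lev n) (semC k n) (valR r)"
      unfolding semD_def stepF_def using IH(2) enumC_in[OF R] by (simp add: leC_lev_def)
    show "compact_in (Dset n) (leD_lev n) (semD (Arr k r) n)"
      unfolding st by (rule compactD_step[OF R IH(1) valR_compact[OF kr(2)]])
    show "\<forall>f\<in>Dset n. belowD (Arr k r) n f = leD_lev n (semD (Arr k r) n) f"
      unfolding st using leD_step_iff[OF R IH(1)] by simp
  qed simp_all
next
  case (Times d k)
  show ?case
  proof (intro conjI impI allI)
    fix n assume t: "isC (Times d k)" "depth (Times d k) \<le> n"
    then obtain m where m: "n = Suc m" by (cases n) auto
    have dk: "isD d" "isC k" "depth d \<le> m" "depth k \<le> m" using t m by auto
    have IH: "compact_in (Dset m) (leD_lev m) (semD d m)" "compact_in (Cset m) (leC_lev m) (semC k m)"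
      "\<forall>f\<in>Dset m. belowD d m f = leD_lev m (semD d m) f" "\<forall>c\<in>Cset m. belowC k m c = leC_lev m (semC k m) c"
      using Times.IH dk by blast+
    show "compact_in (Cset n) (leC_lev n) (semC (Times d k) n)"
      unfolding m semC_Times_Suc Cset_Suc
      using compact_prod_iff[OF algD[OF R] algC[OF R] semD_in[OF R dk(1)] semC_in[OF R dk(2)]] IH(1,2) by simp
    show "\<forall>c\<in>Cset n. belowC (Times d k) n c = leC_lev n (semC (Times d k) n) c"
    proof
      fix c :: "'a U" assume c: "c \<in> Cset n"
      then have c1: "c \<in> prodS (Dset m) (Cset m)" using m by (simp add: Cset_Suc)
      have cc: "fstU c \<in> Dset m" "sndU c \<in> Cset m" using prodS_E[OF c1] by auto
      have s1: "UPair (semD d m) (semC k m) \<in> prodS (Dset m) (Cset m)"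
        using semD_in[OF R dk(1)] semC_in[OF R dk(2)] by simp
      show "belowC (Times d k) n c = leC_lev n (semC (Times d k) n) c"
        unfolding m semC_Times_Suc Cset_Suc using prodLe_E[OF s1 c1] IH(3,4) cc by simp
    qed
  qed simp_all
qed

lemma semC_compact: "Ralg TYPE('a::complete_lattice) \<Longrightarrow> isC (t::'a ty) \<Longrightarrow> depth t \<le> n \<Longrightarrow>
    compact_in (Cset n) (leC_lev n) (semC t n)"
  using S26_lemma by blast
lemma semD_compact: "Ralg TYPE('a::complete_lattice) \<Longrightarrow> isD (t::'a ty) \<Longrightarrow> depth t \<le> n \<Longrightarrow>
    compact_in (Dset n) (leD_lev n) (semD t n)"
  using S26_lemma by blast
lemma belowC_iff: "Ralg TYPE('a::complete_lattice) \<Longrightarrow> isC (t::'a ty) \<Longrightarrow> depth t \<le> n \<Longrightarrow> c \<in> Cset n \<Longrightarrow>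
    belowC t n c = leC_lev n (semC t n) c"
  using S26_lemma by blast
lemma belowD_iff: "Ralg TYPE('a::complete_lattice) \<Longrightarrow> isD (t::'a ty) \<Longrightarrow> depth t \<le> n \<Longrightarrow> f \<in> Dset n \<Longrightarrow>
    belowD t n f = leD_lev n (semD t n) f"
  using S26_lemma by blast

lemma semC_Cinf: "Ralg TYPE('a::complete_lattice) \<Longrightarrow> isC (k::'a ty) \<Longrightarrow> (\<lambda>n. semC k n) \<in> Cinf"
  unfolding Cinf_def using semC_in pC_semC by blast
lemma semD_Dinf: "Ralg TYPE('a::complete_lattice) \<Longrightarrow> isD (d::'a ty) \<Longrightarrow> (\<lambda>n. semD d n) \<in> Dinf"
  unfolding Dinf_def using semD_in pD_semD' by blast

lemma Cinf_in: "y \<in> Cinf \<Longrightarrow> y n \<in> Cset n" unfolding Cinf_def by blast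
lemma Cinf_p: "y \<in> Cinf \<Longrightarrow> pC n (y (Suc n)) = y n" unfolding Cinf_def by blast
lemma Dinf_in: "y \<in> Dinf \<Longrightarrow> y n \<in> Dset n" unfolding Dinf_def by blast
lemma Dinf_p: "y \<in> Dinf \<Longrightarrow> pD n (y (Suc n)) = y n" unfolding Dinf_def by blast

lemma down_lemma:
  assumes step: "\<And>n. P (Suc n) \<Longrightarrow> P n" and PN: "P (N::nat)" and n: "n \<le> N"
  shows "P n"
proof -
  have "P (N - j)" for j
  proof (induction j)
    case 0 then show ?case using PN by simp
  next
    case (Suc j)
    show ?case
    proof (cases "N - j = 0")
      case True then show ?thesis using Suc by simp
    next
      case False
      then have "N - j = Suc (N - Suc j)" by simp
      then show ?thesis using step Suc by metis
    qed
  qed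
  then show ?thesis using n by (metis diff_diff_cancel)
qed

lemma up_lemma:
  assumes step: "\<And>n. N \<le> n \<Longrightarrow> P n \<Longrightarrow> P (Suc n)" and PN: "P (N::nat)" and n: "N \<le> n"
  shows "P n"
  using n
proof (induction n rule: dec_induct)
  case base then show ?case by (rule PN)
next
  case (step m) then show ?case using assms(1) by blast
qed

lemma LiftC:
  assumes R: "Ralg TYPE('a::complete_lattice)" and k: "isC (k::'a ty)" and y: "y \<in> Cinf"
    and N: "depth k \<le> N" and le: "leC_lev N (semC k N) (y N)"
  shows "leC_lev n (semC k n) (y n)"
proof (cases "N \<le> n")
  case True
  show ?thesis
  proof (rule up_lemma[where P="\<lambda>n. leC_lev n (semC k n) (y n)", OF _ le True])
    fix m assume m: "N \<le> m" and P: "leC_lev m (semC k m) (y m)"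
    have dm: "depth k \<le> m" using N m by simp
    have "belowC k m (y m)" using belowC_iff[OF R k dm Cinf_in[OF y]] P by simp
    then have "belowC k (Suc m) (eCm m (y m))" using belowC_eCm[OF R k Cinf_in[OF y]] by simp
    moreover have "leC_lev (Suc m) (eCm m (y m)) (y (Suc m))"
      using ep_ep[OF epC[OF R] Cinf_in[OF y, of "Suc m"]] Cinf_p[OF y] by simp
    ultimately have "belowC k (Suc m) (y (Suc m))"
      using belowC_mono[OF R k ep_e_in[OF epC[OF R] Cinf_in[OF y]] Cinf_in[OF y]] by blast
    then show "leC_lev (Suc m) (semC k (Suc m)) (y (Suc m))"
      using belowC_iff[OF R k _ Cinf_in[OF y]] dm by simp
  qed
next
  case False
  show ?thesis
  proof (rule down_lemma[where P="\<lambda>n. leC_lev n (semC k n) (y n)", OF _ le])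
    fix m assume "leC_lev (Suc m) (semC k (Suc m)) (y (Suc m))"
    then have "leC_lev m (pC m (semC k (Suc m))) (pC m (y (Suc m)))"
      using ep_p_mono[OF epC[OF R] semC_in[OF R k] Cinf_in[OF y]] by simp
    then show "leC_lev m (semC k m) (y m)" using pC_semC[OF R k] Cinf_p[OF y] by simp
  qed (use False in simp)
qed

lemma LiftD:
  assumes R: "Ralg TYPE('a::complete_lattice)" and k: "isD (k::'a ty)" and y: "y \<in> Dinf"
    and N: "depth k \<le> N" and le: "leD_lev N (semD k N) (y N)"
  shows "leD_lev n (semD k n) (y n)"
proof (cases "N \<le> n")
  case True
  show ?thesis
  proof (rule up_lemma[where P="\<lambda>n. leD_lev n (semD k n) (y n)", OF _ le True])
    fix m assume m: "N \<le> m" and P: "leD_lev m (semD k m) (y m)"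
    have dm: "depth k \<le> m" using N m by simp
    have "belowD k m (y m)" using belowD_iff[OF R k dm Dinf_in[OF y]] P by simp
    then have "belowD k (Suc m) (eDm m (y m))" using belowD_eDm[OF R k Dinf_in[OF y]] by simp
    moreover have "leD_lev (Suc m) (eDm m (y m)) (y (Suc m))"
      using ep_ep[OF epD[OF R] Dinf_in[OF y, of "Suc m"]] Dinf_p[OF y] by simp
    ultimately have "belowD k (Suc m) (y (Suc m))"
      using belowD_mono[OF R k ep_e_in[OF epD[OF R] Dinf_in[OF y]] Dinf_in[OF y]] by blast
    then show "leD_lev (Suc m) (semD k (Suc m)) (y (Suc m))"
      using belowD_iff[OF R k _ Dinf_in[OF y]] dm by simp
  qed
next
  case False
  show ?thesis
  proof (rule down_lemma[where P="\<lambda>n. leD_lev n (semD k n) (y n)", OF _ le])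
    fix m assume "leD_lev (Suc m) (semD k (Suc m)) (y (Suc m))"
    then have "leD_lev m (pD m (semD k (Suc m))) (pD m (y (Suc m)))"
      using ep_p_mono[OF epD[OF R] semD_in[OF R k] Dinf_in[OF y]] by simp
    then show "leD_lev m (semD k m) (y m)" using pD_semD'[OF R k] Dinf_p[OF y] by simp
  qed (use False in simp)
qed

lemma BelowMono:
  assumes R: "Ralg TYPE('a::complete_lattice)" and k1: "isC (k1::'a ty)" and k2: "isC k2"
    and le: "\<forall>m. leC_lev m (semC k1 m) (semC k2 m)"
  shows "c \<in> Cset n \<Longrightarrow> belowC k2 n c \<Longrightarrow> belowC k1 n c"
proof -
  define N where "N = max (depth k1) (depth k2)"
  have "\<forall>n c. N \<le> n + j \<longrightarrow> c \<in> Cset n \<longrightarrow> belowC k2 n c \<longrightarrow> belowC k1 n c" for j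
  proof (induction j)
    case 0
    show ?case
    proof (intro allI impI)
      fix n and c :: "'a U" assume a: "N \<le> n + 0" "c \<in> Cset n" "belowC k2 n c"
      have d: "depth k1 \<le> n" "depth k2 \<le> n" using a(1) N_def by auto
      have "leC_lev n (semC k2 n) c" using belowC_iff[OF R k2 d(2) a(2)] a(3) by simp
      then have "leC_lev n (semC k1 n) c"
        using po_trans[OF poC[OF R] semC_in[OF R k1] semC_in[OF R k2] a(2)] le by blast
      then show "belowC k1 n c" using belowC_iff[OF R k1 d(1) a(2)] by simp
    qed
  next
    case (Suc j)
    show ?case
    proof (intro allI impI)
      fix n and c :: "'a U" assume a: "N \<le> n + Suc j" "c \<in> Cset n" "belowC k2 n c"
      have e: "eCm n c \<in> Cset (Suc n)" by (rule ep_e_in[OF epC[OF R] a(2)])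
      have "belowC k2 (Suc n) (eCm n c)" using belowC_eCm[OF R k2 a(2)] a(3) by simp
      then have "belowC k1 (Suc n) (eCm n c)" using Suc.IH a(1) e by simp
      then show "belowC k1 n c" using belowC_eCm[OF R k1 a(2)] by simp
    qed
  qed
  then show "c \<in> Cset n \<Longrightarrow> belowC k2 n c \<Longrightarrow> belowC k1 n c" using N_def
    by (metis le_add1 le_add_same_cancel1 nat_le_linear add.commute)
qed

lemma leDC_is: "leD s t \<Longrightarrow> isD s \<and> isD t" "leC s t \<Longrightarrow> isC s \<and> isC t"
  by (induction rule: leD_leC.inducts) (auto dest: leR_isR isR_isD simp: compactR_bot)

lemma leD_lev_pointwise: "leD_lev n (semD s n) (semD t n) \<longleftrightarrow> (\<forall>i. valD s n (enum (lev n) i) \<le> valD t n (enum (lev n) i))"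
  by (simp add: leD_lev_def leD_of_def)

lemma sound:
  assumes R: "Ralg TYPE('a::complete_lattice)"
  shows "leD (s::'a ty) t \<Longrightarrow> \<forall>n. leD_lev n (semD t n) (semD s n)"
    and "leC (s::'a ty) t \<Longrightarrow> \<forall>n. leC_lev n (semC t n) (semC s n)"
proof (induction rule: leD_leC.inducts)
  case (D_refl s) then show ?case using po_refl[OF poD semD_in[OF R]] by blast
next
  case (D_trans s t u)
  have i: "isD s" "isD t" "isD u" using leDC_is D_trans.hyps by blast+
  show ?case using po_trans[OF poD semD_in[OF R i(3)] semD_in[OF R i(2)] semD_in[OF R i(1)]] D_trans.IH by blast
next
  case (D_conjL s t) then show ?case by (simp add: leD_lev_pointwise)
next
  case (D_conjR s t) then show ?case by (simp add: leD_lev_pointwise)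
next
  case (D_top s) then show ?case by (simp add: leD_lev_pointwise)
next
  case (D_glb r s t) then show ?case by (simp add: leD_lev_pointwise)
next
  case (C_refl s) then show ?case using po_refl[OF poC[OF R] semC_in[OF R]] by blast
next
  case (C_trans s t u)
  have i: "isC s" "isC t" "isC u" using leDC_is C_trans.hyps by blast+
  show ?case using po_trans[OF poC[OF R] semC_in[OF R i(3)] semC_in[OF R i(2)] semC_in[OF R i(1)]] C_trans.IH by blast
next
  case (C_conjL s t)
  show ?case using lub_upper[OF joinC_lub[OF R semC_in[OF R C_conjL(1)] semC_in[OF R C_conjL(2)]]] by simp
next
  case (C_conjR s t)
  show ?case using lub_upper[OF joinC_lub[OF R semC_in[OF R C_conjR(1)] semC_in[OF R C_conjR(2)]]] by simp
next
  case (C_top s) then show ?case using botC_le[OF R semC_in[OF R]] by simp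
next
  case (C_glb r s t)
  have i: "isC r" "isC s" "isC t" using leDC_is C_glb.hyps by blast+
  show ?case using joinC_le_iff[OF R semC_in[OF R i(2)] semC_in[OF R i(3)] semC_in[OF R i(1)]] C_glb.IH by simp
next
  case (D_fromR r1 r2)
  have i: "isR r1" "isR r2" using leR_isR[OF D_fromR] by auto
  show ?case using leR_sound[OF D_fromR] valD_R[OF i(1)] valD_R[OF i(2)] by (simp add: leD_lev_pointwise)
next
  case D_omArr then show ?case by (simp add: leD_lev_pointwise)
next
  case (D_psiArr1 a) then show ?case by (simp add: leD_lev_pointwise)
next
  case (D_psiArr2 a) then show ?case by (simp add: leD_lev_pointwise)
next
  case C_omTimes
  show ?case
  proof
    fix n show "leC_lev n (semC (Times Om Om :: 'a ty) n) (semC Om n)"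
    proof (cases n)
      case 0 then show ?thesis by (simp add: Cset_0)
    next
      case (Suc m)
      have "semC (Times Om Om) n = (semC Om n :: 'a U)"
        unfolding Suc semC_Times_Suc using botC_Suc[OF R] by (simp add: semD_def)
      then show ?thesis using po_refl[OF poC[OF R] semC_in[OF R, of "Om"]] by simp
    qed
  qed
next
  case (D_arrConj k r1 r2) then show ?case by (simp add: leD_lev_pointwise)
next
  case (C_timesConj d1 d2 k1 k2)
  show ?case
  proof
    fix n show "leC_lev n (semC (Times (Conj d1 d2) (Conj k1 k2)) n) (semC (Conj (Times d1 k1) (Times d2 k2)) n)"
    proof (cases n)
      case 0 then show ?thesis by (simp add: Cset_0)
    next
      case (Suc m)
      have e: "semC (Times (Conj d1 d2) (Conj k1 k2)) n = semC (Conj (Times d1 k1) (Times d2 k2)) n"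
        unfolding Suc semC_Times_Suc semC.simps(2)[of "Times d1 k1"] semC_Times_Suc
        using joinC_Suc[OF R semD_in[OF R] semD_in[OF R] semC_in[OF R] semC_in[OF R]] C_timesConj
        by (simp add: semD_Conj)
      have "isC (Conj (Times d1 k1) (Times d2 k2))" using C_timesConj by simp
      then show ?thesis unfolding e using po_refl[OF poC[OF R] semC_in[OF R]] by blast
    qed
  qed
next
  case (D_arrMono k2 k1 r1 r2)
  have i: "isC k1" "isC k2" using leDC_is D_arrMono.hyps by blast+
  have v: "valR r2 \<le> valR r1" using leR_sound[OF D_arrMono.hyps(2)] .
  show ?case
  proof
    fix n
    have "(if belowC k2 n c then valR r2 else bot) \<le> (if belowC k1 n c then valR r1 else bot)"
      if c: "c \<in> Cset n" for c :: "'a U"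
      using BelowMono[OF R i(1) i(2) D_arrMono.IH c] v by auto
    then show "leD_lev n (semD (Arr k2 r2) n) (semD (Arr k1 r1) n)"
      using enumC_in[OF R] by (simp add: leD_lev_pointwise)
  qed
next
  case (C_timesMono d1 d2 k1 k2)
  show ?case
  proof
    fix n show "leC_lev n (semC (Times d2 k2) n) (semC (Times d1 k1) n)"
    proof (cases n)
      case 0 then show ?thesis by (simp add: Cset_0)
    next
      case (Suc m)
      show ?thesis unfolding Suc semC_Times_Suc Cset_Suc using C_timesMono.IH by simp
    qed
  qed
qed

fun tsz :: "'a ty \<Rightarrow> nat" where
  "tsz (Psi _) = 1"
| "tsz Om = 1"
| "tsz (Conj a b) = Suc (tsz a + tsz b)"
| "tsz (Arr a b) = Suc (tsz a + tsz b)"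
| "tsz (Times a b) = Suc (tsz a + tsz b)"

fun fstT :: "'a ty \<Rightarrow> 'a ty" where
  "fstT (Conj a b) = Conj (fstT a) (fstT b)"
| "fstT (Times d k) = d"
| "fstT _ = Om"
fun sndT :: "'a ty \<Rightarrow> 'a ty" where
  "sndT (Conj a b) = Conj (sndT a) (sndT b)"
| "sndT (Times d k) = k"
| "sndT _ = Om"

lemma tsz_pos: "0 < tsz t" by (cases t) auto

lemma tsz_fstT: "tsz (fstT s) \<le> tsz s" and tsz_sndT: "tsz (sndT s) \<le> tsz s"
  by (induction s) auto

lemma Proj:
  shows "isC s \<Longrightarrow> isD (fstT s) \<and> isC (sndT s) \<and> leC s (Times (fstT s) (sndT s))"
proof (induction s)
  case Om then show ?case using C_omTimes by simp
next
  case (Conj a b)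
  have ab: "isC a" "isC b" using Conj.prems by auto
  have IHa: "isD (fstT a)" "isC (sndT a)" "leC a (Times (fstT a) (sndT a))" using Conj.IH(1) ab by auto
  have IHb: "isD (fstT b)" "isC (sndT b)" "leC b (Times (fstT b) (sndT b))" using Conj.IH(2) ab by auto
  have 1: "leC (Conj a b) (Conj (Times (fstT a) (sndT a)) (Times (fstT b) (sndT b)))"
    by (rule C_glb[OF C_trans[OF C_conjL[OF ab] IHa(3)] C_trans[OF C_conjR[OF ab] IHb(3)]])
  have 2: "leC (Conj (Times (fstT a) (sndT a)) (Times (fstT b) (sndT b)))
     (Times (Conj (fstT a) (fstT b)) (Conj (sndT a) (sndT b)))"
    by (rule C_timesConj[OF IHa(1) IHb(1) IHa(2) IHb(2)])
  show ?case using C_trans[OF 1 2] IHa IHb by simp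
next
  case (Times d k) then show ?case using C_refl[of "Times d k"] by simp
qed auto

lemma semC_proj:
  assumes R: "Ralg TYPE('a::complete_lattice)"
  shows "isC (s::'a ty) \<Longrightarrow> semC s (Suc m) = UPair (semD (fstT s) m) (semC (sndT s) m)"
proof (induction s)
  case Om then show ?case using botC_Suc[OF R] by (simp add: semD_def)
next
  case (Conj a b)
  have ab: "isC a" "isC b" using Conj.prems by auto
  have i: "isD (fstT a)" "isD (fstT b)" "isC (sndT a)" "isC (sndT b)" using Proj ab by blast+
  show ?case using Conj.IH ab joinC_Suc[OF R semD_in[OF R i(1)] semD_in[OF R i(2)] semC_in[OF R i(3)] semC_in[OF R i(4)]]
    by (simp add: semD_Conj)
next
  case (Times d k) then show ?case by (simp only: semC_Times_Suc fstT.simps sndT.simps)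
qed auto

lemma leD_Om_arr: assumes k: "isC k" shows "leD Om (Arr k (Psi bot))"
  by (rule D_trans[OF D_omArr D_arrMono[OF C_top[OF k] R_bot2]])

lemma App:
  assumes R: "Ralg TYPE('a::complete_lattice)" and k: "isC (k::'a ty)" and dk: "depth k \<le> n"
  shows "isD (s::'a ty) \<Longrightarrow> depth s \<le> n \<Longrightarrow>
    (\<forall>k'. tsz k' < tsz s \<longrightarrow> isC k' \<longrightarrow> (\<forall>m. leC_lev m (semC k' m) (semC k m)) \<longrightarrow> leC k k') \<Longrightarrow>
    leD s (Arr k (Psi (valD s n (semC k n))))"
proof (induction s)
  case (Psi a)
  have a: "compactR a" using Psi.prems by simp
  have "leD (Psi a) (Arr k (Psi a))"
    using D_trans[OF D_psiArr1[OF a] D_arrMono[OF C_top[OF k] R_refl]] a by simp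
  then show ?case by simp
next
  case Om then show ?case using leD_Om_arr[OF k] by simp
next
  case (Conj s1 s2)
  have s: "isD s1" "isD s2" "depth s1 \<le> n" "depth s2 \<le> n" using Conj.prems by auto
  define v1 where "v1 = valD s1 n (semC k n)"
  define v2 where "v2 = valD s2 n (semC k n)"
  have c: "compactR v1" "compactR v2" unfolding v1_def v2_def using valD_compact[OF R] s by auto
  have IH1: "leD s1 (Arr k (Psi v1))" unfolding v1_def using Conj.IH(1) s Conj.prems(3) by simp
  have IH2: "leD s2 (Arr k (Psi v2))" unfolding v2_def using Conj.IH(2) s Conj.prems(3) by simp
  have 1: "leD (Conj s1 s2) (Conj (Arr k (Psi v1)) (Arr k (Psi v2)))"
    by (rule D_glb[OF D_trans[OF D_conjL[OF s(1,2)] IH1] D_trans[OF D_conjR[OF s(1,2)] IH2]])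
  have 2: "leD (Conj (Arr k (Psi v1)) (Arr k (Psi v2))) (Arr k (Conj (Psi v1) (Psi v2)))"
    by (rule D_arrConj) (use k c in simp_all)
  have 3: "leD (Arr k (Conj (Psi v1) (Psi v2))) (Arr k (Psi (sup v1 v2)))"
    by (rule D_arrMono[OF C_refl[OF k] R_join2[OF c]])
  show ?case using D_trans[OF D_trans[OF 1 2] 3] unfolding v1_def v2_def by simp
next
  case (Arr k' r')
  have s: "isC k'" "isR r'" "depth k' \<le> n" using Arr.prems by auto
  show ?case
  proof (cases "belowC k' n (semC k n)")
    case True
    have "leC_lev n (semC k' n) (semC k n)" using belowC_iff[OF R s(1) s(3) semC_in[OF R k]] True by simp
    then have "\<forall>m. leC_lev m (semC k' m) (semC k m)"
      using LiftC[OF R s(1) semC_Cinf[OF R k] s(3)] by blast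
    then have kk: "leC k k'" using Arr.prems(3) s by simp
    have "leD (Arr k' r') (Arr k (Psi (valR r')))"
      by (rule D_arrMono[OF kk]) (use leR_norm[OF s(2)] in blast)
    then show ?thesis using True by simp
  next
    case False
    have "leD (Arr k' r') (Arr k (Psi bot))"
      using D_trans[OF D_top leD_Om_arr[OF k]] s by simp
    then show ?thesis using False by simp
  qed
qed auto

lemma valD_at_enum:
  assumes R: "Ralg TYPE('a::complete_lattice)" and t: "isD (t::'a ty)" and s: "isD s"
    and le: "leD_lev n (semD t n) (semD s n)" and c: "compact_in (Cset n) (leC_lev n) c"
  shows "valD t n c \<le> valD s n c"
proof -
  obtain i where i: "enum (lev n) i = c" using enumC_surj[OF R c] by blast
  have "valD t n (enum (lev n) i) \<le> valD s n (enum (lev n) i)" using le by (simp add: leD_lev_pointwise)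
  then show ?thesis using i by simp
qed

lemma complete_lemma:
  assumes R: "Ralg TYPE('a::complete_lattice)"
  shows "((isD (s::'a ty) \<and> isD t \<and> (\<forall>n. leD_lev n (semD t n) (semD s n))) \<longrightarrow> leD s t)
       \<and> ((isC s \<and> isC t \<and> (\<forall>n. leC_lev n (semC t n) (semC s n))) \<longrightarrow> leC s t)"
proof (induction "tsz s + tsz t" arbitrary: s t rule: less_induct)
  case less
  show ?case
  proof (intro conjI impI)
    assume h: "isD s \<and> isD t \<and> (\<forall>n. leD_lev n (semD t n) (semD s n))"
    then have s: "isD s" and t: "isD t" and le: "\<And>n. leD_lev n (semD t n) (semD s n)" by auto
    show "leD s t"
    proof (cases t)
      case Om then show ?thesis using D_top[OF s] by simp
    next
      case (Conj t1 t2)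
      have t12: "isD t1" "isD t2" using t Conj by auto
      have "leD_lev n (semD t1 n) (semD s n)" "leD_lev n (semD t2 n) (semD s n)" for n
        using le[of n] Conj by (auto simp: leD_lev_pointwise)
      then have "leD s t1" "leD s t2" using less.hyps[of s t1] less.hyps[of s t2] s t12 Conj by auto
      then show ?thesis using D_glb Conj by blast
    next
      case (Psi a)
      have a: "compactR a" using t Psi by simp
      define n where "n = depth s"
      define v where "v = valD s n (semC Om n)"
      have v: "compactR v" unfolding v_def using valD_compact[OF R s] .
      have "valD t n (semC Om n) \<le> valD s n (semC Om n)"
        by (rule valD_at_enum[OF R t s le]) (use botC_compact[OF R] in simp)
      then have av: "a \<le> v" unfolding v_def using Psi by simp
      have H: "\<forall>k'::'a ty. tsz k' < tsz s \<longrightarrow> isC k' \<longrightarrow> (\<forall>m. leC_lev m (semC k' m) (semC Om m)) \<longrightarrow> leC Om k'"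
      proof (intro allI impI)
        fix k' :: "'a ty" assume k': "tsz k' < tsz s" "isC k'" "\<forall>m. leC_lev m (semC k' m) (semC Om m)"
        have "tsz (Om::'a ty) + tsz k' < tsz s + tsz t" using k'(1) Psi by simp
        then show "leC Om k'" using less.hyps[of Om k'] k' by simp
      qed
      have 1: "leD s (Arr Om (Psi v))" unfolding v_def
        by (rule App[OF R _ _ s _ H]) (simp_all add: n_def)
      have 2: "leD (Arr Om (Psi v)) (Arr Om (Psi a))"
        by (rule D_arrMono[OF C_refl leR_psi_mono[OF v a av]]) simp
      show ?thesis using D_trans[OF D_trans[OF 1 2] D_psiArr2[OF a]] Psi by simp
    next
      case (Arr k r)
      have kr: "isC k" "isR r" using t Arr by auto
      define n where "n = max (depth s) (depth k)"
      have dn: "depth s \<le> n" "depth k \<le> n" unfolding n_def by auto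
      define v where "v = valD s n (semC k n)"
      have v: "compactR v" unfolding v_def using valD_compact[OF R s] .
      have kc: "compact_in (Cset n) (leC_lev n) (semC k n)" by (rule semC_compact[OF R kr(1) dn(2)])
      have "valD t n (semC k n) \<le> valD s n (semC k n)" by (rule valD_at_enum[OF R t s le kc])
      moreover have "belowC k n (semC k n)"
        using belowC_iff[OF R kr(1) dn(2) semC_in[OF R kr(1)]] po_refl[OF poC[OF R] semC_in[OF R kr(1)]] by simp
      ultimately have rv: "valR r \<le> v" unfolding v_def using Arr by simp
      have H: "\<forall>k'::'a ty. tsz k' < tsz s \<longrightarrow> isC k' \<longrightarrow> (\<forall>m. leC_lev m (semC k' m) (semC k m)) \<longrightarrow> leC k k'"
      proof (intro allI impI)
        fix k' :: "'a ty" assume k': "tsz k' < tsz s" "isC k'" "\<forall>m. leC_lev m (semC k' m) (semC k m)"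
        have "tsz k + tsz k' < tsz s + tsz t" using k'(1) Arr by simp
        then show "leC k k'" using less.hyps[of k k'] k' kr by simp
      qed
      have 1: "leD s (Arr k (Psi v))" unfolding v_def by (rule App[OF R kr(1) dn(2) s dn(1) H])
      have "leR (Psi v) r" by (rule leR_complete) (use v kr rv in simp_all)
      then have 2: "leD (Arr k (Psi v)) (Arr k r)" by (rule D_arrMono[OF C_refl[OF kr(1)]])
      show ?thesis using D_trans[OF 1 2] Arr by simp
    next
      case (Times d k) then show ?thesis using t by simp
    qed
  next
    assume h: "isC s \<and> isC t \<and> (\<forall>n. leC_lev n (semC t n) (semC s n))"
    then have s: "isC s" and t: "isC t" and le: "\<And>n. leC_lev n (semC t n) (semC s n)" by auto
    show "leC s t"
    proof (cases t)
      case Om then show ?thesis using C_top[OF s] by simp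
    next
      case (Conj t1 t2)
      have t12: "isC t1" "isC t2" using t Conj by auto
      have "leC_lev n (semC t1 n) (semC s n) \<and> leC_lev n (semC t2 n) (semC s n)" for n
        using le[of n] Conj joinC_le_iff[OF R semC_in[OF R t12(1)] semC_in[OF R t12(2)] semC_in[OF R s]] by simp
      then have "leC s t1" "leC s t2" using less.hyps[of s t1] less.hyps[of s t2] s t12 Conj by auto
      then show ?thesis using C_glb Conj by blast
    next
      case (Times d k)
      have dk: "isD d" "isC k" using t Times by auto
      have pr: "isD (fstT s)" "isC (sndT s)" "leC s (Times (fstT s) (sndT s))" using Proj[OF s] by auto
      have "leD_lev m (semD d m) (semD (fstT s) m) \<and> leC_lev m (semC k m) (semC (sndT s) m)" for m
        using le[of "Suc m"] Times semC_proj[OF R s, of m] by (simp add: semC_Times_Suc Cset_Suc semD_def)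
      moreover have "tsz (fstT s) + tsz d < tsz s + tsz t" "tsz (sndT s) + tsz k < tsz s + tsz t"
        using tsz_fstT[of s] tsz_sndT[of s] Times by auto
      ultimately have "leD (fstT s) d" "leC (sndT s) k"
        using less.hyps[of "fstT s" d] less.hyps[of "sndT s" k] pr dk by auto
      then show ?thesis using C_trans[OF pr(3) C_timesMono] Times by blast
    qed (use t in simp_all)
  qed
qed

lemma completeD: "Ralg TYPE('a::complete_lattice) \<Longrightarrow> isD (s::'a ty) \<Longrightarrow> isD t \<Longrightarrow>
   (\<forall>n. leD_lev n (semD t n) (semD s n)) \<Longrightarrow> leD s t"
  using complete_lemma by blast
lemma completeC: "Ralg TYPE('a::complete_lattice) \<Longrightarrow> isC (s::'a ty) \<Longrightarrow> isC t \<Longrightarrow>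
   (\<forall>n. leC_lev n (semC t n) (semC s n)) \<Longrightarrow> leC s t"
  using complete_lemma by blast

lemma D_compact_FJ:
  assumes R: "Ralg TYPE('a::complete_lattice)" and L: "algL (L::'a level)"
    and fc: "compact_in (D_of L) (leD_of L) f"
  shows "\<exists>F. finite F \<and> F \<subseteq> StepsBelow L f \<and> f = supD F"
proof -
  have po: "po (D_of L) (leD_of L)" by (rule po_D)
  have f: "f \<in> D_of L" by (rule compact_in_S[OF fc])
  define X where "X = StepsBelow L f"
  have XD: "X \<subseteq> D_of L" unfolding X_def by (rule StepsBelow_sub[OF L])
  define Z where "Z = supD ` {F. finite F \<and> F \<subseteq> X}"
  have ZD: "Z \<subseteq> D_of L" unfolding Z_def using supD_in XD by blast
  have dir: "directed_in (leD_of L) Z" unfolding directed_in_def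
  proof (intro conjI ballI)
    show "Z \<noteq> {}" unfolding Z_def by blast
    fix x y assume "x \<in> Z" "y \<in> Z"
    then obtain F1 F2 where F: "finite F1" "F1 \<subseteq> X" "finite F2" "F2 \<subseteq> X" "x = supD F1" "y = supD F2"
      unfolding Z_def by blast
    have "supD (F1 \<union> F2) \<in> Z" unfolding Z_def using F by blast
    moreover have "leD_of L x (supD (F1 \<union> F2))" "leD_of L y (supD (F1 \<union> F2))"
      using F supD_subset_le[of F1 "F1 \<union> F2" L] supD_subset_le[of F2 "F1 \<union> F2" L] by auto
    ultimately show "\<exists>z\<in>Z. leD_of L x z \<and> leD_of L y z" by blast
  qed
  have below: "leD_of L z f" if z: "z \<in> Z" for z
  proof -
    obtain F where F: "finite F" "F \<subseteq> X" "z = supD F" using z unfolding Z_def by blast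
    have FD: "F \<subseteq> D_of L" using F XD by blast
    show ?thesis unfolding F(3)
    proof (rule lub_least[OF lub_D[OF FD] f])
      fix t assume "t \<in> F" then show "leD_of L t f" using F(2) unfolding X_def StepsBelow_def by blast
    qed
  qed
  have lubZ: "is_lub_in (D_of L) (leD_of L) Z f"
  proof (rule is_lubI[OF f])
    fix t assume "t \<in> Z" then show "leD_of L t f" by (rule below)
  next
    fix u assume u: "u \<in> D_of L" "\<forall>t\<in>Z. leD_of L t u"
    have "\<forall>t\<in>X. leD_of L t u"
    proof
      fix t assume t: "t \<in> X"
      have "supD {t} \<in> Z" unfolding Z_def using t by blast
      then show "leD_of L t u" using u supD_single[of t L] t XD by auto
    qed
    then show "leD_of L f u" using lub_least[OF steps_lub[OF R L f] u(1)] unfolding X_def by blast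
  qed
  obtain z where z: "z \<in> Z" "leD_of L f z"
    using compactD[OF fc ZD dir lubZ po_refl[OF po f]] by blast
  have "f = z" using po_antisym[OF po f _ z(2) below[OF z(1)]] ZD z(1) by blast
  then show ?thesis using z(1) unfolding Z_def X_def by blast
qed

lemma semD_Arr_step:
  assumes R: "Ralg TYPE('a::complete_lattice)" and k: "isC (k::'a ty)" and dk: "depth k \<le> n"
  shows "semD (Arr k r) n = stepF (lev n) (semC k n) (valR r)"
proof -
  have "belowC k n (enum (lev n) i) = snd (lev n) (semC k n) (enum (lev n) i)" for i
    using belowC_iff[OF R k dk enumC_in[OF R]] by (simp add: leC_lev_def)
  then show ?thesis unfolding semD_def stepF_def by simp
qed

lemma supD_insert: "supD (insert x F) = supD {x, supD F}"
  unfolding supD_def by simp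

lemma DefD_of_DefC:
  assumes R: "Ralg TYPE('a::complete_lattice)"
    and DC: "\<forall>c. compact_in (Cset n) (leC_lev n) (c::'a U) \<longrightarrow> (\<exists>k::'a ty. isC k \<and> depth k \<le> n \<and> semC k n = c)"
  shows "\<forall>f. compact_in (Dset n) (leD_lev n) (f::'a U) \<longrightarrow> (\<exists>d::'a ty. isD d \<and> depth d \<le> n \<and> semD d n = f)"
proof (intro allI impI)
  fix f :: "'a U" assume fc: "compact_in (Dset n) (leD_lev n) f"
  have fc': "compact_in (D_of (lev n)) (leD_of (lev n)) f" using fc by (simp add: Dset_def leD_lev_def)
  obtain F where F: "finite F" "F \<subseteq> StepsBelow (lev n) f" "f = supD F"
    using D_compact_FJ[OF R alg_lev[OF R] fc'] by blast
  have "\<exists>d::'a ty. isD d \<and> depth d \<le> n \<and> semD d n = supD G" if G: "finite G" "G \<subseteq> StepsBelow (lev n) f" for G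
    using G
  proof (induction G rule: finite_induct)
    case empty then show ?case by (intro exI[of _ Om]) (simp add: semD_Om)
  next
    case (insert x G)
    have "G \<subseteq> StepsBelow (lev n) f" using insert.prems by simp
    then obtain d :: "'a ty" where d: "isD d" "depth d \<le> n" "semD d n = supD G" using insert.IH by blast
    have xs: "x \<in> StepsBelow (lev n) f" using insert.prems by simp
    obtain k a where x: "x = stepF (lev n) k a" "k \<in> KC (lev n)" "compactR a"
      using xs unfolding StepsBelow_def by blast
    have "compact_in (Cset n) (leC_lev n) k" using x(2) by (simp add: KC_def Cset_def leC_lev_def)
    then obtain \<kappa> where \<kappa>: "isC \<kappa>" "depth \<kappa> \<le> n" "semC \<kappa> n = k" using DC[rule_format] by blast
    have sx: "semD (Arr \<kappa> (Psi a)) n = x" using semD_Arr_step[OF R \<kappa>(1,2)] \<kappa>(3) x by simp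
    have "semD (Conj (Arr \<kappa> (Psi a)) d) n = supD {x, supD G}"
      unfolding semD_Conj sx d(3) ..
    also have "\<dots> = supD (insert x G)" by (rule supD_insert[symmetric])
    finally have "semD (Conj (Arr \<kappa> (Psi a)) d) n = supD (insert x G)" .
    moreover have "isD (Conj (Arr \<kappa> (Psi a)) d)" using \<kappa> d x by simp
    moreover have "depth (Conj (Arr \<kappa> (Psi a)) d) \<le> n" using \<kappa> d by simp
    ultimately show ?case by blast
  qed
  then show "\<exists>d::'a ty. isD d \<and> depth d \<le> n \<and> semD d n = f" using F(3) \<open>finite F\<close> F(2) by simp
qed

lemma Def_lemma:
  assumes R: "Ralg TYPE('a::complete_lattice)"
  shows "(\<forall>c. compact_in (Cset n) (leC_lev n) (c::'a U) \<longrightarrow> (\<exists>k::'a ty. isC k \<and> depth k \<le> n \<and> semC k n = c))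
     \<and> (\<forall>f. compact_in (Dset n) (leD_lev n) (f::'a U) \<longrightarrow> (\<exists>d::'a ty. isD d \<and> depth d \<le> n \<and> semD d n = f))"
proof (induction n)
  case 0
  have DC: "\<forall>c. compact_in (Cset 0) (leC_lev 0) (c::'a U) \<longrightarrow> (\<exists>k::'a ty. isC k \<and> depth k \<le> 0 \<and> semC k 0 = c)"
  proof (intro allI impI)
    fix c :: "'a U" assume "compact_in (Cset 0) (leC_lev 0) c"
    then have "c \<in> Cset 0" by (rule compact_in_S)
    moreover have "(botC 0 :: 'a U) \<in> Cset 0" by (rule botC_in[OF R])
    ultimately have "semC Om 0 = c" by (simp add: Cset_0)
    then show "\<exists>k::'a ty. isC k \<and> depth k \<le> 0 \<and> semC k 0 = c" by (intro exI[of _ Om]) simp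
  qed
  then show ?case using DefD_of_DefC[OF R DC] by blast
next
  case (Suc n)
  have DC: "\<forall>c. compact_in (Cset (Suc n)) (leC_lev (Suc n)) (c::'a U) \<longrightarrow> (\<exists>k::'a ty. isC k \<and> depth k \<le> Suc n \<and> semC k (Suc n) = c)"
  proof (intro allI impI)
    fix c :: "'a U" assume cc: "compact_in (Cset (Suc n)) (leC_lev (Suc n)) c"
    have c1: "c \<in> prodS (Dset n) (Cset n)" using compact_in_S[OF cc] by (simp add: Cset_Suc)
    have ce: "c = UPair (fstU c) (sndU c)" "fstU c \<in> Dset n" "sndU c \<in> Cset n" using prodS_E[OF c1] by auto
    have "compact_in (prodS (Dset n) (Cset n)) (prodLe (leD_lev n) (leC_lev n)) (UPair (fstU c) (sndU c))"
      using cc ce(1) by (simp add: Cset_Suc)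
    then have comp: "compact_in (Dset n) (leD_lev n) (fstU c)" "compact_in (Cset n) (leC_lev n) (sndU c)"
      using compact_prod_iff[OF algD[OF R] algC[OF R] ce(2,3)] by auto
    obtain d :: "'a ty" where d: "isD d" "depth d \<le> n" "semD d n = fstU c" using Suc.IH comp(1) by blast
    obtain k :: "'a ty" where k: "isC k" "depth k \<le> n" "semC k n = sndU c" using Suc.IH comp(2) by blast
    have "semC (Times d k) (Suc n) = c" unfolding semC_Times_Suc using d(3) k(3) ce(1) by simp
    moreover have "isC (Times d k)" "depth (Times d k) \<le> Suc n" using d k by auto
    ultimately show "\<exists>k::'a ty. isC k \<and> depth k \<le> Suc n \<and> semC k (Suc n) = c" by blast
  qed
  then show ?case using DefD_of_DefC[OF R DC] by blast
qed

lemma compact_defD: "Ralg TYPE('a::complete_lattice) \<Longrightarrow> compact_in (Dset n) (leD_lev n) (f::'a U) \<Longrightarrow>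
    \<exists>d::'a ty. isD d \<and> depth d \<le> n \<and> semD d n = f"
  using Def_lemma by blast
lemma compact_defC: "Ralg TYPE('a::complete_lattice) \<Longrightarrow> compact_in (Cset n) (leC_lev n) (c::'a U) \<Longrightarrow>
    \<exists>k::'a ty. isC k \<and> depth k \<le> n \<and> semC k n = c"
  using Def_lemma by blast

lemma lub_Dset_eq: "A \<subseteq> Dset n \<Longrightarrow> is_lub_in (Dset n) (leD_lev n) A s \<Longrightarrow> s = supD A"
  unfolding Dset_def leD_lev_def by (rule lub_D_eq)

section \<open>The isomorphism for D\<close>

definition PhiD :: "('a::complete_lattice) ty set \<Rightarrow> nat \<Rightarrow> 'a U" where
  "PhiD f = (\<lambda>n. supD ((\<lambda>t. semD t n) ` f))"
definition PsiD :: "(nat \<Rightarrow> ('a::complete_lattice) U) \<Rightarrow> 'a ty set" where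
  "PsiD x = {t. isD t \<and> (\<forall>n. leD_lev n (semD t n) (x n))}"

lemma filter_isD: "f \<in> filters {t. isD t} leD \<Longrightarrow> t \<in> f \<Longrightarrow> isD t"
  using filter_props(1) by blast

lemma PhiD_in:
  assumes R: "Ralg TYPE('a::complete_lattice)" and f: "(f::'a ty set) \<in> filters {t. isD t} leD"
  shows "PhiD f \<in> Dinf"
  unfolding Dinf_def
proof (intro CollectI allI conjI)
  fix n
  have sub: "(\<lambda>t. semD t m) ` f \<subseteq> Dset m" for m using semD_in[OF R] filter_isD[OF f] by blast
  show "PhiD f n \<in> Dset n" unfolding PhiD_def using supD_in[OF sub[unfolded Dset_def]] by (simp add: Dset_def)
  have "is_lub_in (Dset n) (leD_lev n) (pD n ` (\<lambda>t. semD t (Suc n)) ` f) (pD n (supD ((\<lambda>t. semD t (Suc n)) ` f)))"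
    by (rule ep_lub[OF epD[OF R] sub lub_Dset[OF sub]])
  moreover have "pD n ` (\<lambda>t. semD t (Suc n)) ` f = (\<lambda>t. semD t n) ` f"
    using pD_semD'[OF R] filter_isD[OF f] by (force simp: image_image)
  ultimately show "pD n (PhiD f (Suc n)) = PhiD f n"
    unfolding PhiD_def using lub_Dset_eq[OF sub] by simp
qed

lemma PsiD_filter:
  assumes R: "Ralg TYPE('a::complete_lattice)" and x: "x \<in> Dinf"
  shows "PsiD (x :: nat \<Rightarrow> 'a U) \<in> filters {t. isD t} leD"
  unfolding filters_def
proof (intro CollectI conjI ballI impI)
  show "PsiD x \<subseteq> {t. isD t}" unfolding PsiD_def by blast
  show "Om \<in> PsiD x" unfolding PsiD_def by (simp add: leD_lev_def leD_of_def)
next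
  fix s t assume s: "s \<in> PsiD x" and t: "t \<in> {t. isD t}" and st: "leD s t"
  have si: "isD s" using s unfolding PsiD_def by blast
  have "leD_lev n (semD t n) (x n)" for n
    using po_trans[OF poD semD_in[OF R] semD_in[OF R si] Dinf_in[OF x]] sound(1)[OF R st] s t
    unfolding PsiD_def by blast
  then show "t \<in> PsiD x" using t unfolding PsiD_def by blast
next
  fix s t assume s: "s \<in> PsiD x" and t: "t \<in> PsiD x"
  then show "Conj s t \<in> PsiD x" unfolding PsiD_def by (auto simp: leD_lev_def leD_of_def)
qed

lemma PsiD_PhiD:
  assumes R: "Ralg TYPE('a::complete_lattice)" and f: "(f::'a ty set) \<in> filters {t. isD t} leD"
  shows "PsiD (PhiD f) = f"
proof
  have sub: "(\<lambda>t. semD t m) ` f \<subseteq> Dset m" for m using semD_in[OF R] filter_isD[OF f] by blast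
  show "f \<subseteq> PsiD (PhiD f)"
  proof
    fix t assume t: "t \<in> f"
    have "leD_lev n (semD t n) (PhiD f n)" for n
      unfolding PhiD_def using lub_upper[OF lub_Dset[OF sub]] t by blast
    then show "t \<in> PsiD (PhiD f)" unfolding PsiD_def using filter_isD[OF f t] by blast
  qed
  show "PsiD (PhiD f) \<subseteq> f"
  proof
    fix t assume t: "t \<in> PsiD (PhiD f)"
    have ti: "isD t" using t unfolding PsiD_def by blast
    define N where "N = depth t"
    have tc: "compact_in (Dset N) (leD_lev N) (semD t N)" by (rule semD_compact[OF R ti]) (simp add: N_def)
    have dir: "directed_in (leD_lev N) ((\<lambda>t. semD t N) ` f)" unfolding directed_in_def
    proof (intro conjI ballI)
      show "(\<lambda>t. semD t N) ` f \<noteq> {}" using filter_props(2)[OF f] by blast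
      fix a b assume "a \<in> (\<lambda>t. semD t N) ` f" "b \<in> (\<lambda>t. semD t N) ` f"
      then obtain s1 s2 where s: "s1 \<in> f" "s2 \<in> f" "a = semD s1 N" "b = semD s2 N" by blast
      have "Conj s1 s2 \<in> f" using filter_props(4)[OF f s(1,2)] .
      moreover have "leD_lev N a (semD (Conj s1 s2) N)" "leD_lev N b (semD (Conj s1 s2) N)"
        using s by (auto simp: leD_lev_def leD_of_def)
      ultimately show "\<exists>z\<in>(\<lambda>t. semD t N) ` f. leD_lev N a z \<and> leD_lev N b z" by blast
    qed
    have "leD_lev N (semD t N) (supD ((\<lambda>t. semD t N) ` f))" using t unfolding PsiD_def PhiD_def by blast
    then obtain a where a: "a \<in> (\<lambda>t. semD t N) ` f" "leD_lev N (semD t N) a"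
      using compactD[OF tc sub dir lub_Dset[OF sub]] by blast
    then obtain s where s: "s \<in> f" "a = semD s N" by blast
    have si: "isD s" by (rule filter_isD[OF f s(1)])
    have "\<forall>n. leD_lev n (semD t n) (semD s n)"
      using LiftD[OF R ti semD_Dinf[OF R si], of N] a(2) s(2) N_def by simp
    then have "leD s t" by (rule completeD[OF R si ti])
    then show "t \<in> f" using filter_props(3)[OF f s(1)] ti by simp
  qed
qed

lemma PhiD_PsiD:
  assumes R: "Ralg TYPE('a::complete_lattice)" and x: "(x :: nat \<Rightarrow> 'a U) \<in> Dinf"
  shows "PhiD (PsiD x) = x"
proof
  fix n
  have sub: "(\<lambda>t. semD t n) ` PsiD x \<subseteq> Dset n" using semD_in[OF R] unfolding PsiD_def by blast
  have "is_lub_in (Dset n) (leD_lev n) ((\<lambda>t. semD t n) ` PsiD x) (x n)"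
  proof (rule is_lubI[OF Dinf_in[OF x]])
    fix a assume "a \<in> (\<lambda>t. semD t n) ` PsiD x"
    then show "leD_lev n a (x n)" unfolding PsiD_def by blast
  next
    fix u assume u: "u \<in> Dset n" "\<forall>a\<in>(\<lambda>t. semD t n) ` PsiD x. leD_lev n a u"
    show "leD_lev n (x n) u"
    proof (rule lub_least[OF alg_algebraic[OF algD[OF R] Dinf_in[OF x]] u(1)])
      fix c assume c: "c \<in> {c. compact_in (Dset n) (leD_lev n) c \<and> leD_lev n c (x n)}"
      obtain d :: "'a ty" where d: "isD d" "depth d \<le> n" "semD d n = c" using compact_defD[OF R] c by blast
      have "\<forall>m. leD_lev m (semD d m) (x m)" using LiftD[OF R d(1) x d(2)] c d(3) by simp
      then have "d \<in> PsiD x" unfolding PsiD_def using d(1) by blast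
      then show "leD_lev n c u" using u(2) d(3) by blast
    qed
  qed
  then show "PhiD (PsiD x) n = x n" unfolding PhiD_def using lub_Dset_eq[OF sub] by simp
qed

lemma iso_D:
  assumes R: "Ralg TYPE('a::complete_lattice)"
  shows "order_iso (filters {t::'a ty. isD t} leD) (\<subseteq>) (Dinf :: (nat \<Rightarrow> 'a U) set) leDinf"
proof (rule order_isoI[where Fm=PhiD and Gm=PsiD])
  show "\<And>f. f \<in> filters {t::'a ty. isD t} leD \<Longrightarrow> PhiD f \<in> Dinf" by (rule PhiD_in[OF R])
  show "\<And>x. x \<in> Dinf \<Longrightarrow> PsiD x \<in> filters {t::'a ty. isD t} leD" by (rule PsiD_filter[OF R])
  show "\<And>f. f \<in> filters {t::'a ty. isD t} leD \<Longrightarrow> PsiD (PhiD f) = f" by (rule PsiD_PhiD[OF R])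
  show "\<And>x. x \<in> (Dinf :: (nat \<Rightarrow> 'a U) set) \<Longrightarrow> PhiD (PsiD x) = x" by (rule PhiD_PsiD[OF R])
  show "\<And>f g. f \<in> filters {t::'a ty. isD t} leD \<Longrightarrow> g \<in> filters {t. isD t} leD \<Longrightarrow> f \<subseteq> g \<Longrightarrow>
      leDinf (PhiD f) (PhiD g)"
    unfolding leDinf_def PhiD_def leD_lev_def by (intro allI supD_subset_le image_mono)
  show "\<And>x y. x \<in> (Dinf :: (nat \<Rightarrow> 'a U) set) \<Longrightarrow> y \<in> Dinf \<Longrightarrow> leDinf x y \<Longrightarrow> PsiD x \<subseteq> PsiD y"
  proof
    fix x y :: "nat \<Rightarrow> 'a U" and t assume xy: "x \<in> Dinf" "y \<in> Dinf" "leDinf x y" and t: "t \<in> PsiD x"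
    have ti: "isD t" using t unfolding PsiD_def by blast
    have "leD_lev n (semD t n) (y n)" for n
      using po_trans[OF poD semD_in[OF R ti] Dinf_in[OF xy(1)] Dinf_in[OF xy(2)]] t xy(3)
      unfolding PsiD_def leDinf_def by blast
    then show "t \<in> PsiD y" using ti unfolding PsiD_def by blast
  qed
qed


section \<open>The isomorphism for C\<close>

definition PhiC :: "('a::complete_lattice) ty set \<Rightarrow> nat \<Rightarrow> 'a U" where
  "PhiC f = (\<lambda>n. lubL (Cset n) (leC_lev n) ((\<lambda>t. semC t n) ` f))"
definition PsiC :: "(nat \<Rightarrow> ('a::complete_lattice) U) \<Rightarrow> 'a ty set" where
  "PsiC x = {t. isC t \<and> (\<forall>n. leC_lev n (semC t n) (x n))}"

lemma filter_isC: "f \<in> filters {t. isC t} leC \<Longrightarrow> t \<in> f \<Longrightarrow> isC t"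
  using filter_props(1) by blast

lemma lub_Cset: "Ralg TYPE('a::complete_lattice) \<Longrightarrow> A \<subseteq> Cset n \<Longrightarrow>
   is_lub_in (Cset n) (leC_lev n) A (lubL (Cset n) (leC_lev n) (A :: 'a U set))"
  by (rule lubL_is_lub[OF algC])

lemma PhiC_in:
  assumes R: "Ralg TYPE('a::complete_lattice)" and f: "(f::'a ty set) \<in> filters {t. isC t} leC"
  shows "PhiC f \<in> Cinf"
  unfolding Cinf_def
proof (intro CollectI allI conjI)
  fix n
  have sub: "(\<lambda>t. semC t m) ` f \<subseteq> Cset m" for m using semC_in[OF R] filter_isC[OF f] by blast
  show "PhiC f n \<in> Cset n" unfolding PhiC_def using lub_in[OF lub_Cset[OF R sub]] .
  have "is_lub_in (Cset n) (leC_lev n) (pC n ` (\<lambda>t. semC t (Suc n)) ` f) (pC n (PhiC f (Suc n)))"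
    unfolding PhiC_def by (rule ep_lub[OF epC[OF R] sub lub_Cset[OF R sub]])
  moreover have "pC n ` (\<lambda>t. semC t (Suc n)) ` f = (\<lambda>t. semC t n) ` f"
    using pC_semC[OF R] filter_isC[OF f] by (force simp: image_image)
  ultimately show "pC n (PhiC f (Suc n)) = PhiC f n"
    unfolding PhiC_def[of f] using lubL_eq[OF poC[OF R]] by metis
qed

lemma PsiC_filter:
  assumes R: "Ralg TYPE('a::complete_lattice)" and x: "x \<in> Cinf"
  shows "PsiC (x :: nat \<Rightarrow> 'a U) \<in> filters {t. isC t} leC"
  unfolding filters_def
proof (intro CollectI conjI ballI impI)
  show "PsiC x \<subseteq> {t. isC t}" unfolding PsiC_def by blast
  show "Om \<in> PsiC x" unfolding PsiC_def using botC_le[OF R Cinf_in[OF x]] by simp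
next
  fix s t assume s: "s \<in> PsiC x" and t: "t \<in> {t. isC t}" and st: "leC s t"
  have si: "isC s" using s unfolding PsiC_def by blast
  have "leC_lev n (semC t n) (x n)" for n
    using po_trans[OF poC[OF R] semC_in[OF R] semC_in[OF R si] Cinf_in[OF x]] sound(2)[OF R st] s t
    unfolding PsiC_def by blast
  then show "t \<in> PsiC x" using t unfolding PsiC_def by blast
next
  fix s t assume s: "s \<in> PsiC x" and t: "t \<in> PsiC x"
  have i: "isC s" "isC t" using s t unfolding PsiC_def by auto
  have "leC_lev n (semC (Conj s t) n) (x n)" for n
    using joinC_le_iff[OF R semC_in[OF R i(1)] semC_in[OF R i(2)] Cinf_in[OF x]] s t unfolding PsiC_def by simp
  then show "Conj s t \<in> PsiC x" unfolding PsiC_def using i by simp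
qed

lemma PsiC_PhiC:
  assumes R: "Ralg TYPE('a::complete_lattice)" and f: "(f::'a ty set) \<in> filters {t. isC t} leC"
  shows "PsiC (PhiC f) = f"
proof
  have sub: "(\<lambda>t. semC t m) ` f \<subseteq> Cset m" for m using semC_in[OF R] filter_isC[OF f] by blast
  show "f \<subseteq> PsiC (PhiC f)"
  proof
    fix t assume t: "t \<in> f"
    have "leC_lev n (semC t n) (PhiC f n)" for n
      unfolding PhiC_def using lub_upper[OF lub_Cset[OF R sub]] t by blast
    then show "t \<in> PsiC (PhiC f)" unfolding PsiC_def using filter_isC[OF f t] by blast
  qed
  show "PsiC (PhiC f) \<subseteq> f"
  proof
    fix t assume t: "t \<in> PsiC (PhiC f)"
    have ti: "isC t" using t unfolding PsiC_def by blast
    define N where "N = depth t"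
    have tc: "compact_in (Cset N) (leC_lev N) (semC t N)" by (rule semC_compact[OF R ti]) (simp add: N_def)
    have dir: "directed_in (leC_lev N) ((\<lambda>t. semC t N) ` f)" unfolding directed_in_def
    proof (intro conjI ballI)
      show "(\<lambda>t. semC t N) ` f \<noteq> {}" using filter_props(2)[OF f] by blast
      fix a b assume "a \<in> (\<lambda>t. semC t N) ` f" "b \<in> (\<lambda>t. semC t N) ` f"
      then obtain s1 s2 where s: "s1 \<in> f" "s2 \<in> f" "a = semC s1 N" "b = semC s2 N" by blast
      have i: "isC s1" "isC s2" using filter_isC[OF f] s by auto
      have "Conj s1 s2 \<in> f" using filter_props(4)[OF f s(1,2)] .
      moreover have "leC_lev N a (semC (Conj s1 s2) N)" "leC_lev N b (semC (Conj s1 s2) N)"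
        using lub_upper[OF joinC_lub[OF R semC_in[OF R i(1)] semC_in[OF R i(2)]]] s by auto
      ultimately show "\<exists>z\<in>(\<lambda>t. semC t N) ` f. leC_lev N a z \<and> leC_lev N b z" by blast
    qed
    have "leC_lev N (semC t N) (PhiC f N)" using t unfolding PsiC_def by blast
    then obtain a where a: "a \<in> (\<lambda>t. semC t N) ` f" "leC_lev N (semC t N) a"
      using compactD[OF tc sub dir lub_Cset[OF R sub]] unfolding PhiC_def by blast
    then obtain s where s: "s \<in> f" "a = semC s N" by blast
    have si: "isC s" by (rule filter_isC[OF f s(1)])
    have "\<forall>n. leC_lev n (semC t n) (semC s n)"
      using LiftC[OF R ti semC_Cinf[OF R si], of N] a(2) s(2) N_def by simp
    then have "leC s t" by (rule completeC[OF R si ti])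
    then show "t \<in> f" using filter_props(3)[OF f s(1)] ti by simp
  qed
qed

lemma PhiC_PsiC:
  assumes R: "Ralg TYPE('a::complete_lattice)" and x: "(x :: nat \<Rightarrow> 'a U) \<in> Cinf"
  shows "PhiC (PsiC x) = x"
proof
  fix n
  have "is_lub_in (Cset n) (leC_lev n) ((\<lambda>t. semC t n) ` PsiC x) (x n)"
  proof (rule is_lubI[OF Cinf_in[OF x]])
    fix a assume "a \<in> (\<lambda>t. semC t n) ` PsiC x"
    then show "leC_lev n a (x n)" unfolding PsiC_def by blast
  next
    fix u assume u: "u \<in> Cset n" "\<forall>a\<in>(\<lambda>t. semC t n) ` PsiC x. leC_lev n a u"
    show "leC_lev n (x n) u"
    proof (rule lub_least[OF alg_algebraic[OF algC[OF R] Cinf_in[OF x]] u(1)])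
      fix c assume c: "c \<in> {c. compact_in (Cset n) (leC_lev n) c \<and> leC_lev n c (x n)}"
      obtain d :: "'a ty" where d: "isC d" "depth d \<le> n" "semC d n = c" using compact_defC[OF R] c by blast
      have "\<forall>m. leC_lev m (semC d m) (x m)" using LiftC[OF R d(1) x d(2)] c d(3) by simp
      then have "d \<in> PsiC x" unfolding PsiC_def using d(1) by blast
      then show "leC_lev n c u" using u(2) d(3) by blast
    qed
  qed
  then show "PhiC (PsiC x) n = x n" unfolding PhiC_def by (rule lubL_eq[OF poC[OF R]])
qed

lemma iso_C:
  assumes R: "Ralg TYPE('a::complete_lattice)"
  shows "order_iso (filters {t::'a ty. isC t} leC) (\<subseteq>) (Cinf :: (nat \<Rightarrow> 'a U) set) leCinf"
proof (rule order_isoI[where Fm=PhiC and Gm=PsiC])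
  show "\<And>f. f \<in> filters {t::'a ty. isC t} leC \<Longrightarrow> PhiC f \<in> Cinf" by (rule PhiC_in[OF R])
  show "\<And>x. x \<in> Cinf \<Longrightarrow> PsiC x \<in> filters {t::'a ty. isC t} leC" by (rule PsiC_filter[OF R])
  show "\<And>f. f \<in> filters {t::'a ty. isC t} leC \<Longrightarrow> PsiC (PhiC f) = f" by (rule PsiC_PhiC[OF R])
  show "\<And>x. x \<in> (Cinf :: (nat \<Rightarrow> 'a U) set) \<Longrightarrow> PhiC (PsiC x) = x" by (rule PhiC_PsiC[OF R])
  show "leCinf (PhiC f) (PhiC g)" if f: "f \<in> filters {t::'a ty. isC t} leC" and g: "g \<in> filters {t. isC t} leC"
    and fg: "f \<subseteq> g" for f g
    unfolding leCinf_def
  proof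
    fix n
    have subf: "(\<lambda>t. semC t n) ` f \<subseteq> Cset n" using semC_in[OF R] filter_isC[OF f] by blast
    have subg: "(\<lambda>t. semC t n) ` g \<subseteq> Cset n" using semC_in[OF R] filter_isC[OF g] by blast
    show "leC_lev n (PhiC f n) (PhiC g n)" unfolding PhiC_def
    proof (rule lub_least[OF lub_Cset[OF R subf] lub_in[OF lub_Cset[OF R subg]]])
      fix a assume "a \<in> (\<lambda>t. semC t n) ` f"
      then have "a \<in> (\<lambda>t. semC t n) ` g" using fg by blast
      then show "leC_lev n a (lubL (Cset n) (leC_lev n) ((\<lambda>t. semC t n) ` g))"
        using lub_upper[OF lub_Cset[OF R subg]] by blast
    qed
  qed
  show "\<And>x y. x \<in> (Cinf :: (nat \<Rightarrow> 'a U) set) \<Longrightarrow> y \<in> Cinf \<Longrightarrow> leCinf x y \<Longrightarrow> PsiC x \<subseteq> PsiC y"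
  proof
    fix x y :: "nat \<Rightarrow> 'a U" and t assume xy: "x \<in> Cinf" "y \<in> Cinf" "leCinf x y" and t: "t \<in> PsiC x"
    have ti: "isC t" using t unfolding PsiC_def by blast
    have "leC_lev n (semC t n) (y n)" for n
      using po_trans[OF poC[OF R] semC_in[OF R ti] Cinf_in[OF xy(1)] Cinf_in[OF xy(2)]] t xy(3)
      unfolding PsiC_def leCinf_def by blast
    then show "t \<in> PsiC y" using ti unfolding PsiC_def by blast
  qed
qed

theorem theorem3p21:
  assumes algebraic: "\<forall>x::'a::complete_lattice. x = Sup {c. compactR c \<and> c \<le> x}"
    and countable_basis: "countable {c::'a. compactR c}"
  shows "order_iso (filters {t::'a ty. isR t} leR) (\<subseteq>) (UNIV :: 'a set) (\<le>)
       \<and> order_iso (filters {t::'a ty. isD t} leD) (\<subseteq>) (Dinf :: (nat \<Rightarrow> 'a U) set) leDinf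
       \<and> order_iso (filters {t::'a ty. isC t} leC) (\<subseteq>) (Cinf :: (nat \<Rightarrow> 'a U) set) leCinf"
proof -
  have R: "Ralg TYPE('a)" unfolding Ralg_def using algebraic countable_basis by blast
  show ?thesis using iso_R[OF algebraic] iso_D[OF R] iso_C[OF R] by blast
qed

end
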